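(* Let $q\in U(1)$ and let $A(DT^2_q)$ be as defined below. Let $\mathcal H$ be a Hilbert space with orthonormal basis $\{e^c_{m,n},e^q_{m,n}\}_{m,n\in\mathbb{Z}}$, and let $\pi$ be the faithful $*$-representation of $A(DT^2_q)$ on $\mathcal H$ determined by $$\pi(a)e^c_{m,n}=\begin{cases}e^c_{m,n+1}& n\ge0\\ e^c_{m+1,n+1}& n<0\end{cases},\quad \pi(b)e^q_{m,n}=\begin{cases}-q^{2n-1}e^q_{m+1,n-1}& n>0\\ q^{2m}e^q_{m,n-1}& n\le0\end{cases},$$ $$\pi(c)e^q_{m,n}=\begin{cases}e^q_{m,n+1}& n\ge0\\ -q^{-2m-1}e^q_{m+1,n+1}& n<0\end{cases},\quad \pi(d)e^c_{m,n}=\begin{cases}e^c_{m+1,n-1}& n>0\\ e^c_{m,n-1}& n\le0\end{cases},$$ $\pi(a)e^q_{m,n}=0$, $\pi(b)e^c_{m,n}=0$, $\pi(c)e^c_{m,n}=0$, $\pi(d)e^q_{m,n}=0$. Let $C(DT^2_q)$ be the operator-norm closure of $\pi(A(DT^2_q))$. Then the comultiplication of $A(DT^2_q)$ extends to a unital $*$-homomorphism $C(DT^2_q)\to C(DT^2_q)\otimes C(DT^2_q)$, and $C(DT^2_q)$ with the fundamental matrix $u=\begin{pmatrix}a&b\\c&d\end{pmatrix}$ is a compact matrix quantum group in the sense of Woronowicz.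
   Context: Let $q\in U(1)$. $A(U_{q^{-1},q}(2))$ is the complex $*$-Hopf algebra generated by $a,b,c,d,D^{-1}$, where $D:=ad-q^{-1}bc$, with relations $ab=q^{-1}ba$, $cd=q^{-1}dc$, $ac=qca$, $bd=qdb$, $ad=da$, $bc=q^2cb$, $DD^{-1}=D^{-1}D=1$; coproduct $\Delta(a)=a\otimes a+b\otimes c$, $\Delta(b)=a\otimes b+b\otimes d$, $\Delta(c)=c\otimes a+d\otimes c$, $\Delta(d)=c\otimes b+d\otimes d$; counit $\varepsilon(a)=\varepsilon(d)=1$, $\varepsilon(b)=\varepsilon(c)=0$; involution $a^*=S(a)$, $b^*=S(c)$, $c^*=S(b)$, $d^*=S(d)$ with $S$ the antipode. $A(DT^2_q)$ is the quotient of $A(U_{q^{-1},q}(2))$ by the Hopf ideal generated by $ab,ac,cd,bd$, with images of the generators denoted by the same letters. A compact matrix quantum group in the sense of Woronowicz is a pair $(A,u)$ where $A$ is a unital C$^*$-algebra and $u=(u_{ij})\in M_N(A)$ is such that the $*$-subalgebra generated by the $u_{ij}$ is dense in $A$, there is a unital $*$-homomorphism $\Delta:A\to A\otimes A$ (minimal tensor product) with $\Delta(u_{ij})=\sum_k u_{ik}\otimes u_{kj}$, and both $u$ and its transpose $u^T$ are invertible in $M_N(A)$. *)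

theory Defs
  imports "HOL-Analysis.Analysis"
begin

definition l2 :: "('i \<Rightarrow> complex) set" where
  "l2 = {x. (\<lambda>i. (cmod (x i))^2) summable_on UNIV}"

definition l2norm :: "('i \<Rightarrow> complex) \<Rightarrow> real" where
  "l2norm x = sqrt (\<Sum>\<^sub>\<infinity>i. (cmod (x i))^2)"

definition l2inner :: "('i \<Rightarrow> complex) \<Rightarrow> ('i \<Rightarrow> complex) \<Rightarrow> complex" where
  "l2inner x y = (\<Sum>\<^sub>\<infinity>i. cnj (x i) * y i)"

type_synonym 'i op = "('i \<Rightarrow> complex) \<Rightarrow> ('i \<Rightarrow> complex)"

text \<open>Bounded operators on l2(I); normalised to be 0 outside l2 so that
  operators are identified with HOL functions.\<close>
definition bops :: "'i op set" where
  "bops = {T. (\<forall>x\<in>l2. T x \<in> l2)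
            \<and> (\<forall>x\<in>l2. \<forall>y\<in>l2. T (\<lambda>i. x i + y i) = (\<lambda>i. T x i + T y i))
            \<and> (\<forall>x\<in>l2. \<forall>c. T (\<lambda>i. c * x i) = (\<lambda>i. c * T x i))
            \<and> (\<exists>K. \<forall>x\<in>l2. l2norm (T x) \<le> K * l2norm x)
            \<and> (\<forall>x. x \<notin> l2 \<longrightarrow> T x = (\<lambda>i. 0))}"

definition idop :: "'i op" where
  "idop x = (if x \<in> l2 then x else (\<lambda>i. 0))"

definition zero_op :: "'i op" where
  "zero_op x = (\<lambda>i. 0)"

definition op_add :: "'i op \<Rightarrow> 'i op \<Rightarrow> 'i op" where
  "op_add S T x = (\<lambda>i. S x i + T x i)"

definition op_scale :: "complex \<Rightarrow> 'i op \<Rightarrow> 'i op" where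
  "op_scale c T x = (\<lambda>i. c * T x i)"

definition op_diff :: "'i op \<Rightarrow> 'i op \<Rightarrow> 'i op" where
  "op_diff S T x = (\<lambda>i. S x i - T x i)"

definition op_comp :: "'i op \<Rightarrow> 'i op \<Rightarrow> 'i op" where
  "op_comp S T = S \<circ> T"

primrec op_sumk :: "(nat \<Rightarrow> 'i op) \<Rightarrow> nat \<Rightarrow> 'i op" where
  "op_sumk f 0 = zero_op"
| "op_sumk f (Suc n) = op_add (op_sumk f n) (f n)"

definition opnorm :: "'i op \<Rightarrow> real" where
  "opnorm T = Sup {l2norm (T x) | x. x \<in> l2 \<and> l2norm x \<le> 1}"

definition adj :: "'i op \<Rightarrow> 'i op" where
  "adj T = (THE S. S \<in> bops \<and> (\<forall>x\<in>l2. \<forall>y\<in>l2. l2inner (S y) x = l2inner y (T x)))"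

definition op_closure :: "'i op set \<Rightarrow> 'i op set" where
  "op_closure S = {T \<in> bops. \<forall>e>0. \<exists>R\<in>S. opnorm (op_diff T R) < e}"

inductive_set star_alg :: "'i op set \<Rightarrow> 'i op set" for G where
  gen: "T \<in> G \<Longrightarrow> T \<in> star_alg G"
| add: "S \<in> star_alg G \<Longrightarrow> T \<in> star_alg G \<Longrightarrow> op_add S T \<in> star_alg G"
| scale: "T \<in> star_alg G \<Longrightarrow> op_scale c T \<in> star_alg G"
| comp: "S \<in> star_alg G \<Longrightarrow> T \<in> star_alg G \<Longrightarrow> op_comp S T \<in> star_alg G"
| star: "T \<in> star_alg G \<Longrightarrow> adj T \<in> star_alg G"

definition unital_cstar :: "'i op set \<Rightarrow> bool" where
  "unital_cstar A \<longleftrightarrow> A \<subseteq> bops \<and> idop \<in> A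
     \<and> (\<forall>S\<in>A. \<forall>T\<in>A. op_add S T \<in> A \<and> op_comp S T \<in> A)
     \<and> (\<forall>T\<in>A. \<forall>c. op_scale c T \<in> A) \<and> (\<forall>T\<in>A. adj T \<in> A)
     \<and> op_closure A = A"

definition op_tensor :: "'i op \<Rightarrow> 'j op \<Rightarrow> ('i \<times> 'j) op" where
  "op_tensor S T x =
     (if x \<in> l2 then
        (let y = (\<lambda>(i, j). T (\<lambda>j'. x (i, j')) j)
         in (\<lambda>(i, j). S (\<lambda>i'. y (i', j)) i))
      else (\<lambda>p. 0))"

definition min_tensor :: "'i op set \<Rightarrow> 'j op set \<Rightarrow> ('i \<times> 'j) op set" where
  "min_tensor A B = op_closure
     {op_sumk (\<lambda>k. op_tensor (f k) (g k)) n | f g n.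
        (\<forall>k<n. f k \<in> A) \<and> (\<forall>k<n. g k \<in> B)}"

definition unital_star_hom :: "'i op set \<Rightarrow> 'j op set \<Rightarrow> ('i op \<Rightarrow> 'j op) \<Rightarrow> bool" where
  "unital_star_hom A B \<Phi> \<longleftrightarrow> (\<forall>T\<in>A. \<Phi> T \<in> B) \<and> \<Phi> idop = idop
     \<and> (\<forall>S\<in>A. \<forall>T\<in>A. \<Phi> (op_add S T) = op_add (\<Phi> S) (\<Phi> T)
                    \<and> \<Phi> (op_comp S T) = op_comp (\<Phi> S) (\<Phi> T))
     \<and> (\<forall>T\<in>A. \<forall>c. \<Phi> (op_scale c T) = op_scale c (\<Phi> T))
     \<and> (\<forall>T\<in>A. \<Phi> (adj T) = adj (\<Phi> T))"

definition mat_invertible :: "nat \<Rightarrow> 'i op set \<Rightarrow> (nat \<Rightarrow> nat \<Rightarrow> 'i op) \<Rightarrow> bool" where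
  "mat_invertible N A u \<longleftrightarrow> (\<exists>v. (\<forall>i<N. \<forall>j<N. v i j \<in> A)
     \<and> (\<forall>i<N. \<forall>j<N. op_sumk (\<lambda>k. op_comp (u i k) (v k j)) N = (if i = j then idop else zero_op))
     \<and> (\<forall>i<N. \<forall>j<N. op_sumk (\<lambda>k. op_comp (v i k) (u k j)) N = (if i = j then idop else zero_op)))"

definition compact_matrix_qg :: "'i op set \<Rightarrow> nat \<Rightarrow> (nat \<Rightarrow> nat \<Rightarrow> 'i op) \<Rightarrow> bool" where
  "compact_matrix_qg A N u \<longleftrightarrow> unital_cstar A
     \<and> (\<forall>i<N. \<forall>j<N. u i j \<in> A)
     \<and> A \<subseteq> op_closure (star_alg {u i j | i j. i < N \<and> j < N})
     \<and> (\<exists>\<Delta>. unital_star_hom A (min_tensor A A) \<Delta>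
            \<and> (\<forall>i<N. \<forall>j<N. \<Delta> (u i j) = op_sumk (\<lambda>k. op_tensor (u i k) (u k j)) N))
     \<and> mat_invertible N A u \<and> mat_invertible N A (\<lambda>i j. u j i)"

datatype kind = Kc | Kq   \<comment> \<open>e^c and e^q basis vectors\<close>

type_synonym idx = "kind \<times> int \<times> int"

text \<open>Operator determined by T e_i = w i * e_(s i) (s injective where w is nonzero).\<close>
definition basis_op :: "(idx \<Rightarrow> complex) \<Rightarrow> (idx \<Rightarrow> idx) \<Rightarrow> idx op" where
  "basis_op w s x = (if x \<in> l2 then (\<lambda>j. \<Sum>\<^sub>\<infinity>i\<in>{i. s i = j}. w i * x i) else (\<lambda>j. 0))"

definition pi_a :: "complex \<Rightarrow> idx op" where
  "pi_a q = basis_op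
     (\<lambda>(k, m, n). if k = Kc then 1 else 0)
     (\<lambda>(k, m, n). if k = Kc then (if n \<ge> 0 then (Kc, m, n + 1) else (Kc, m + 1, n + 1)) else (k, m, n))"

definition pi_b :: "complex \<Rightarrow> idx op" where
  "pi_b q = basis_op
     (\<lambda>(k, m, n). if k = Kq then (if n > 0 then - (q powi (2 * n - 1)) else q powi (2 * m)) else 0)
     (\<lambda>(k, m, n). if k = Kq then (if n > 0 then (Kq, m + 1, n - 1) else (Kq, m, n - 1)) else (k, m, n))"

definition pi_c :: "complex \<Rightarrow> idx op" where
  "pi_c q = basis_op
     (\<lambda>(k, m, n). if k = Kq then (if n \<ge> 0 then 1 else - (q powi (- 2 * m - 1))) else 0)
     (\<lambda>(k, m, n). if k = Kq then (if n \<ge> 0 then (Kq, m, n + 1) else (Kq, m + 1, n + 1)) else (k, m, n))"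

definition pi_d :: "complex \<Rightarrow> idx op" where
  "pi_d q = basis_op
     (\<lambda>(k, m, n). if k = Kc then 1 else 0)
     (\<lambda>(k, m, n). if k = Kc then (if n > 0 then (Kc, m + 1, n - 1) else (Kc, m, n - 1)) else (k, m, n))"

definition pi_D :: "complex \<Rightarrow> idx op" where
  "pi_D q = op_diff (op_comp (pi_a q) (pi_d q)) (op_scale (inverse q) (op_comp (pi_b q) (pi_c q)))"

definition pi_Dinv :: "complex \<Rightarrow> idx op" where
  "pi_Dinv q = (THE S. S \<in> bops \<and> op_comp S (pi_D q) = idop \<and> op_comp (pi_D q) S = idop)"

text \<open>C(DT^2_q): norm closure of pi(A(DT^2_q)), i.e. of the unital *-algebra
  generated by pi of the generators a, b, c, d, D^-1.\<close>
definition C_DT :: "complex \<Rightarrow> idx op set" where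
  "C_DT q = op_closure (star_alg {idop, pi_a q, pi_b q, pi_c q, pi_d q, pi_Dinv q})"

definition u_DT :: "complex \<Rightarrow> nat \<Rightarrow> nat \<Rightarrow> idx op" where
  "u_DT q i j = (if i = 0 then (if j = 0 then pi_a q else pi_b q)
                 else (if j = 0 then pi_c q else pi_d q))"

end

theory Submission
  imports Defs
begin


definition bv :: "'i \<Rightarrow> 'i \<Rightarrow> complex" where "bv i = (\<lambda>j. if j = i then 1 else 0)"

lemma sq_sum_le: "((a::real) + b)^2 \<le> 2 * a^2 + 2 * b^2"
proof -
  have "0 \<le> (a - b)^2" by simp
  thus ?thesis by (simp add: power2_eq_square algebra_simps)
qed

lemma infsum_single_pt:
  assumes "\<And>j. j \<noteq> i \<Longrightarrow> f j = 0"
  shows "infsum f A = (if i \<in> A then f i else 0)"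
proof -
  have "infsum f A = infsum f (A \<inter> {i})"
    by (rule infsum_cong_neutral) (use assms in auto)
  also have "\<dots> = (if i \<in> A then f i else 0)"
    by (cases "i \<in> A") auto
  finally show ?thesis .
qed

lemma has_sum_single_pt:
  assumes "\<And>j. j \<noteq> i \<Longrightarrow> f j = 0"
  shows "f summable_on A"
  by (rule finite_nonzero_values_imp_summable_on) (rule finite_subset[of _ "{i}"], use assms in auto)

lemma l2_zero[simp]: "(\<lambda>i. 0) \<in> l2" by (simp add: l2_def)

lemma l2_scale: "x \<in> l2 \<Longrightarrow> (\<lambda>i. c * x i) \<in> l2"
  unfolding l2_def by (simp add: norm_mult power_mult_distrib summable_on_cmult_right)

lemma l2_add: assumes "x \<in> l2" "y \<in> l2" shows "(\<lambda>i. x i + y i) \<in> l2"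
proof -
  have s: "(\<lambda>i. 2 * (cmod (x i))^2 + 2 * (cmod (y i))^2) summable_on UNIV"
    using assms by (auto simp: l2_def intro!: summable_on_add summable_on_cmult_right)
  have "(cmod (x i + y i))^2 \<le> 2 * (cmod (x i))^2 + 2 * (cmod (y i))^2" for i
  proof -
    have "cmod (x i + y i) \<le> cmod (x i) + cmod (y i)" by (rule norm_triangle_ineq)
    hence "(cmod (x i + y i))^2 \<le> (cmod (x i) + cmod (y i))^2" by (simp add: power_mono)
    also have "\<dots> \<le> 2 * (cmod (x i))^2 + 2 * (cmod (y i))^2" by (rule sq_sum_le)
    finally show ?thesis .
  qed
  thus ?thesis unfolding l2_def mem_Collect_eq
    by (intro summable_on_comparison_test[OF s]) auto
qed

lemma l2_neg: "x \<in> l2 \<Longrightarrow> (\<lambda>i. - x i) \<in> l2"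
  using l2_scale[of x "-1"] by simp

lemma l2_diff: "x \<in> l2 \<Longrightarrow> y \<in> l2 \<Longrightarrow> (\<lambda>i. x i - y i) \<in> l2"
  using l2_add[of x "\<lambda>i. - y i"] l2_neg[of y] by simp

lemma l2_bv[simp]: "bv i \<in> l2"
  unfolding l2_def bv_def mem_Collect_eq by (rule has_sum_single_pt[where i=i]) auto

lemma l2_finsupp: "finite {i. x i \<noteq> 0} \<Longrightarrow> x \<in> l2"
  unfolding l2_def mem_Collect_eq by (rule finite_nonzero_values_imp_summable_on) (rule finite_subset, auto)

lemma l2_summable: "x \<in> l2 \<Longrightarrow> (\<lambda>i. (cmod (x i))^2) summable_on A"
  unfolding l2_def using summable_on_subset_banach by blast

lemma l2norm_sq: "(l2norm x)^2 = (\<Sum>\<^sub>\<infinity>i. (cmod (x i))^2)"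
  unfolding l2norm_def by (simp add: infsum_nonneg)

lemma l2norm_nonneg[simp]: "0 \<le> l2norm x"
  unfolding l2norm_def by (simp add: infsum_nonneg)

lemma l2norm_zero[simp]: "l2norm (\<lambda>i. 0) = 0"
  unfolding l2norm_def by simp

lemma l2norm_scale: "x \<in> l2 \<Longrightarrow> l2norm (\<lambda>i. c * x i) = cmod c * l2norm x"
proof -
  assume x: "x \<in> l2"
  have "(\<Sum>\<^sub>\<infinity>i. (cmod (c * x i))^2) = (cmod c)^2 * (\<Sum>\<^sub>\<infinity>i. (cmod (x i))^2)"
    by (simp add: norm_mult power_mult_distrib infsum_cmult_right')
  thus ?thesis unfolding l2norm_def by (simp add: real_sqrt_mult)
qed

lemma l2norm_eq0: assumes "x \<in> l2" "l2norm x = 0" shows "x = (\<lambda>i. 0)"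
proof
  fix i
  have "(\<Sum>\<^sub>\<infinity>i. (cmod (x i))^2) \<le> 0" using assms(2) l2norm_sq[of x] by simp
  hence "(cmod (x i))^2 = 0"
    by (rule nonneg_infsum_le_0D) (use assms(1) in \<open>auto simp: l2_def\<close>)
  thus "x i = 0" by simp
qed

lemma l2_coord_le: "x \<in> l2 \<Longrightarrow> cmod (x i) \<le> l2norm x"
proof -
  assume x: "x \<in> l2"
  have "sum (\<lambda>i. (cmod (x i))^2) {i} \<le> (\<Sum>\<^sub>\<infinity>i. (cmod (x i))^2)"
    by (rule finite_sum_le_infsum) (use x in \<open>auto simp: l2_def\<close>)
  hence "(cmod (x i))^2 \<le> (l2norm x)^2" by (simp add: l2norm_sq)
  thus ?thesis by (rule power2_le_imp_le) simp
qed

lemma abs_prod_summable: assumes "x \<in> l2" "y \<in> l2"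
  shows "(\<lambda>i. cmod (x i) * cmod (y i)) summable_on A"
proof -
  have s: "(\<lambda>i. (cmod (x i))^2 + (cmod (y i))^2) summable_on A"
    using assms by (auto intro!: summable_on_add l2_summable)
  have "cmod (x i) * cmod (y i) \<le> (cmod (x i))^2 + (cmod (y i))^2" for i
  proof -
    have "0 \<le> (cmod (x i) - cmod (y i))^2" by simp
    hence h1: "2 * (cmod (x i) * cmod (y i)) \<le> (cmod (x i))^2 + (cmod (y i))^2"
      by (simp add: power2_eq_square algebra_simps)
    have h2: "0 \<le> cmod (x i) * cmod (y i)" by simp
    from h1 h2 show ?thesis by linarith
  qed
  thus ?thesis by (intro summable_on_comparison_test[OF s]) auto
qed

lemma cs_abs: assumes "x \<in> l2" "y \<in> l2"
  shows "(\<Sum>\<^sub>\<infinity>i. cmod (x i) * cmod (y i)) \<le> l2norm x * l2norm y"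
proof (rule infsum_le_finite_sums)
  show "(\<lambda>i. cmod (x i) * cmod (y i)) summable_on UNIV" by (rule abs_prod_summable[OF assms])
  fix F :: "'a set" assume F: "finite F" "F \<subseteq> UNIV"
  have "(\<Sum>i\<in>F. cmod (x i) * cmod (y i)) = (\<Sum>i\<in>F. \<bar>cmod (x i)\<bar> * \<bar>cmod (y i)\<bar>)" by simp
  also have "\<dots> \<le> L2_set (\<lambda>i. cmod (x i)) F * L2_set (\<lambda>i. cmod (y i)) F"
    by (rule L2_set_mult_ineq)
  also have "\<dots> \<le> l2norm x * l2norm y"
  proof (rule mult_mono)
    have "L2_set (\<lambda>i. cmod (x i)) F \<le> l2norm x" if "x \<in> l2" for x :: "'a \<Rightarrow> complex"
      unfolding L2_set_def l2norm_def
      by (rule real_sqrt_le_mono, rule finite_sum_le_infsum) (use that F in \<open>auto simp: l2_def\<close>)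
    thus "L2_set (\<lambda>i. cmod (x i)) F \<le> l2norm x" "L2_set (\<lambda>i. cmod (y i)) F \<le> l2norm y"
      using assms by auto
  qed (auto simp: L2_set_def intro!: sum_nonneg)
  finally show "(\<Sum>i\<in>F. cmod (x i) * cmod (y i)) \<le> l2norm x * l2norm y" .
qed

lemma inner_summable: assumes "x \<in> l2" "y \<in> l2"
  shows "(\<lambda>i. cnj (x i) * y i) summable_on A"
proof -
  have "(\<lambda>i. norm (cnj (x i) * y i)) summable_on A"
    using abs_prod_summable[OF assms, of A] by (simp add: norm_mult)
  thus ?thesis by (rule Infinite_Sum.abs_summable_summable)
qed

lemma cs: assumes "x \<in> l2" "y \<in> l2"
  shows "cmod (l2inner x y) \<le> l2norm x * l2norm y"
proof -
  have "cmod (l2inner x y) \<le> (\<Sum>\<^sub>\<infinity>i. cmod (cnj (x i) * y i))"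
    unfolding l2inner_def
    by (rule norm_infsum_bound) (use abs_prod_summable[OF assms] in \<open>simp add: norm_mult\<close>)
  also have "\<dots> = (\<Sum>\<^sub>\<infinity>i. cmod (x i) * cmod (y i))" by (simp add: norm_mult)
  also have "\<dots> \<le> l2norm x * l2norm y" by (rule cs_abs[OF assms])
  finally show ?thesis .
qed

lemma l2norm_triangle: assumes "x \<in> l2" "y \<in> l2"
  shows "l2norm (\<lambda>i. x i + y i) \<le> l2norm x + l2norm y"
proof -
  have "(l2norm (\<lambda>i. x i + y i))^2 = (\<Sum>\<^sub>\<infinity>i. (cmod (x i + y i))^2)" by (rule l2norm_sq)
  also have "\<dots> \<le> (\<Sum>\<^sub>\<infinity>i. (cmod (x i))^2 + (cmod (y i))^2 + 2 * (cmod (x i) * cmod (y i)))"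
  proof (rule infsum_mono)
    show "(\<lambda>i. (cmod (x i + y i))^2) summable_on UNIV" using l2_add[OF assms] by (simp add: l2_def)
    show "(\<lambda>i. (cmod (x i))^2 + (cmod (y i))^2 + 2 * (cmod (x i) * cmod (y i))) summable_on UNIV"
      using assms by (intro summable_on_add summable_on_cmult_right abs_prod_summable l2_summable)
    fix i
    have "cmod (x i + y i) \<le> cmod (x i) + cmod (y i)" by (rule norm_triangle_ineq)
    hence "(cmod (x i + y i))^2 \<le> (cmod (x i) + cmod (y i))^2" by (simp add: power_mono)
    thus "(cmod (x i + y i))^2 \<le> (cmod (x i))^2 + (cmod (y i))^2 + 2 * (cmod (x i) * cmod (y i))"
      by (simp add: power2_sum)
  qed
  also have "\<dots> = (\<Sum>\<^sub>\<infinity>i. (cmod (x i))^2) + (\<Sum>\<^sub>\<infinity>i. (cmod (y i))^2) + 2 * (\<Sum>\<^sub>\<infinity>i. cmod (x i) * cmod (y i))"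
    using assms
    by (simp add: infsum_add summable_on_add abs_prod_summable l2_summable infsum_cmult_right' summable_on_cmult_right)
  also have "\<dots> \<le> (l2norm x)^2 + (l2norm y)^2 + 2 * (l2norm x * l2norm y)"
    using cs_abs[OF assms] by (simp add: l2norm_sq)
  also have "\<dots> = (l2norm x + l2norm y)^2" by (simp add: power2_sum)
  finally show ?thesis by (rule power2_le_imp_le) simp
qed

lemma l2norm_neg: "x \<in> l2 \<Longrightarrow> l2norm (\<lambda>i. - x i) = l2norm x"
  using l2norm_scale[of x "-1"] by simp

lemma l2norm_triangle_diff: assumes "x \<in> l2" "y \<in> l2"
  shows "l2norm (\<lambda>i. x i - y i) \<le> l2norm x + l2norm y"
  using l2norm_triangle[OF assms(1) l2_neg[OF assms(2)]] l2norm_neg[OF assms(2)] by simp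

lemma l2norm_diff_sym: "l2norm (\<lambda>i. x i - y i) = l2norm (\<lambda>i. y i - x i)"
  unfolding l2norm_def by (simp add: norm_minus_commute)

lemma l2inner_bv_right: "l2inner x (bv i) = cnj (x i)"
  unfolding l2inner_def bv_def by (subst infsum_single_pt[where i=i]) auto

lemma l2inner_bv_left: "l2inner (bv i) x = x i"
  unfolding l2inner_def bv_def by (subst infsum_single_pt[where i=i]) auto

lemma l2inner_add_right: "x \<in> l2 \<Longrightarrow> y \<in> l2 \<Longrightarrow> z \<in> l2 \<Longrightarrow>
   l2inner x (\<lambda>i. y i + z i) = l2inner x y + l2inner x z"
  unfolding l2inner_def by (simp add: distrib_left infsum_add inner_summable)

lemma l2inner_scale_right: "l2inner x (\<lambda>i. c * y i) = c * l2inner x y"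
  unfolding l2inner_def by (simp add: infsum_cmult_right' mult.left_commute)

lemma l2inner_cnj: "cnj (l2inner x y) = l2inner y x"
proof -
  have "cnj (l2inner x y) = (\<Sum>\<^sub>\<infinity>i. cnj (cnj (x i) * y i))"
    by (simp only: l2inner_def infsum_cnj)
  thus ?thesis by (simp add: l2inner_def mult.commute)
qed

lemma l2inner_zero_right[simp]: "l2inner x (\<lambda>i. 0) = 0"
  unfolding l2inner_def by simp

lemma l2inner_diff_right: "x \<in> l2 \<Longrightarrow> y \<in> l2 \<Longrightarrow> z \<in> l2 \<Longrightarrow>
   l2inner x (\<lambda>i. y i - z i) = l2inner x y - l2inner x z"
  using l2inner_add_right[of x y "\<lambda>i. - z i"] l2inner_scale_right[of x "-1" z] l2_neg[of z]
  by simp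

lemma l2_sum: "finite F \<Longrightarrow> (\<And>k. k \<in> F \<Longrightarrow> y k \<in> l2) \<Longrightarrow> (\<lambda>i. \<Sum>k\<in>F. y k i) \<in> l2"
proof (induction F rule: finite_induct)
  case (insert b G) thus ?case using l2_add[of "y b" "\<lambda>i. \<Sum>k\<in>G. y k i"] by simp
qed simp

lemma l2inner_sum_right: assumes "x \<in> l2" shows "finite F \<Longrightarrow> (\<And>k. k \<in> F \<Longrightarrow> y k \<in> l2) \<Longrightarrow>
   l2inner x (\<lambda>i. \<Sum>k\<in>F. y k i) = (\<Sum>k\<in>F. l2inner x (y k))"
proof (induction F rule: finite_induct)
  case empty thus ?case by simp
next
  case (insert a F)
  have l: "(\<lambda>i. \<Sum>k\<in>F. y k i) \<in> l2"
    using insert by (intro l2_sum) auto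
  hence "l2inner x (\<lambda>i. \<Sum>k\<in>insert a F. y k i) = l2inner x (\<lambda>i. y a i + (\<Sum>k\<in>F. y k i))"
    using insert by simp
  also have "\<dots> = l2inner x (y a) + l2inner x (\<lambda>i. \<Sum>k\<in>F. y k i)"
    using insert l assms by (intro l2inner_add_right) auto
  finally show ?case using insert by simp
qed


lemma bopsD:
  assumes "T \<in> bops"
  shows bops_l2: "x \<in> l2 \<Longrightarrow> T x \<in> l2"
    and bops_add: "x \<in> l2 \<Longrightarrow> y \<in> l2 \<Longrightarrow> T (\<lambda>i. x i + y i) = (\<lambda>i. T x i + T y i)"
    and bops_scale: "x \<in> l2 \<Longrightarrow> T (\<lambda>i. c * x i) = (\<lambda>i. c * T x i)"
    and bops_out: "x \<notin> l2 \<Longrightarrow> T x = (\<lambda>i. 0)"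
  using assms unfolding bops_def by auto

lemma bops_bound: assumes "T \<in> bops" shows "\<exists>K\<ge>0. \<forall>x\<in>l2. l2norm (T x) \<le> K * l2norm x"
proof -
  obtain K where K: "\<forall>x\<in>l2. l2norm (T x) \<le> K * l2norm x" using assms unfolding bops_def by blast
  have "l2norm (T x) \<le> max K 0 * l2norm x" if "x \<in> l2" for x
  proof -
    have "l2norm (T x) \<le> K * l2norm x" using K that by auto
    also have "\<dots> \<le> max K 0 * l2norm x" by (rule mult_right_mono) auto
    finally show "l2norm (T x) \<le> max K 0 * l2norm x" .
  qed
  thus ?thesis by (intro exI[of _ "max K 0"]) auto
qed

lemma bops_zero: "T \<in> bops \<Longrightarrow> T (\<lambda>i. 0) = (\<lambda>i. 0)"
  using bops_scale[of T "\<lambda>i. 0" 0] by simp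

lemma bops_neg: "T \<in> bops \<Longrightarrow> x \<in> l2 \<Longrightarrow> T (\<lambda>i. - x i) = (\<lambda>i. - T x i)"
  using bops_scale[of T x "-1"] by simp

lemma bops_diff: "T \<in> bops \<Longrightarrow> x \<in> l2 \<Longrightarrow> y \<in> l2 \<Longrightarrow> T (\<lambda>i. x i - y i) = (\<lambda>i. T x i - T y i)"
  using bops_add[of T x "\<lambda>i. - y i"] bops_neg[of T y] l2_neg[of y] by simp

lemma bops_sum: assumes "T \<in> bops"
  shows "finite F \<Longrightarrow> (\<And>k. k \<in> F \<Longrightarrow> y k \<in> l2) \<Longrightarrow> T (\<lambda>i. \<Sum>k\<in>F. y k i) = (\<lambda>i. \<Sum>k\<in>F. T (y k) i)"
proof (induction F rule: finite_induct)
  case empty thus ?case using bops_zero[OF assms] by simp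
next
  case (insert a F)
  have "T (\<lambda>i. \<Sum>k\<in>insert a F. y k i) = T (\<lambda>i. y a i + (\<Sum>k\<in>F. y k i))" using insert by simp
  also have "\<dots> = (\<lambda>i. T (y a) i + T (\<lambda>i. \<Sum>k\<in>F. y k i) i)"
    using insert by (intro bops_add[OF assms] l2_sum) auto
  finally show ?case using insert by simp
qed

definition nset :: "'i op \<Rightarrow> real set" where
  "nset T = {l2norm (T x) | x. x \<in> l2 \<and> l2norm x \<le> 1}"

lemma opnorm_nset: "opnorm T = Sup (nset T)" unfolding opnorm_def nset_def ..

lemma nset_ne: "nset T \<noteq> {}" unfolding nset_def by (auto intro!: exI[of _ "\<lambda>i. 0"])

lemma nset_bdd: assumes "T \<in> bops" shows "bdd_above (nset T)"
proof -
  obtain K where K: "K \<ge> 0" "\<forall>x\<in>l2. l2norm (T x) \<le> K * l2norm x" using bops_bound[OF assms] by blast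
  show ?thesis unfolding nset_def bdd_above_def
  proof (intro exI[of _ K] ballI)
    fix r assume "r \<in> {l2norm (T x) |x. x \<in> l2 \<and> l2norm x \<le> 1}"
    then obtain x where x: "x \<in> l2" "l2norm x \<le> 1" "r = l2norm (T x)" by auto
    have "r \<le> K * l2norm x" using K x by auto
    also have "\<dots> \<le> K" using K x mult_left_mono[of "l2norm x" 1 K] by auto
    finally show "r \<le> K" .
  qed
qed

lemma opnorm_nonneg: assumes "T \<in> bops" shows "0 \<le> opnorm T"
proof -
  have "l2norm (T (\<lambda>i. 0)) \<in> nset T" unfolding nset_def by (auto intro!: exI[of _ "\<lambda>i. 0"])
  hence "l2norm (T (\<lambda>i. 0)) \<le> opnorm T" unfolding opnorm_nset using nset_bdd[OF assms] by (rule cSup_upper)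
  thus ?thesis using bops_zero[OF assms] by simp
qed

lemma opnorm_bound: assumes "T \<in> bops" "x \<in> l2" shows "l2norm (T x) \<le> opnorm T * l2norm x"
proof (cases "l2norm x = 0")
  case True
  hence "x = (\<lambda>i. 0)" using l2norm_eq0 assms by auto
  thus ?thesis using bops_zero[OF assms(1)] by simp
next
  case False
  hence pos: "l2norm x > 0" using l2norm_nonneg[of x] by linarith
  define c where "c = complex_of_real (1 / l2norm x)"
  have xl: "(\<lambda>i. c * x i) \<in> l2" using assms by (intro l2_scale)
  have "l2norm (\<lambda>i. c * x i) = cmod c * l2norm x" by (rule l2norm_scale[OF assms(2)])
  hence n1: "l2norm (\<lambda>i. c * x i) = 1" using pos by (simp add: c_def norm_divide)
  have "l2norm (T (\<lambda>i. c * x i)) \<in> nset T" unfolding nset_def using xl n1 by auto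
  hence "l2norm (T (\<lambda>i. c * x i)) \<le> opnorm T" unfolding opnorm_nset using nset_bdd[OF assms(1)] by (rule cSup_upper)
  moreover have "l2norm (T (\<lambda>i. c * x i)) = l2norm (T x) / l2norm x"
  proof -
    have "T (\<lambda>i. c * x i) = (\<lambda>i. c * T x i)" by (rule bops_scale[OF assms])
    hence "l2norm (T (\<lambda>i. c * x i)) = cmod c * l2norm (T x)"
      using l2norm_scale[OF bops_l2[OF assms]] by simp
    thus ?thesis using pos by (simp add: c_def norm_divide)
  qed
  ultimately have "l2norm (T x) / l2norm x \<le> opnorm T" by simp
  thus ?thesis using pos by (simp add: divide_le_eq)
qed

lemma opnorm_le: assumes "\<And>x. x \<in> l2 \<Longrightarrow> l2norm (T x) \<le> K * l2norm x" "0 \<le> K" shows "opnorm T \<le> K"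
  unfolding opnorm_nset
proof (rule cSup_least[OF nset_ne])
  fix r assume "r \<in> nset T"
  then obtain x where x: "x \<in> l2" "l2norm x \<le> 1" "r = l2norm (T x)" unfolding nset_def by auto
  have "r \<le> K * l2norm x" using assms x by auto
  also have "\<dots> \<le> K" using assms x mult_left_mono[of "l2norm x" 1 K] by auto
  finally show "r \<le> K" .
qed



lemma bopsI:
  assumes "\<And>x. x \<in> l2 \<Longrightarrow> T x \<in> l2"
    and "\<And>x y. x \<in> l2 \<Longrightarrow> y \<in> l2 \<Longrightarrow> T (\<lambda>i. x i + y i) = (\<lambda>i. T x i + T y i)"
    and "\<And>x c. x \<in> l2 \<Longrightarrow> T (\<lambda>i. c * x i) = (\<lambda>i. c * T x i)"
    and "\<And>x. x \<in> l2 \<Longrightarrow> l2norm (T x) \<le> K * l2norm x"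
    and "\<And>x. x \<notin> l2 \<Longrightarrow> T x = (\<lambda>i. 0)"
  shows "T \<in> bops"
  unfolding bops_def using assms by blast

lemma idop_l2[simp]: "x \<in> l2 \<Longrightarrow> idop x = x" by (simp add: idop_def)

lemma idop_bops[simp]: "idop \<in> bops"
proof (rule bopsI[where K=1])
  fix x y :: "'a \<Rightarrow> complex" and c assume x: "x \<in> l2" and y: "y \<in> l2"
  show "idop (\<lambda>i. x i + y i) = (\<lambda>i. idop x i + idop y i)" using x y l2_add[OF x y] by simp
  show "idop (\<lambda>i. c * x i) = (\<lambda>i. c * idop x i)" using x l2_scale[OF x] by simp
qed (auto simp: idop_def)

lemma zero_op_bops[simp]: "zero_op \<in> bops"
  by (rule bopsI[where K=0]) (auto simp: zero_op_def)

lemma op_add_bops[simp]: fixes S T :: "'i op" assumes S: "S \<in> bops" and T: "T \<in> bops" shows "op_add S T \<in> bops"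
proof -
  have o: "opnorm S \<ge> 0" "opnorm T \<ge> 0" using opnorm_nonneg S T by auto
  show ?thesis
  proof (rule bopsI[where K="opnorm S + opnorm T"])
    fix x :: "'i \<Rightarrow> complex" assume x: "x \<in> l2"
    show "op_add S T x \<in> l2" unfolding op_add_def using bops_l2[OF S x] bops_l2[OF T x] by (rule l2_add)
    have "l2norm (op_add S T x) \<le> l2norm (S x) + l2norm (T x)"
      unfolding op_add_def using bops_l2[OF S x] bops_l2[OF T x] by (rule l2norm_triangle)
    also have "\<dots> \<le> opnorm S * l2norm x + opnorm T * l2norm x"
      using x S T by (intro add_mono opnorm_bound)
    finally show "l2norm (op_add S T x) \<le> (opnorm S + opnorm T) * l2norm x" by (simp add: algebra_simps)
  next
    fix x y :: "'i \<Rightarrow> complex" assume x: "x \<in> l2" and y: "y \<in> l2"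
    show "op_add S T (\<lambda>i. x i + y i) = (\<lambda>i. op_add S T x i + op_add S T y i)"
      unfolding op_add_def bops_add[OF S x y] bops_add[OF T x y] by (simp add: algebra_simps)
  next
    fix x :: "'i \<Rightarrow> complex" and c assume x: "x \<in> l2"
    show "op_add S T (\<lambda>i. c * x i) = (\<lambda>i. c * op_add S T x i)"
      unfolding op_add_def bops_scale[OF S x] bops_scale[OF T x] by (simp add: algebra_simps)
  next
    fix x :: "'i \<Rightarrow> complex" assume x: "x \<notin> l2"
    show "op_add S T x = (\<lambda>i. 0)" unfolding op_add_def bops_out[OF S x] bops_out[OF T x] by simp
  qed
qed

lemma op_scale_bops[simp]: fixes T :: "'i op" assumes T: "T \<in> bops" shows "op_scale c T \<in> bops"
proof (rule bopsI[where K="cmod c * opnorm T"])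
  fix x :: "'i \<Rightarrow> complex" assume x: "x \<in> l2"
  show "op_scale c T x \<in> l2" unfolding op_scale_def using bops_l2[OF T x] by (rule l2_scale)
  have "l2norm (op_scale c T x) = cmod c * l2norm (T x)"
    unfolding op_scale_def using bops_l2[OF T x] by (rule l2norm_scale)
  also have "\<dots> \<le> cmod c * (opnorm T * l2norm x)"
    using x T by (intro mult_left_mono opnorm_bound) auto
  finally show "l2norm (op_scale c T x) \<le> cmod c * opnorm T * l2norm x" by (simp add: algebra_simps)
next
  fix x y :: "'i \<Rightarrow> complex" assume x: "x \<in> l2" and y: "y \<in> l2"
  show "op_scale c T (\<lambda>i. x i + y i) = (\<lambda>i. op_scale c T x i + op_scale c T y i)"
    unfolding op_scale_def bops_add[OF T x y] by (simp add: algebra_simps)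
next
  fix x :: "'i \<Rightarrow> complex" and d assume x: "x \<in> l2"
  show "op_scale c T (\<lambda>i. d * x i) = (\<lambda>i. d * op_scale c T x i)"
    unfolding op_scale_def bops_scale[OF T x] by (simp add: algebra_simps)
next
  fix x :: "'i \<Rightarrow> complex" assume x: "x \<notin> l2"
  show "op_scale c T x = (\<lambda>i. 0)" unfolding op_scale_def bops_out[OF T x] by simp
qed

lemma op_diff_alt: "op_diff S T = op_add S (op_scale (-1) T)"
  by (auto simp: op_diff_def op_add_def op_scale_def fun_eq_iff)

lemma op_diff_bops[simp]: "S \<in> bops \<Longrightarrow> T \<in> bops \<Longrightarrow> op_diff S T \<in> bops"
  by (simp add: op_diff_alt)

lemma op_comp_bops[simp]: fixes S T :: "'i op" assumes S: "S \<in> bops" and T: "T \<in> bops" shows "op_comp S T \<in> bops"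
proof (rule bopsI[where K="opnorm S * opnorm T"])
  fix x :: "'i \<Rightarrow> complex" assume x: "x \<in> l2"
  show "op_comp S T x \<in> l2" unfolding op_comp_def using bops_l2[OF S bops_l2[OF T x]] by simp
  have "l2norm (op_comp S T x) \<le> opnorm S * l2norm (T x)"
    unfolding op_comp_def using opnorm_bound[OF S bops_l2[OF T x]] by simp
  also have "\<dots> \<le> opnorm S * (opnorm T * l2norm x)"
    using x S T by (intro mult_left_mono opnorm_bound opnorm_nonneg) auto
  finally show "l2norm (op_comp S T x) \<le> opnorm S * opnorm T * l2norm x" by (simp add: algebra_simps)
next
  fix x y :: "'i \<Rightarrow> complex" assume x: "x \<in> l2" and y: "y \<in> l2"
  show "op_comp S T (\<lambda>i. x i + y i) = (\<lambda>i. op_comp S T x i + op_comp S T y i)"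
    unfolding op_comp_def o_def bops_add[OF T x y] using bops_add[OF S bops_l2[OF T x] bops_l2[OF T y]] by simp
next
  fix x :: "'i \<Rightarrow> complex" and c assume x: "x \<in> l2"
  show "op_comp S T (\<lambda>i. c * x i) = (\<lambda>i. c * op_comp S T x i)"
    unfolding op_comp_def o_def bops_scale[OF T x] using bops_scale[OF S bops_l2[OF T x]] by simp
next
  fix x :: "'i \<Rightarrow> complex" assume x: "x \<notin> l2"
  show "op_comp S T x = (\<lambda>i. 0)" unfolding op_comp_def o_def bops_out[OF T x] bops_zero[OF S] ..
qed

lemma opnorm_add: fixes S T :: "'i op" assumes "S \<in> bops" "T \<in> bops" shows "opnorm (op_add S T) \<le> opnorm S + opnorm T"
proof (rule opnorm_le)
  fix x :: "'i \<Rightarrow> complex" assume x: "x \<in> l2"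
  have "l2norm (op_add S T x) \<le> l2norm (S x) + l2norm (T x)"
    unfolding op_add_def using bops_l2[OF assms(1) x] bops_l2[OF assms(2) x] by (rule l2norm_triangle)
  also have "\<dots> \<le> opnorm S * l2norm x + opnorm T * l2norm x"
    using x assms by (intro add_mono opnorm_bound)
  finally show "l2norm (op_add S T x) \<le> (opnorm S + opnorm T) * l2norm x" by (simp add: algebra_simps)
qed (use opnorm_nonneg[OF assms(1)] opnorm_nonneg[OF assms(2)] in simp)

lemma opnorm_scale: fixes T :: "'i op" assumes "T \<in> bops" shows "opnorm (op_scale c T) \<le> cmod c * opnorm T"
proof (rule opnorm_le)
  fix x :: "'i \<Rightarrow> complex" assume x: "x \<in> l2"
  have "l2norm (op_scale c T x) = cmod c * l2norm (T x)"
    unfolding op_scale_def using bops_l2[OF assms x] by (rule l2norm_scale)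
  also have "\<dots> \<le> cmod c * (opnorm T * l2norm x)"
    using x assms by (intro mult_left_mono opnorm_bound) auto
  finally show "l2norm (op_scale c T x) \<le> cmod c * opnorm T * l2norm x" by (simp add: algebra_simps)
qed (use opnorm_nonneg[OF assms] in simp)

lemma opnorm_comp: fixes S T :: "'i op" assumes "S \<in> bops" "T \<in> bops" shows "opnorm (op_comp S T) \<le> opnorm S * opnorm T"
proof (rule opnorm_le)
  fix x :: "'i \<Rightarrow> complex" assume x: "x \<in> l2"
  have "l2norm (op_comp S T x) \<le> opnorm S * l2norm (T x)"
    unfolding op_comp_def using opnorm_bound[OF assms(1) bops_l2[OF assms(2) x]] by simp
  also have "\<dots> \<le> opnorm S * (opnorm T * l2norm x)"
    using x assms by (intro mult_left_mono opnorm_bound opnorm_nonneg) auto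
  finally show "l2norm (op_comp S T x) \<le> opnorm S * opnorm T * l2norm x" by (simp add: algebra_simps)
qed (use opnorm_nonneg[OF assms(1)] opnorm_nonneg[OF assms(2)] in simp)

lemma opnorm_diff_tri: assumes "S \<in> bops" "T \<in> bops" shows "opnorm (op_diff S T) \<le> opnorm S + opnorm T"
  using opnorm_add[OF assms(1) op_scale_bops[OF assms(2), of "-1"]] opnorm_scale[OF assms(2), of "-1"]
  by (simp add: op_diff_alt)

lemma opnorm_zero[simp]: "opnorm (zero_op :: 'i op) = 0"
proof -
  have "opnorm (zero_op :: 'i op) \<le> 0" by (rule opnorm_le) (auto simp: zero_op_def)
  thus ?thesis using opnorm_nonneg[OF zero_op_bops, where 'a='i] by linarith
qed

lemma op_diff_self[simp]: "op_diff T T = zero_op"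
  by (simp add: op_diff_def zero_op_def fun_eq_iff)



definition trunc :: "'i set \<Rightarrow> ('i \<Rightarrow> complex) \<Rightarrow> 'i \<Rightarrow> complex" where
  "trunc F x = (\<lambda>i. if i \<in> F then x i else 0)"

lemma trunc_l2: "finite F \<Longrightarrow> trunc F x \<in> l2"
  by (rule l2_finsupp) (rule finite_subset[of _ F], auto simp: trunc_def)

lemma trunc_sum: assumes F: "finite F" shows "trunc F x = (\<lambda>j. \<Sum>i\<in>F. x i * bv i j)"
proof
  fix j
  have "(\<Sum>i\<in>F. x i * bv i j) = (\<Sum>i\<in>F. if i = j then x j else 0)"
    by (rule sum.cong) (auto simp: bv_def)
  also have "\<dots> = (if j \<in> F then x j else 0)" using F by (rule sum.delta)
  finally show "trunc F x j = (\<Sum>i\<in>F. x i * bv i j)" by (simp add: trunc_def)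
qed

lemma bops_trunc: assumes "T \<in> bops" "finite F"
  shows "T (trunc F x) = (\<lambda>j. \<Sum>i\<in>F. x i * T (bv i) j)"
proof -
  have "T (trunc F x) = T (\<lambda>j. \<Sum>i\<in>F. x i * bv i j)" using trunc_sum[OF assms(2)] by simp
  also have "\<dots> = (\<lambda>j. \<Sum>i\<in>F. T (\<lambda>j. x i * bv i j) j)"
    using assms by (intro bops_sum l2_scale) auto
  also have "\<dots> = (\<lambda>j. \<Sum>i\<in>F. x i * T (bv i) j)"
    using assms by (simp add: bops_scale[OF assms(1)])
  finally show ?thesis .
qed

lemma trunc_tendsto: assumes x: "x \<in> l2"
  shows "((\<lambda>F. l2norm (\<lambda>i. x i - trunc F x i)) \<longlongrightarrow> 0) (finite_subsets_at_top UNIV)"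
proof -
  define S where "S = (\<Sum>\<^sub>\<infinity>i. (cmod (x i))^2)"
  have hs: "((\<lambda>i. (cmod (x i))^2) has_sum S) UNIV" using x unfolding S_def l2_def by simp
  have eq: "l2norm (\<lambda>i. x i - trunc F x i) = sqrt (S - (\<Sum>i\<in>F. (cmod (x i))^2))" if F: "finite F" for F
  proof -
    have a: "(\<lambda>i. (cmod (x i - trunc F x i))^2) = (\<lambda>i. if i \<in> F then 0 else (cmod (x i))^2)"
      by (auto simp: trunc_def)
    have b: "(\<lambda>i. (cmod (x i))^2) = (\<lambda>i. (if i \<in> F then 0 else (cmod (x i))^2) + (if i \<in> F then (cmod (x i))^2 else 0))"
      by auto
    have s1: "(\<lambda>i. if i \<in> F then 0 else (cmod (x i))^2) summable_on UNIV"
    proof -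
      have "(\<lambda>i. (cmod (x i - trunc F x i))^2) summable_on UNIV"
        using l2_diff[OF x trunc_l2[OF F, of x]] by (simp add: l2_def)
      thus ?thesis using a by simp
    qed
    have s2: "(\<lambda>i. if i \<in> F then (cmod (x i))^2 else 0) summable_on UNIV"
      by (rule finite_nonzero_values_imp_summable_on) (rule finite_subset[OF _ F], auto)
    have i2: "(\<Sum>\<^sub>\<infinity>i. if i \<in> F then (cmod (x i))^2 else 0) = (\<Sum>i\<in>F. (cmod (x i))^2)"
    proof -
      have "(\<Sum>\<^sub>\<infinity>i. if i \<in> F then (cmod (x i))^2 else 0) = (\<Sum>\<^sub>\<infinity>i\<in>F. if i \<in> F then (cmod (x i))^2 else 0)"
        by (rule infsum_cong_neutral) auto
      also have "\<dots> = (\<Sum>i\<in>F. (cmod (x i))^2)" using F by simp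
      finally show ?thesis .
    qed
    have "S = (\<Sum>\<^sub>\<infinity>i. if i \<in> F then 0 else (cmod (x i))^2) + (\<Sum>i\<in>F. (cmod (x i))^2)"
      unfolding S_def by (subst b) (simp only: infsum_add[OF s1 s2] i2)
    thus ?thesis unfolding l2norm_def a by simp
  qed
  have "((\<lambda>F. sqrt (S - (\<Sum>i\<in>F. (cmod (x i))^2))) \<longlongrightarrow> sqrt (S - S)) (finite_subsets_at_top UNIV)"
    using hs unfolding has_sum_def by (intro tendsto_intros)
  hence "((\<lambda>F. sqrt (S - (\<Sum>i\<in>F. (cmod (x i))^2))) \<longlongrightarrow> 0) (finite_subsets_at_top UNIV)" by simp
  thus ?thesis
    by (rule Lim_transform_eventually) (auto intro!: eventually_finite_subsets_at_top_weakI simp: eq)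
qed

lemma bops_ext: fixes S T :: "'i op" assumes S: "S \<in> bops" and T: "T \<in> bops" and eq: "\<And>i. S (bv i) = T (bv i)"
  shows "S = T"
proof
  fix x
  show "S x = T x"
  proof (cases "x \<in> l2")
    case False thus ?thesis using bops_out[OF S False] bops_out[OF T False] by simp
  next
    case x: True
    define C where "C = opnorm S + opnorm T"
    define g where "g F = l2norm (\<lambda>i. x i - trunc F x i)" for F
    define d where "d = l2norm (\<lambda>i. S x i - T x i)"
    have le: "d \<le> C * g F" if F: "finite F" for F
    proof -
      have tr: "S (trunc F x) = T (trunc F x)" using bops_trunc[OF S F] bops_trunc[OF T F] eq by simp
      have xd: "(\<lambda>i. x i - trunc F x i) \<in> l2" using x trunc_l2[OF F] by (rule l2_diff)
      have "(\<lambda>i. S x i - T x i) = (\<lambda>i. S (\<lambda>i. x i - trunc F x i) i - T (\<lambda>i. x i - trunc F x i) i)"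
        using x trunc_l2[OF F] tr by (simp add: bops_diff[OF S] bops_diff[OF T])
      hence "d = l2norm (\<lambda>i. S (\<lambda>i. x i - trunc F x i) i - T (\<lambda>i. x i - trunc F x i) i)" unfolding d_def by simp
      also have "\<dots> \<le> l2norm (S (\<lambda>i. x i - trunc F x i)) + l2norm (T (\<lambda>i. x i - trunc F x i))"
        using bops_l2[OF S xd] bops_l2[OF T xd] by (rule l2norm_triangle_diff)
      also have "\<dots> \<le> opnorm S * g F + opnorm T * g F"
        unfolding g_def using xd S T by (intro add_mono opnorm_bound)
      finally show ?thesis by (simp add: C_def algebra_simps)
    qed
    have "((\<lambda>F. C * g F) \<longlongrightarrow> C * 0) (finite_subsets_at_top UNIV)"
      unfolding g_def by (intro tendsto_intros trunc_tendsto x)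
    hence "d \<le> C * 0"
      by (rule tendsto_le[OF finite_subsets_at_top_neq_bot _ tendsto_const])
        (auto intro!: eventually_finite_subsets_at_top_weakI le)
    hence "d = 0" using l2norm_nonneg[of "\<lambda>i. S x i - T x i"] unfolding d_def by simp
    hence "(\<lambda>i. S x i - T x i) = (\<lambda>i. 0)" unfolding d_def
      by (rule l2norm_eq0[OF l2_diff[OF bops_l2[OF S x] bops_l2[OF T x]]])
    thus ?thesis by (simp add: fun_eq_iff)
  qed
qed



section \<open>Adjoint\<close>

definition adjf :: "'i op \<Rightarrow> 'i op" where
  "adjf T y = (if y \<in> l2 then (\<lambda>i. l2inner (T (bv i)) y) else (\<lambda>i. 0))"

lemma adjf_partial: fixes S T :: "'i op" assumes T: "T \<in> bops" and y: "y \<in> l2" and F: "finite F"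
  shows "(\<Sum>i\<in>F. (cmod (l2inner (T (bv i)) y))^2) \<le> (opnorm T * l2norm y)^2"
proof -
  define z where "z i = l2inner (T (bv i)) y" for i
  define s where "s = (\<Sum>i\<in>F. (cmod (z i))^2)"
  define v where "v = trunc F z"
  have vl: "v \<in> l2" unfolding v_def using F by (rule trunc_l2)
  have Tv: "T v = (\<lambda>j. \<Sum>i\<in>F. z i * T (bv i) j)" unfolding v_def by (rule bops_trunc[OF T F])
  have "l2inner y (T v) = (\<Sum>i\<in>F. l2inner y (\<lambda>j. z i * T (bv i) j))"
    unfolding Tv using y F by (intro l2inner_sum_right l2_scale bops_l2[OF T]) auto
  also have "\<dots> = (\<Sum>i\<in>F. z i * cnj (z i))"
    by (simp add: l2inner_scale_right z_def l2inner_cnj)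
  also have "\<dots> = complex_of_real s"
    unfolding s_def by (simp only: of_real_sum complex_norm_square)
  finally have e1: "l2inner y (T v) = complex_of_real s" .
  have s0: "0 \<le> s" unfolding s_def by (simp add: sum_nonneg)
  have nv: "l2norm v = sqrt s"
  proof -
    have "(\<Sum>\<^sub>\<infinity>i. (cmod (v i))^2) = (\<Sum>\<^sub>\<infinity>i\<in>F. (cmod (v i))^2)"
      by (rule infsum_cong_neutral) (auto simp: v_def trunc_def)
    also have "\<dots> = s" using F by (simp add: s_def v_def trunc_def)
    finally show ?thesis unfolding l2norm_def by simp
  qed
  have "s = cmod (l2inner y (T v))" using e1 s0 by simp
  also have "\<dots> \<le> l2norm y * l2norm (T v)" by (rule cs[OF y bops_l2[OF T vl]])
  also have "\<dots> \<le> l2norm y * (opnorm T * sqrt s)"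
    using T vl nv by (intro mult_left_mono opnorm_bound[of T v, simplified nv]) auto
  finally have le: "s \<le> (opnorm T * l2norm y) * sqrt s" by (simp add: algebra_simps)
  have "s \<le> (opnorm T * l2norm y)^2"
  proof (cases "s = 0")
    case True thus ?thesis by simp
  next
    case False
    hence sp: "sqrt s > 0" using s0 by simp
    have "sqrt s * sqrt s \<le> (opnorm T * l2norm y) * sqrt s" using le s0 by simp
    hence "sqrt s \<le> opnorm T * l2norm y" by (rule mult_right_le_imp_le[OF _ sp])
    hence "(sqrt s)^2 \<le> (opnorm T * l2norm y)^2" using sp by (intro power_mono) auto
    thus ?thesis using s0 by simp
  qed
  thus ?thesis unfolding s_def z_def .
qed

lemma adjf_l2: fixes T :: "'i op" assumes T: "T \<in> bops" shows "adjf T y \<in> l2"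
proof (cases "y \<in> l2")
  case True
  have "bdd_above (sum (\<lambda>i. (cmod (l2inner (T (bv i)) y))^2) ` {F. F \<subseteq> UNIV \<and> finite F})"
  proof (rule bdd_aboveI2[where M="(opnorm T * l2norm y)^2"])
    fix F :: "'i set" assume "F \<in> {F. F \<subseteq> UNIV \<and> finite F}"
    hence "finite F" by simp
    thus "(\<Sum>i\<in>F. (cmod (l2inner (T (bv i)) y))^2) \<le> (opnorm T * l2norm y)^2" by (rule adjf_partial[OF T True])
  qed
  hence "(\<lambda>i. (cmod (l2inner (T (bv i)) y))^2) summable_on UNIV"
    by (rule nonneg_bdd_above_summable_on[rotated]) simp
  thus ?thesis using True by (simp add: adjf_def l2_def)
next
  case False thus ?thesis by (simp add: adjf_def)
qed

lemma adjf_norm: fixes T :: "'i op" assumes T: "T \<in> bops" and y: "y \<in> l2" shows "l2norm (adjf T y) \<le> opnorm T * l2norm y"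
proof -
  have e: "adjf T y = (\<lambda>i. l2inner (T (bv i)) y)" using y by (simp add: adjf_def)
  have sm: "(\<lambda>i. (cmod (adjf T y i))^2) summable_on UNIV" using adjf_l2[OF T, of y] by (simp add: l2_def)
  have "(\<Sum>\<^sub>\<infinity>i. (cmod (adjf T y i))^2) \<le> (opnorm T * l2norm y)^2"
  proof (rule infsum_le_finite_sums[OF sm])
    fix F :: "'i set" assume F: "finite F" "F \<subseteq> UNIV"
    show "(\<Sum>i\<in>F. (cmod (adjf T y i))^2) \<le> (opnorm T * l2norm y)^2"
      unfolding e by (rule adjf_partial[OF T y F(1)])
  qed
  hence "(l2norm (adjf T y))^2 \<le> (opnorm T * l2norm y)^2" by (simp add: l2norm_sq)
  thus ?thesis by (rule power2_le_imp_le) (simp add: opnorm_nonneg[OF T])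
qed

lemma adjf_inner: fixes S T :: "'i op" assumes T: "T \<in> bops" and x: "x \<in> l2" and y: "y \<in> l2"
  shows "l2inner (adjf T y) x = l2inner y (T x)"
proof -
  define f where "f i = l2inner y (T (bv i)) * x i" for i
  have eqF: "sum f F = l2inner y (T (trunc F x))" if F: "finite F" for F
  proof -
    have "l2inner y (T (trunc F x)) = (\<Sum>i\<in>F. l2inner y (\<lambda>j. x i * T (bv i) j))"
      unfolding bops_trunc[OF T F] using y F by (intro l2inner_sum_right l2_scale bops_l2[OF T]) auto
    also have "\<dots> = sum f F" by (simp add: l2inner_scale_right f_def mult.commute)
    finally show ?thesis by simp
  qed
  have "((\<lambda>F. l2inner y (T (trunc F x)) - l2inner y (T x)) \<longlongrightarrow> 0) (finite_subsets_at_top UNIV)"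
  proof (rule Lim_null_comparison)
    show "((\<lambda>F. l2norm y * (opnorm T * l2norm (\<lambda>i. x i - trunc F x i))) \<longlongrightarrow> 0) (finite_subsets_at_top UNIV)"
      using tendsto_mult_left[OF tendsto_mult_left[OF trunc_tendsto[OF x]]] by simp
    show "\<forall>\<^sub>F F in finite_subsets_at_top UNIV. norm (l2inner y (T (trunc F x)) - l2inner y (T x))
        \<le> l2norm y * (opnorm T * l2norm (\<lambda>i. x i - trunc F x i))"
    proof (rule eventually_finite_subsets_at_top_weakI)
      fix F :: "'i set" assume F: "finite F"
      have xd: "(\<lambda>i. x i - trunc F x i) \<in> l2" using x trunc_l2[OF F] by (rule l2_diff)
      have "l2inner y (T (trunc F x)) - l2inner y (T x) = - l2inner y (T (\<lambda>i. x i - trunc F x i))"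
        by (simp add: bops_diff[OF T x trunc_l2[OF F]] l2inner_diff_right[OF y bops_l2[OF T x] bops_l2[OF T trunc_l2[OF F]]])
      hence "norm (l2inner y (T (trunc F x)) - l2inner y (T x)) = cmod (l2inner y (T (\<lambda>i. x i - trunc F x i)))"
        by simp
      also have "\<dots> \<le> l2norm y * l2norm (T (\<lambda>i. x i - trunc F x i))" by (rule cs[OF y bops_l2[OF T xd]])
      also have "\<dots> \<le> l2norm y * (opnorm T * l2norm (\<lambda>i. x i - trunc F x i))"
        using xd T by (intro mult_left_mono opnorm_bound) auto
      finally show "norm (l2inner y (T (trunc F x)) - l2inner y (T x)) \<le> l2norm y * (opnorm T * l2norm (\<lambda>i. x i - trunc F x i))" .
    qed
  qed
  hence "((\<lambda>F. l2inner y (T (trunc F x))) \<longlongrightarrow> l2inner y (T x)) (finite_subsets_at_top UNIV)"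
    by (rule LIM_zero_cancel)
  hence "(sum f \<longlongrightarrow> l2inner y (T x)) (finite_subsets_at_top UNIV)"
    by (rule Lim_transform_eventually) (auto intro!: eventually_finite_subsets_at_top_weakI simp: eqF)
  hence "(f has_sum l2inner y (T x)) UNIV" unfolding has_sum_def .
  hence "infsum f UNIV = l2inner y (T x)" by (rule infsumI)
  moreover have "l2inner (adjf T y) x = infsum f UNIV"
  proof -
    have "l2inner (adjf T y) x = (\<Sum>\<^sub>\<infinity>i. cnj (adjf T y i) * x i)" by (simp only: l2inner_def)
    moreover have "cnj (adjf T y i) = l2inner y (T (bv i))" for i
      using y by (simp add: adjf_def l2inner_cnj)
    ultimately show ?thesis by (simp add: f_def[abs_def])
  qed
  ultimately show ?thesis by simp
qed

lemma adjf_bops: fixes S T :: "'i op" assumes T: "T \<in> bops" shows "adjf T \<in> bops"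
proof (rule bopsI[where K="opnorm T"])
  fix x y :: "'i \<Rightarrow> complex" assume x: "x \<in> l2" and y: "y \<in> l2"
  show "adjf T (\<lambda>i. x i + y i) = (\<lambda>i. adjf T x i + adjf T y i)"
    using x y by (auto simp: adjf_def l2_add l2inner_add_right bops_l2[OF T])
next
  fix x :: "'i \<Rightarrow> complex" and c assume x: "x \<in> l2"
  show "adjf T (\<lambda>i. c * x i) = (\<lambda>i. c * adjf T x i)"
    using x T by (auto simp: adjf_def l2_scale l2inner_scale_right)
next
  fix x :: "'i \<Rightarrow> complex" assume x: "x \<in> l2"
  show "l2norm (adjf T x) \<le> opnorm T * l2norm x" by (rule adjf_norm[OF T x])
next
  fix x :: "'i \<Rightarrow> complex" assume x: "x \<notin> l2"
  show "adjf T x = (\<lambda>i. 0)" using x by (simp add: adjf_def)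
qed (rule adjf_l2[OF T])

lemma adj_eq: fixes S T :: "'i op" assumes T: "T \<in> bops" shows "adj T = adjf T"
  unfolding adj_def
proof (rule the_equality)
  show "adjf T \<in> bops \<and> (\<forall>x\<in>l2. \<forall>y\<in>l2. l2inner (adjf T y) x = l2inner y (T x))"
    using adjf_bops[OF T] adjf_inner[OF T] by auto
next
  fix S assume S: "S \<in> bops \<and> (\<forall>x\<in>l2. \<forall>y\<in>l2. l2inner (S y) x = l2inner y (T x))"
  show "S = adjf T"
  proof
    fix y show "S y = adjf T y"
    proof (cases "y \<in> l2")
      case False thus ?thesis using S bops_out[of S y] by (simp add: adjf_def)
    next
      case True
      show ?thesis
      proof
        fix i
        have "cnj (S y i) = l2inner y (T (bv i))" using S True l2_bv[of i]
          by (metis l2inner_bv_right)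
        hence "S y i = cnj (l2inner y (T (bv i)))" by (metis complex_cnj_cnj)
        thus "S y i = adjf T y i" using True by (simp add: adjf_def l2inner_cnj)
      qed
    qed
  qed
qed

lemma adj_bops[simp]: "T \<in> bops \<Longrightarrow> adj T \<in> bops"
  by (simp add: adj_eq adjf_bops)

lemma adj_inner: "T \<in> bops \<Longrightarrow> x \<in> l2 \<Longrightarrow> y \<in> l2 \<Longrightarrow> l2inner (adj T y) x = l2inner y (T x)"
  by (simp add: adj_eq adjf_inner)

lemma adj_opnorm: fixes S T :: "'i op" assumes T: "T \<in> bops" shows "opnorm (adj T) \<le> opnorm T"
  using T by (intro opnorm_le) (auto simp: adj_eq adjf_norm opnorm_nonneg)

lemma adj_bv: fixes S T :: "'i op" assumes T: "T \<in> bops" shows "adj T (bv p) i = cnj (T (bv i) p)"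
  using T by (simp add: adj_eq adjf_def l2inner_bv_right)

lemma adj_unique: fixes S T :: "'i op" assumes T: "T \<in> bops" and S: "S \<in> bops" and h: "\<And>p i. S (bv p) i = cnj (T (bv i) p)"
  shows "adj T = S"
  by (rule bops_ext) (use T S h in \<open>auto simp: adj_bv fun_eq_iff\<close>)



lemma adj_unique_inner: fixes S T :: "'i op"
  assumes T: "T \<in> bops" and S: "S \<in> bops" and h: "\<And>x y. x \<in> l2 \<Longrightarrow> y \<in> l2 \<Longrightarrow> l2inner (S y) x = l2inner y (T x)"
  shows "adj T = S"
proof (rule adj_unique[OF T S])
  fix p i
  have "cnj (S (bv p) i) = l2inner (S (bv p)) (bv i)" by (simp add: l2inner_bv_right)
  also have "\<dots> = l2inner (bv p) (T (bv i))" by (rule h) simp_all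
  also have "\<dots> = T (bv i) p" by (simp add: l2inner_bv_left)
  finally show "S (bv p) i = cnj (T (bv i) p)" by (metis complex_cnj_cnj)
qed

lemma adj_adj: fixes T :: "'i op" assumes T: "T \<in> bops" shows "adj (adj T) = T"
  by (rule adj_unique[OF adj_bops[OF T] T]) (simp add: adj_bv[OF T])

lemma adj_comp: fixes S T :: "'i op" assumes S: "S \<in> bops" and T: "T \<in> bops"
  shows "adj (op_comp S T) = op_comp (adj T) (adj S)"
proof (rule adj_unique_inner)
  show "op_comp S T \<in> bops" using S T by simp
  show "op_comp (adj T) (adj S) \<in> bops" using S T by simp
  fix x y :: "'i \<Rightarrow> complex" assume x: "x \<in> l2" and y: "y \<in> l2"
  have "l2inner (adj T (adj S y)) x = l2inner (adj S y) (T x)"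
    by (rule adj_inner[OF T x]) (rule bops_l2[OF adj_bops[OF S] y])
  also have "\<dots> = l2inner y (S (T x))" by (rule adj_inner[OF S bops_l2[OF T x] y])
  finally show "l2inner (op_comp (adj T) (adj S) y) x = l2inner y (op_comp S T x)"
    by (simp add: op_comp_def)
qed

lemma adj_add: fixes S T :: "'i op" assumes S: "S \<in> bops" and T: "T \<in> bops"
  shows "adj (op_add S T) = op_add (adj S) (adj T)"
  by (rule adj_unique) (use S T in \<open>simp_all add: op_add_def adj_bv\<close>)

lemma adj_scale: fixes T :: "'i op" assumes T: "T \<in> bops"
  shows "adj (op_scale c T) = op_scale (cnj c) (adj T)"
  by (rule adj_unique) (use T in \<open>simp_all add: op_scale_def adj_bv\<close>)

lemma adj_diff: fixes S T :: "'i op" assumes S: "S \<in> bops" and T: "T \<in> bops"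
  shows "adj (op_diff S T) = op_diff (adj S) (adj T)"
  by (rule adj_unique) (use S T in \<open>simp_all add: op_diff_def adj_bv\<close>)

lemma idop_bv: "idop (bv i) = bv i" by simp

lemma adj_idop: "adj (idop :: 'i op) = idop"
proof (rule adj_unique)
  fix p i :: 'i
  show "idop (bv p) i = cnj (idop (bv i) p)" by (simp add: idop_l2[OF l2_bv]) (simp add: bv_def)
qed simp_all

lemma comp_idop_right: fixes S :: "'i op" assumes S: "S \<in> bops" shows "op_comp S idop = S"
proof
  fix x show "op_comp S idop x = S x"
    using S bops_out[OF S, of x] bops_zero[OF S] by (cases "x \<in> l2") (simp_all add: op_comp_def idop_def)
qed

lemma comp_idop_left: fixes S :: "'i op" assumes S: "S \<in> bops" shows "op_comp idop S = S"
proof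
  fix x show "op_comp idop S x = S x"
  proof (cases "x \<in> l2")
    case True thus ?thesis using bops_l2[OF S True] by (simp add: op_comp_def)
  next
    case False thus ?thesis using bops_out[OF S False] by (simp add: op_comp_def idop_def)
  qed
qed

lemma comp_assoc: "op_comp (op_comp R S) T = op_comp R (op_comp S T)"
  by (simp add: op_comp_def o_assoc)

lemma op_add_zero_left: "op_add zero_op T = T"
  by (simp add: op_add_def zero_op_def fun_eq_iff)

lemma op_add_zero_right: "op_add T zero_op = T"
  by (simp add: op_add_def zero_op_def fun_eq_iff)

lemma op_add_assoc: "op_add (op_add R S) T = op_add R (op_add S T)"
  by (simp add: op_add_def fun_eq_iff algebra_simps)

lemma op_add_comm: "op_add S T = op_add T S"
  by (simp add: op_add_def fun_eq_iff algebra_simps)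

lemma comp_add_right: "op_comp (op_add S T) R = op_add (op_comp S R) (op_comp T R)"
  by (simp add: op_add_def op_comp_def fun_eq_iff)

lemma comp_add_left: fixes R :: "'i op" assumes R: "R \<in> bops" and S: "S \<in> bops" and T: "T \<in> bops"
  shows "op_comp R (op_add S T) = op_add (op_comp R S) (op_comp R T)"
proof
  fix x :: "'i \<Rightarrow> complex"
  show "op_comp R (op_add S T) x = op_add (op_comp R S) (op_comp R T) x"
  proof (cases "x \<in> l2")
    case True
    show ?thesis unfolding op_comp_def op_add_def o_def
      by (rule bops_add[OF R bops_l2[OF S True] bops_l2[OF T True]])
  next
    case False
    show ?thesis unfolding op_comp_def op_add_def o_def bops_out[OF S False] bops_out[OF T False]
      using bops_zero[OF R] by simp
  qed
qed

lemma comp_scale_right: "op_comp (op_scale c S) R = op_scale c (op_comp S R)"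
  by (simp add: op_scale_def op_comp_def fun_eq_iff)

lemma comp_scale_left: fixes R :: "'i op" assumes R: "R \<in> bops" and S: "S \<in> bops"
  shows "op_comp R (op_scale c S) = op_scale c (op_comp R S)"
proof
  fix x :: "'i \<Rightarrow> complex"
  show "op_comp R (op_scale c S) x = op_scale c (op_comp R S) x"
  proof (cases "x \<in> l2")
    case True
    show ?thesis unfolding op_comp_def op_scale_def o_def
      by (rule bops_scale[OF R bops_l2[OF S True]])
  next
    case False
    show ?thesis unfolding op_comp_def op_scale_def o_def bops_out[OF S False]
      using bops_zero[OF R] by simp
  qed
qed

section \<open>Tensor products\<close>

definition tprod :: "('i \<Rightarrow> complex) \<Rightarrow> ('j \<Rightarrow> complex) \<Rightarrow> ('i \<times> 'j \<Rightarrow> complex)" where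
  "tprod u v = (\<lambda>(i, j). u i * v j)"

definition swp :: "('i \<times> 'j \<Rightarrow> complex) \<Rightarrow> ('j \<times> 'i \<Rightarrow> complex)" where
  "swp x = (\<lambda>(j, i). x (i, j))"

definition tens_row :: "'j op \<Rightarrow> ('i \<times> 'j \<Rightarrow> complex) \<Rightarrow> ('i \<times> 'j \<Rightarrow> complex)" where
  "tens_row T x = (\<lambda>(i, j). T (\<lambda>j'. x (i, j')) j)"

lemma sq_summable_Sigma: fixes x :: "'i \<times> 'j \<Rightarrow> complex"
  assumes x: "x \<in> l2"
  shows "(\<lambda>(i,j). (cmod (x (i,j)))^2) summable_on (Sigma UNIV (\<lambda>_. UNIV))"
proof -
  have e: "(\<lambda>(i,j). (cmod (x (i,j)))^2) = (\<lambda>p. (cmod (x p))^2)" by (auto simp: fun_eq_iff)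
  show ?thesis unfolding e using x by (simp add: l2_def)
qed

lemma row_l2: fixes x :: "'i \<times> 'j \<Rightarrow> complex" assumes x: "x \<in> l2" shows "(\<lambda>j. x (i, j)) \<in> l2"
proof -
  have "(\<lambda>j. (\<lambda>i j. (cmod (x (i,j)))^2) i j) summable_on UNIV"
    by (rule summable_on_SigmaD1[where A=UNIV and B="\<lambda>_. UNIV"]) (use sq_summable_Sigma[OF x] in simp_all)
  thus ?thesis by (simp add: l2_def)
qed

lemma rows_sq: fixes x :: "'i \<times> 'j \<Rightarrow> complex" assumes x: "x \<in> l2"
  shows "(\<lambda>i. (l2norm (\<lambda>j. x (i, j)))^2) summable_on UNIV"
    and "(l2norm x)^2 = (\<Sum>\<^sub>\<infinity>i. (l2norm (\<lambda>j. x (i, j)))^2)"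
proof -
  have s: "(\<lambda>(i,j). (cmod (x (i,j)))^2) summable_on (Sigma UNIV (\<lambda>_. UNIV))" by (rule sq_summable_Sigma[OF x])
  have e: "(\<lambda>i. (l2norm (\<lambda>j. x (i, j)))^2) = (\<lambda>i. \<Sum>\<^sub>\<infinity>j. (cmod (x (i,j)))^2)"
    by (simp add: l2norm_sq)
  show "(\<lambda>i. (l2norm (\<lambda>j. x (i, j)))^2) summable_on UNIV"
    unfolding e using summable_on_Sigma_banach[OF s] by simp
  have "(\<Sum>\<^sub>\<infinity>i. \<Sum>\<^sub>\<infinity>j. (cmod (x (i,j)))^2) = (\<Sum>\<^sub>\<infinity>(i,j)\<in>Sigma UNIV (\<lambda>_. UNIV). (cmod (x (i,j)))^2)"
    using infsum_Sigma'_banach[OF s] by simp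
  also have "\<dots> = (l2norm x)^2"
  proof -
    have e: "(\<lambda>(i,j). (cmod (x (i,j)))^2) = (\<lambda>p. (cmod (x p))^2)" by (auto simp: fun_eq_iff)
    show ?thesis unfolding e by (simp add: l2norm_sq)
  qed
  finally show "(l2norm x)^2 = (\<Sum>\<^sub>\<infinity>i. (l2norm (\<lambda>j. x (i, j)))^2)" unfolding e by simp
qed

lemma l2_from_rows: fixes y :: "'i \<times> 'j \<Rightarrow> complex"
  assumes r: "\<And>i. (\<lambda>j. y (i, j)) \<in> l2" and s: "(\<lambda>i. (l2norm (\<lambda>j. y (i, j)))^2) summable_on UNIV"
  shows "y \<in> l2"
proof -
  have "(\<lambda>p. (cmod (y p))^2) summable_on Sigma UNIV (\<lambda>_. UNIV)"
  proof (rule summable_on_SigmaI[where g="\<lambda>i. (l2norm (\<lambda>j. y (i, j)))^2"])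
    fix i
    have "(\<lambda>j. (cmod (y (i,j)))^2) summable_on UNIV" using r[of i] by (simp add: l2_def)
    thus "((\<lambda>j. (cmod (y (i,j)))^2) has_sum (l2norm (\<lambda>j. y (i, j)))^2) UNIV"
      by (simp add: l2norm_sq)
  qed (use s in simp_all)
  thus ?thesis by (simp add: l2_def)
qed

lemma tens_row_l2: fixes T :: "'j op" and x :: "'i \<times> 'j \<Rightarrow> complex"
  assumes T: "T \<in> bops" and x: "x \<in> l2"
  shows "tens_row T x \<in> l2" and "l2norm (tens_row T x) \<le> opnorm T * l2norm x"
proof -
  define y where "y = tens_row T x"
  have row: "(\<lambda>j. y (i, j)) = T (\<lambda>j. x (i, j))" for i by (simp add: y_def tens_row_def)
  have rl: "(\<lambda>j. y (i, j)) \<in> l2" for i unfolding row by (rule bops_l2[OF T row_l2[OF x]])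
  have le: "(l2norm (\<lambda>j. y (i, j)))^2 \<le> (opnorm T)^2 * (l2norm (\<lambda>j. x (i, j)))^2" for i
  proof -
    have "l2norm (\<lambda>j. y (i, j)) \<le> opnorm T * l2norm (\<lambda>j. x (i, j))"
      unfolding row by (rule opnorm_bound[OF T row_l2[OF x]])
    hence "(l2norm (\<lambda>j. y (i, j)))^2 \<le> (opnorm T * l2norm (\<lambda>j. x (i, j)))^2"
      by (rule power_mono) simp
    thus ?thesis by (simp add: power_mult_distrib)
  qed
  have sx: "(\<lambda>i. (opnorm T)^2 * (l2norm (\<lambda>j. x (i, j)))^2) summable_on UNIV"
    by (rule summable_on_cmult_right[OF rows_sq(1)[OF x]])
  have sy: "(\<lambda>i. (l2norm (\<lambda>j. y (i, j)))^2) summable_on UNIV"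
    by (rule summable_on_comparison_test[OF sx]) (use le in simp_all)
  show yl: "tens_row T x \<in> l2" unfolding y_def[symmetric] by (rule l2_from_rows[OF rl sy])
  have "(l2norm y)^2 = (\<Sum>\<^sub>\<infinity>i. (l2norm (\<lambda>j. y (i, j)))^2)" by (rule rows_sq(2)[OF yl[folded y_def]])
  also have "\<dots> \<le> (\<Sum>\<^sub>\<infinity>i. (opnorm T)^2 * (l2norm (\<lambda>j. x (i, j)))^2)"
    by (rule infsum_mono[OF sy sx le])
  also have "\<dots> = (opnorm T)^2 * (\<Sum>\<^sub>\<infinity>i. (l2norm (\<lambda>j. x (i, j)))^2)"
    by (rule infsum_cmult_right')
  also have "\<dots> = (opnorm T * l2norm x)^2" using rows_sq(2)[OF x] by (simp add: power_mult_distrib)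
  finally have "(l2norm y)^2 \<le> (opnorm T * l2norm x)^2" .
  thus "l2norm (tens_row T x) \<le> opnorm T * l2norm x" unfolding y_def[symmetric]
    by (rule power2_le_imp_le) (simp add: opnorm_nonneg[OF T])
qed

lemma swp_l2: fixes x :: "'i \<times> 'j \<Rightarrow> complex" assumes x: "x \<in> l2"
  shows "swp x \<in> l2" and "l2norm (swp x) = l2norm x"
proof -
  have b: "bij_betw prod.swap (UNIV :: ('j \<times> 'i) set) UNIV" by (simp add: bij_betw_def)
  have e: "(\<lambda>p. (cmod (swp x p))^2) = (\<lambda>p. (\<lambda>q. (cmod (x q))^2) (prod.swap p))"
    by (simp add: swp_def fun_eq_iff)
  show "swp x \<in> l2" using x unfolding l2_def mem_Collect_eq e
    by (subst summable_on_reindex_bij_betw[OF b])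
  show "l2norm (swp x) = l2norm x" unfolding l2norm_def e
    by (subst infsum_reindex_bij_betw[OF b]) simp
qed

lemma swp_swp[simp]: "swp (swp x) = x" by (simp add: swp_def fun_eq_iff)

lemma op_tensor_eq: "x \<in> l2 \<Longrightarrow> op_tensor S T x = swp (tens_row S (swp (tens_row T x)))"
  by (simp add: op_tensor_def swp_def tens_row_def fun_eq_iff Let_def)

lemma tens_row_add: fixes T :: "'j op" and x y :: "'i \<times> 'j \<Rightarrow> complex"
  assumes T: "T \<in> bops" and x: "x \<in> l2" and y: "y \<in> l2"
  shows "tens_row T (\<lambda>p. x p + y p) = (\<lambda>p. tens_row T x p + tens_row T y p)"
proof -
  have "T (\<lambda>j'. x (i, j') + y (i, j')) = (\<lambda>j. T (\<lambda>j'. x (i, j')) j + T (\<lambda>j'. y (i, j')) j)" for i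
    by (rule bops_add[OF T row_l2[OF x] row_l2[OF y]])
  thus ?thesis by (simp add: tens_row_def fun_eq_iff)
qed

lemma tens_row_scale: fixes T :: "'j op" and x :: "'i \<times> 'j \<Rightarrow> complex"
  assumes T: "T \<in> bops" and x: "x \<in> l2"
  shows "tens_row T (\<lambda>p. c * x p) = (\<lambda>p. c * tens_row T x p)"
proof -
  have "T (\<lambda>j'. c * x (i, j')) = (\<lambda>j. c * T (\<lambda>j'. x (i, j')) j)" for i
    by (rule bops_scale[OF T row_l2[OF x]])
  thus ?thesis by (simp add: tens_row_def fun_eq_iff)
qed

lemma swp_add: "swp (\<lambda>p. x p + y p) = (\<lambda>p. swp x p + swp y p)" by (simp add: swp_def fun_eq_iff)
lemma swp_scale: "swp (\<lambda>p. c * x p) = (\<lambda>p. c * swp x p)" by (simp add: swp_def fun_eq_iff)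

lemma op_tensor_l2: fixes S :: "'i op" and T :: "'j op" and x :: "'i \<times> 'j \<Rightarrow> complex"
  assumes S: "S \<in> bops" and T: "T \<in> bops" and x: "x \<in> l2"
  shows "op_tensor S T x \<in> l2" and "l2norm (op_tensor S T x) \<le> opnorm S * opnorm T * l2norm x"
proof -
  have a: "tens_row T x \<in> l2" by (rule tens_row_l2(1)[OF T x])
  have b: "swp (tens_row T x) \<in> l2" by (rule swp_l2(1)[OF a])
  have c: "tens_row S (swp (tens_row T x)) \<in> l2" by (rule tens_row_l2(1)[OF S b])
  show "op_tensor S T x \<in> l2" unfolding op_tensor_eq[OF x] by (rule swp_l2(1)[OF c])
  have "l2norm (op_tensor S T x) = l2norm (tens_row S (swp (tens_row T x)))"
    unfolding op_tensor_eq[OF x] by (rule swp_l2(2)[OF c])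
  also have "\<dots> \<le> opnorm S * l2norm (swp (tens_row T x))" by (rule tens_row_l2(2)[OF S b])
  also have "\<dots> = opnorm S * l2norm (tens_row T x)" by (simp add: swp_l2(2)[OF a])
  also have "\<dots> \<le> opnorm S * (opnorm T * l2norm x)"
    by (rule mult_left_mono[OF tens_row_l2(2)[OF T x] opnorm_nonneg[OF S]])
  finally show "l2norm (op_tensor S T x) \<le> opnorm S * opnorm T * l2norm x" by (simp add: algebra_simps)
qed

lemma op_tensor_bops[simp]: fixes S :: "'i op" and T :: "'j op"
  assumes S: "S \<in> bops" and T: "T \<in> bops"
  shows "op_tensor S T \<in> bops"
proof (rule bopsI[where K="opnorm S * opnorm T"])
  fix x :: "'i \<times> 'j \<Rightarrow> complex" assume x: "x \<in> l2"
  show "op_tensor S T x \<in> l2" by (rule op_tensor_l2(1)[OF S T x])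
  show "l2norm (op_tensor S T x) \<le> opnorm S * opnorm T * l2norm x" by (rule op_tensor_l2(2)[OF S T x])
next
  fix x y :: "'i \<times> 'j \<Rightarrow> complex" assume x: "x \<in> l2" and y: "y \<in> l2"
  have xy: "(\<lambda>p. x p + y p) \<in> l2" by (rule l2_add[OF x y])
  have a: "tens_row T x \<in> l2" "tens_row T y \<in> l2" using tens_row_l2(1)[OF T] x y by auto
  have b: "swp (tens_row T x) \<in> l2" "swp (tens_row T y) \<in> l2" using swp_l2(1) a by auto
  show "op_tensor S T (\<lambda>i. x i + y i) = (\<lambda>i. op_tensor S T x i + op_tensor S T y i)"
    unfolding op_tensor_eq[OF xy] op_tensor_eq[OF x] op_tensor_eq[OF y]
      tens_row_add[OF T x y] swp_add tens_row_add[OF S b] ..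
next
  fix x :: "'i \<times> 'j \<Rightarrow> complex" and c assume x: "x \<in> l2"
  have xc: "(\<lambda>p. c * x p) \<in> l2" by (rule l2_scale[OF x])
  have a: "tens_row T x \<in> l2" using tens_row_l2(1)[OF T] x by auto
  have b: "swp (tens_row T x) \<in> l2" using swp_l2(1) a by auto
  show "op_tensor S T (\<lambda>i. c * x i) = (\<lambda>i. c * op_tensor S T x i)"
    unfolding op_tensor_eq[OF xc] op_tensor_eq[OF x]
      tens_row_scale[OF T x] swp_scale tens_row_scale[OF S b] ..
next
  fix x :: "'i \<times> 'j \<Rightarrow> complex" assume x: "x \<notin> l2"
  show "op_tensor S T x = (\<lambda>i. 0)" using x by (simp add: op_tensor_def)
qed

lemma opnorm_tensor: fixes S :: "'i op" and T :: "'j op"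
  assumes S: "S \<in> bops" and T: "T \<in> bops"
  shows "opnorm (op_tensor S T) \<le> opnorm S * opnorm T"
  by (rule opnorm_le) (use op_tensor_l2(2)[OF S T] opnorm_nonneg[OF S] opnorm_nonneg[OF T] in simp_all)

lemma tprod_l2: fixes u :: "'i \<Rightarrow> complex" and v :: "'j \<Rightarrow> complex"
  assumes u: "u \<in> l2" and v: "v \<in> l2"
  shows "tprod u v \<in> l2"
proof (rule l2_from_rows)
  fix i show "(\<lambda>j. tprod u v (i, j)) \<in> l2" unfolding tprod_def using l2_scale[OF v, of "u i"] by simp
next
  have e: "(\<lambda>i. (l2norm (\<lambda>j. tprod u v (i, j)))^2) = (\<lambda>i. (l2norm v)^2 * (cmod (u i))^2)"
  proof
    fix i
    have "l2norm (\<lambda>j. u i * v j) = cmod (u i) * l2norm v" by (rule l2norm_scale[OF v])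
    thus "(l2norm (\<lambda>j. tprod u v (i, j)))^2 = (l2norm v)^2 * (cmod (u i))^2"
      by (simp add: tprod_def power_mult_distrib)
  qed
  show "(\<lambda>i. (l2norm (\<lambda>j. tprod u v (i, j)))^2) summable_on UNIV"
    unfolding e using u by (intro summable_on_cmult_right) (simp add: l2_def)
qed

lemma op_tensor_tprod: fixes S :: "'i op" and T :: "'j op"
  assumes S: "S \<in> bops" and T: "T \<in> bops" and u: "u \<in> l2" and v: "v \<in> l2"
  shows "op_tensor S T (tprod u v) = tprod (S u) (T v)"
proof -
  have r1: "tens_row T (tprod u v) = (\<lambda>(i, j). u i * T v j)"
  proof -
    have "T (\<lambda>j'. u i * v j') = (\<lambda>j. u i * T v j)" for i by (rule bops_scale[OF T v])
    thus ?thesis by (simp add: tens_row_def tprod_def fun_eq_iff)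
  qed
  have r2: "tens_row S (swp (\<lambda>(i, j). u i * T v j)) = (\<lambda>(j, i). T v j * S u i)"
  proof -
    have "S (\<lambda>i'. T v j * u i') = (\<lambda>i. T v j * S u i)" for j by (rule bops_scale[OF S u])
    thus ?thesis by (simp add: tens_row_def swp_def fun_eq_iff mult.commute)
  qed
  show ?thesis unfolding op_tensor_eq[OF tprod_l2[OF u v]] r1 r2
    by (simp add: swp_def tprod_def fun_eq_iff mult.commute)
qed

lemma bv_pair: "bv (i, j) = tprod (bv i) (bv j)"
  by (simp add: bv_def tprod_def fun_eq_iff)

lemma op_tensor_bv: fixes S :: "'i op" and T :: "'j op"
  assumes S: "S \<in> bops" and T: "T \<in> bops"
  shows "op_tensor S T (bv (i, j)) = tprod (S (bv i)) (T (bv j))"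
  unfolding bv_pair by (rule op_tensor_tprod[OF S T l2_bv l2_bv])

lemma tensor_comp: fixes S1 S2 :: "'i op" and T1 T2 :: "'j op"
  assumes "S1 \<in> bops" "S2 \<in> bops" "T1 \<in> bops" "T2 \<in> bops"
  shows "op_comp (op_tensor S1 T1) (op_tensor S2 T2) = op_tensor (op_comp S1 S2) (op_comp T1 T2)"
proof (rule bops_ext)
  fix p :: "'i \<times> 'j"
  obtain i j where p: "p = (i, j)" by (cases p)
  have "op_comp (op_tensor S1 T1) (op_tensor S2 T2) (bv (i, j)) = op_tensor S1 T1 (op_tensor S2 T2 (bv (i, j)))"
    by (simp add: op_comp_def)
  also have "\<dots> = op_tensor S1 T1 (tprod (S2 (bv i)) (T2 (bv j)))" by (simp only: op_tensor_bv[OF assms(2,4)])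
  also have "\<dots> = tprod (S1 (S2 (bv i))) (T1 (T2 (bv j)))"
    by (rule op_tensor_tprod[OF assms(1,3) bops_l2[OF assms(2) l2_bv] bops_l2[OF assms(4) l2_bv]])
  also have "\<dots> = op_tensor (op_comp S1 S2) (op_comp T1 T2) (bv (i, j))"
    by (simp only: op_tensor_bv[OF op_comp_bops[OF assms(1,2)] op_comp_bops[OF assms(3,4)]]) (simp add: op_comp_def)
  finally show "op_comp (op_tensor S1 T1) (op_tensor S2 T2) (bv p) = op_tensor (op_comp S1 S2) (op_comp T1 T2) (bv p)"
    unfolding p .
qed (use assms in simp_all)

lemma tensor_add_right: fixes S :: "'i op" and T1 T2 :: "'j op"
  assumes "S \<in> bops" "T1 \<in> bops" "T2 \<in> bops"
  shows "op_tensor S (op_add T1 T2) = op_add (op_tensor S T1) (op_tensor S T2)"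
proof (rule bops_ext)
  fix p :: "'i \<times> 'j"
  obtain i j where p: "p = (i, j)" by (cases p)
  show "op_tensor S (op_add T1 T2) (bv p) = op_add (op_tensor S T1) (op_tensor S T2) (bv p)"
    unfolding p op_add_def op_tensor_bv[OF assms(1,2)] op_tensor_bv[OF assms(1,3)] op_tensor_bv[OF assms(1) op_add_bops[OF assms(2,3)]]
    by (simp add: tprod_def op_add_def fun_eq_iff algebra_simps)
qed (use assms in simp_all)

lemma tensor_add_left: fixes S1 S2 :: "'i op" and T :: "'j op"
  assumes "S1 \<in> bops" "S2 \<in> bops" "T \<in> bops"
  shows "op_tensor (op_add S1 S2) T = op_add (op_tensor S1 T) (op_tensor S2 T)"
proof (rule bops_ext)
  fix p :: "'i \<times> 'j"
  obtain i j where p: "p = (i, j)" by (cases p)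
  show "op_tensor (op_add S1 S2) T (bv p) = op_add (op_tensor S1 T) (op_tensor S2 T) (bv p)"
    unfolding p op_add_def op_tensor_bv[OF assms(1,3)] op_tensor_bv[OF assms(2,3)] op_tensor_bv[OF op_add_bops[OF assms(1,2)] assms(3)]
    by (simp add: tprod_def op_add_def fun_eq_iff algebra_simps)
qed (use assms in simp_all)

lemma tensor_scale_left: fixes S :: "'i op" and T :: "'j op"
  assumes "S \<in> bops" "T \<in> bops"
  shows "op_tensor (op_scale c S) T = op_scale c (op_tensor S T)"
proof (rule bops_ext)
  fix p :: "'i \<times> 'j"
  obtain i j where p: "p = (i, j)" by (cases p)
  show "op_tensor (op_scale c S) T (bv p) = op_scale c (op_tensor S T) (bv p)"
    unfolding p op_scale_def op_tensor_bv[OF assms] op_tensor_bv[OF op_scale_bops[OF assms(1)] assms(2)]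
    by (simp add: tprod_def op_scale_def fun_eq_iff algebra_simps)
qed (use assms in simp_all)

lemma tensor_scale_right: fixes S :: "'i op" and T :: "'j op"
  assumes "S \<in> bops" "T \<in> bops"
  shows "op_tensor S (op_scale c T) = op_scale c (op_tensor S T)"
proof (rule bops_ext)
  fix p :: "'i \<times> 'j"
  obtain i j where p: "p = (i, j)" by (cases p)
  show "op_tensor S (op_scale c T) (bv p) = op_scale c (op_tensor S T) (bv p)"
    unfolding p op_scale_def op_tensor_bv[OF assms] op_tensor_bv[OF assms(1) op_scale_bops[OF assms(2)]]
    by (simp add: tprod_def op_scale_def fun_eq_iff algebra_simps)
qed (use assms in simp_all)

lemma tensor_adj: fixes S :: "'i op" and T :: "'j op"
  assumes "S \<in> bops" "T \<in> bops"
  shows "adj (op_tensor S T) = op_tensor (adj S) (adj T)"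
proof (rule adj_unique)
  fix p q :: "'i \<times> 'j"
  obtain i j where p: "p = (i, j)" by (cases p)
  obtain k l where q: "q = (k, l)" by (cases q)
  show "op_tensor (adj S) (adj T) (bv p) q = cnj (op_tensor S T (bv q) p)"
    unfolding p q op_tensor_bv[OF assms] op_tensor_bv[OF adj_bops[OF assms(1)] adj_bops[OF assms(2)]]
    by (simp add: tprod_def adj_bv[OF assms(1)] adj_bv[OF assms(2)])
qed (use assms in simp_all)

lemma tensor_idop: "op_tensor (idop :: 'i op) (idop :: 'j op) = idop"
proof (rule bops_ext)
  fix p :: "'i \<times> 'j"
  obtain i j where p: "p = (i, j)" by (cases p)
  show "op_tensor (idop :: 'i op) (idop :: 'j op) (bv p) = idop (bv p)"
    unfolding p op_tensor_bv[OF idop_bops idop_bops] by (simp add: bv_pair idop_l2[OF tprod_l2[OF l2_bv l2_bv]])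
qed simp_all


section \<open>Monomial operators\<close>

definition mono_op :: "'i op \<Rightarrow> ('i \<Rightarrow> complex) \<Rightarrow> ('i \<Rightarrow> 'i) \<Rightarrow> bool" where
  "mono_op X c \<sigma> \<longleftrightarrow> X \<in> bops \<and> (\<forall>i. X (bv i) = (\<lambda>j. if j = \<sigma> i then c i else 0))"

lemma mono_bops: "mono_op X c \<sigma> \<Longrightarrow> X \<in> bops" by (simp add: mono_op_def)
lemma mono_bv: "mono_op X c \<sigma> \<Longrightarrow> X (bv i) = (\<lambda>j. if j = \<sigma> i then c i else 0)" by (simp add: mono_op_def)

lemma mono_eq: assumes X: "mono_op X c \<sigma>" and Y: "mono_op Y d \<tau>"
  and cd: "\<And>i. c i = d i" and st: "\<And>i. c i \<noteq> 0 \<Longrightarrow> \<sigma> i = \<tau> i"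
  shows "X = Y"
proof (rule bops_ext[OF mono_bops[OF X] mono_bops[OF Y]])
  fix i
  show "X (bv i) = Y (bv i)" unfolding mono_bv[OF X] mono_bv[OF Y]
    using cd[of i] st[of i] by (cases "c i = 0") auto
qed

lemma ifbv: "(\<lambda>j. if j = k then a else 0) = (\<lambda>j. a * bv k j)" by (simp add: bv_def fun_eq_iff)

lemma mono_comp: assumes X: "mono_op X c \<sigma>" and Y: "mono_op Y d \<tau>"
  shows "mono_op (op_comp X Y) (\<lambda>i. d i * c (\<tau> i)) (\<lambda>i. \<sigma> (\<tau> i))"
  unfolding mono_op_def
proof (intro conjI allI)
  show "op_comp X Y \<in> bops" using mono_bops[OF X] mono_bops[OF Y] by simp
  fix i
  have "op_comp X Y (bv i) = X (\<lambda>j. d i * bv (\<tau> i) j)" by (simp add: op_comp_def mono_bv[OF Y] ifbv)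
  also have "\<dots> = (\<lambda>j. d i * X (bv (\<tau> i)) j)" by (rule bops_scale[OF mono_bops[OF X] l2_bv])
  also have "\<dots> = (\<lambda>j. if j = \<sigma> (\<tau> i) then d i * c (\<tau> i) else 0)" by (simp add: mono_bv[OF X] fun_eq_iff)
  finally show "op_comp X Y (bv i) = (\<lambda>j. if j = \<sigma> (\<tau> i) then d i * c (\<tau> i) else 0)" .
qed

lemma mono_adj: assumes X: "mono_op X c \<sigma>" and inv1: "\<And>i. \<sigma>' (\<sigma> i) = i" and inv2: "\<And>p. \<sigma> (\<sigma>' p) = p"
  shows "mono_op (adj X) (\<lambda>p. cnj (c (\<sigma>' p))) \<sigma>'"
  unfolding mono_op_def
proof (intro conjI allI)
  show "adj X \<in> bops" using mono_bops[OF X] by simp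
  fix p
  show "adj X (bv p) = (\<lambda>j. if j = \<sigma>' p then cnj (c (\<sigma>' p)) else 0)"
  proof
    fix i
    have "p = \<sigma> i \<longleftrightarrow> i = \<sigma>' p" using inv1 inv2 by metis
    thus "adj X (bv p) i = (if i = \<sigma>' p then cnj (c (\<sigma>' p)) else 0)"
      by (auto simp: adj_bv[OF mono_bops[OF X]] mono_bv[OF X])
  qed
qed

lemma mono_add: assumes X: "mono_op X c \<sigma>" and Y: "mono_op Y d \<tau>" and dis: "\<And>i. c i = 0 \<or> d i = 0"
  shows "mono_op (op_add X Y) (\<lambda>i. c i + d i) (\<lambda>i. if c i \<noteq> 0 then \<sigma> i else \<tau> i)"
  unfolding mono_op_def
proof (intro conjI allI)
  show "op_add X Y \<in> bops" using mono_bops[OF X] mono_bops[OF Y] by simp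
  fix i
  show "op_add X Y (bv i) = (\<lambda>j. if j = (if c i \<noteq> 0 then \<sigma> i else \<tau> i) then c i + d i else 0)"
    using dis[of i] by (auto simp: op_add_def mono_bv[OF X] mono_bv[OF Y] fun_eq_iff)
qed

lemma mono_add_same: assumes X: "mono_op X c \<sigma>" and Y: "mono_op Y d \<sigma>"
  shows "mono_op (op_add X Y) (\<lambda>i. c i + d i) \<sigma>"
  unfolding mono_op_def
proof (intro conjI allI)
  show "op_add X Y \<in> bops" using mono_bops[OF X] mono_bops[OF Y] by simp
  fix i
  show "op_add X Y (bv i) = (\<lambda>j. if j = \<sigma> i then c i + d i else 0)"
    by (auto simp: op_add_def mono_bv[OF X] mono_bv[OF Y] fun_eq_iff)
qed

lemma mono_scale: assumes X: "mono_op X c \<sigma>"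
  shows "mono_op (op_scale a X) (\<lambda>i. a * c i) \<sigma>"
  unfolding mono_op_def
proof (intro conjI allI)
  show "op_scale a X \<in> bops" using mono_bops[OF X] by simp
  fix i
  show "op_scale a X (bv i) = (\<lambda>j. if j = \<sigma> i then a * c i else 0)"
    by (auto simp: op_scale_def mono_bv[OF X] fun_eq_iff)
qed

lemma mono_tensor: fixes S :: "'i op" and T :: "'j op"
  assumes S: "mono_op S c \<sigma>" and T: "mono_op T d \<tau>"
  shows "mono_op (op_tensor S T) (\<lambda>(i, j). c i * d j) (\<lambda>(i, j). (\<sigma> i, \<tau> j))"
  unfolding mono_op_def
proof (intro conjI allI)
  show "op_tensor S T \<in> bops" using mono_bops[OF S] mono_bops[OF T] by simp
  fix p :: "'i \<times> 'j"
  obtain i j where p: "p = (i, j)" by (cases p)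
  show "op_tensor S T (bv p) = (\<lambda>q. if q = (\<lambda>(i, j). (\<sigma> i, \<tau> j)) p then (\<lambda>(i, j). c i * d j) p else 0)"
    unfolding p op_tensor_bv[OF mono_bops[OF S] mono_bops[OF T]]
    by (auto simp: tprod_def mono_bv[OF S] mono_bv[OF T] fun_eq_iff)
qed

lemma mono_idop: "mono_op idop (\<lambda>_. 1) (\<lambda>i. i)"
  unfolding mono_op_def by (simp add: idop_l2[OF l2_bv]) (simp add: bv_def fun_eq_iff)

lemma mono_zero: "mono_op zero_op (\<lambda>_. 0) (\<lambda>i. i)"
  unfolding mono_op_def by (simp add: zero_op_def)

definition gbop :: "('i \<Rightarrow> complex) \<Rightarrow> ('i \<Rightarrow> 'i) \<Rightarrow> 'i op" where
  "gbop w s x = (if x \<in> l2 then (\<lambda>j. \<Sum>\<^sub>\<infinity>i\<in>{i. s i = j}. w i * x i) else (\<lambda>j. 0))"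

lemma basis_op_gbop: "basis_op = gbop" by (simp add: fun_eq_iff basis_op_def gbop_def)

lemma mono_gbop:
  fixes w :: "'i \<Rightarrow> complex" and s s' :: "'i \<Rightarrow> 'i"
  assumes inv1: "\<And>i. s' (s i) = i" and inv2: "\<And>j. s (s' j) = j" and B: "\<And>i. cmod (w i) \<le> B"
  shows "mono_op (gbop w s) w s" and "opnorm (gbop w s) \<le> B"
proof -
  have set: "{i. s i = j} = {s' j}" for j using inv1 inv2 by auto
  have form: "gbop w s x = (\<lambda>j. w (s' j) * x (s' j))" if x: "x \<in> l2" for x
    using x by (simp add: gbop_def set)
  have b: "bij_betw s' UNIV UNIV" by (rule bij_betw_byWitness[where f'=s]) (use inv1 inv2 in auto)
  have B0: "0 \<le> B" using B[of undefined] norm_ge_zero order_trans by blast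
  have l2: "(\<lambda>j. w (s' j) * x (s' j)) \<in> l2" and nb: "l2norm (\<lambda>j. w (s' j) * x (s' j)) \<le> B * l2norm x"
    if x: "x \<in> l2" for x
  proof -
    have sx: "(\<lambda>j. (cmod (x (s' j)))^2) summable_on UNIV"
      using x unfolding l2_def mem_Collect_eq by (subst summable_on_reindex_bij_betw[OF b])
    have ix: "(\<Sum>\<^sub>\<infinity>j. (cmod (x (s' j)))^2) = (\<Sum>\<^sub>\<infinity>i. (cmod (x i))^2)"
      by (rule infsum_reindex_bij_betw[OF b])
    have le: "(cmod (w (s' j) * x (s' j)))^2 \<le> B^2 * (cmod (x (s' j)))^2" for j
    proof -
      have "cmod (w (s' j) * x (s' j)) \<le> B * cmod (x (s' j))"
        by (simp add: norm_mult mult_right_mono B)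
      hence "(cmod (w (s' j) * x (s' j)))^2 \<le> (B * cmod (x (s' j)))^2" by (rule power_mono) simp
      thus ?thesis by (simp add: power_mult_distrib)
    qed
    have sB: "(\<lambda>j. B^2 * (cmod (x (s' j)))^2) summable_on UNIV" by (rule summable_on_cmult_right[OF sx])
    have sw: "(\<lambda>j. (cmod (w (s' j) * x (s' j)))^2) summable_on UNIV"
      by (rule summable_on_comparison_test[OF sB]) (use le in simp_all)
    thus "(\<lambda>j. w (s' j) * x (s' j)) \<in> l2" by (simp add: l2_def)
    have "(l2norm (\<lambda>j. w (s' j) * x (s' j)))^2 \<le> (\<Sum>\<^sub>\<infinity>j. B^2 * (cmod (x (s' j)))^2)"
      unfolding l2norm_sq by (rule infsum_mono[OF sw sB le])
    also have "\<dots> = B^2 * (l2norm x)^2" by (simp add: infsum_cmult_right' ix l2norm_sq)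
    also have "\<dots> = (B * l2norm x)^2" by (simp add: power_mult_distrib)
    finally show "l2norm (\<lambda>j. w (s' j) * x (s' j)) \<le> B * l2norm x"
      by (rule power2_le_imp_le) (simp add: B0)
  qed
  have bo: "gbop w s \<in> bops"
  proof (rule bopsI[where K=B])
    fix x :: "'i \<Rightarrow> complex" assume x: "x \<in> l2"
    show "gbop w s x \<in> l2" unfolding form[OF x] by (rule l2[OF x])
    show "l2norm (gbop w s x) \<le> B * l2norm x" unfolding form[OF x] by (rule nb[OF x])
  next
    fix x y :: "'i \<Rightarrow> complex" assume x: "x \<in> l2" and y: "y \<in> l2"
    show "gbop w s (\<lambda>i. x i + y i) = (\<lambda>i. gbop w s x i + gbop w s y i)"
      unfolding form[OF x] form[OF y] form[OF l2_add[OF x y]] by (simp add: fun_eq_iff algebra_simps)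
  next
    fix x :: "'i \<Rightarrow> complex" and c assume x: "x \<in> l2"
    show "gbop w s (\<lambda>i. c * x i) = (\<lambda>i. c * gbop w s x i)"
      unfolding form[OF x] form[OF l2_scale[OF x]] by (simp add: fun_eq_iff algebra_simps)
  next
    fix x :: "'i \<Rightarrow> complex" assume x: "x \<notin> l2"
    show "gbop w s x = (\<lambda>i. 0)" using x by (simp add: gbop_def)
  qed
  show "opnorm (gbop w s) \<le> B"
    by (rule opnorm_le) (use form nb B0 in simp_all)
  show "mono_op (gbop w s) w s" unfolding mono_op_def
  proof (intro conjI allI bo)
    fix i
    show "gbop w s (bv i) = (\<lambda>j. if j = s i then w i else 0)"
      unfolding form[OF l2_bv] using inv1 inv2 by (auto simp: bv_def fun_eq_iff)
  qed
qed

lemma mono_basis_op: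
  assumes "\<And>i. s' (s i) = i" and "\<And>j. s (s' j) = j" and "\<And>i. cmod (w i) \<le> B"
  shows "mono_op (basis_op w s) w s" and "opnorm (basis_op w s) \<le> B"
  unfolding basis_op_gbop by (rule mono_gbop[OF assms])+


section \<open>Norm closures\<close>

lemma clos_bops: "op_closure A \<subseteq> bops" by (auto simp: op_closure_def)

lemma clos_sub: assumes "A \<subseteq> bops" shows "A \<subseteq> op_closure A"
  using assms by (auto simp: op_closure_def intro!: bexI)

lemma clos_mono: "A \<subseteq> B \<Longrightarrow> op_closure A \<subseteq> op_closure B"
  by (auto simp: op_closure_def) (meson subsetD)

lemma opnorm_diff_trans: fixes R S T :: "'i op"
  assumes "R \<in> bops" "S \<in> bops" "T \<in> bops"
  shows "opnorm (op_diff T R) \<le> opnorm (op_diff T S) + opnorm (op_diff S R)"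
proof -
  have "op_diff T R = op_add (op_diff T S) (op_diff S R)" by (simp add: op_diff_def op_add_def fun_eq_iff)
  thus ?thesis using opnorm_add[of "op_diff T S" "op_diff S R"] assms by simp
qed

lemma opnorm_diff_sym: "opnorm (op_diff S T) = opnorm (op_diff T S)"
proof -
  have "op_diff T S x = (\<lambda>i. - op_diff S T x i)" for x by (simp add: op_diff_def)
  hence "{l2norm (op_diff T S x) |x. x \<in> l2 \<and> l2norm x \<le> 1} = {l2norm (op_diff S T x) |x. x \<in> l2 \<and> l2norm x \<le> 1}"
    unfolding l2norm_def by (simp add: norm_minus_commute)
  thus ?thesis unfolding opnorm_def by simp
qed

lemma closI: assumes "T \<in> bops" "\<And>e. e > 0 \<Longrightarrow> \<exists>R\<in>A. opnorm (op_diff T R) < e" shows "T \<in> op_closure A"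
  using assms by (simp add: op_closure_def)

lemma closD: assumes "T \<in> op_closure A" "e > 0" obtains R where "R \<in> A" "opnorm (op_diff T R) < e"
  using assms by (auto simp: op_closure_def)

lemma clos_idem: assumes A: "A \<subseteq> bops" shows "op_closure (op_closure A) = op_closure A"
proof
  show "op_closure A \<subseteq> op_closure (op_closure A)" by (rule clos_sub[OF clos_bops])
  show "op_closure (op_closure A) \<subseteq> op_closure A"
  proof
    fix T assume T: "T \<in> op_closure (op_closure A)"
    show "T \<in> op_closure A"
    proof (rule closI)
      show "T \<in> bops" using T clos_bops by blast
      fix e :: real assume e: "e > 0"
      obtain R where R: "R \<in> op_closure A" "opnorm (op_diff T R) < e/2" using closD[OF T, of "e/2"] e by auto
      obtain R' where R': "R' \<in> A" "opnorm (op_diff R R') < e/2" using closD[OF R(1), of "e/2"] e by auto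
      have "opnorm (op_diff T R') \<le> opnorm (op_diff T R) + opnorm (op_diff R R')"
        by (rule opnorm_diff_trans) (use R R' A clos_bops \<open>T \<in> bops\<close> in auto)
      thus "\<exists>R\<in>A. opnorm (op_diff T R) < e" using R R' by (intro bexI[of _ R']) auto
    qed
  qed
qed

lemma clos_add: assumes A: "A \<subseteq> bops" and cl: "\<And>S T. S \<in> A \<Longrightarrow> T \<in> A \<Longrightarrow> op_add S T \<in> A"
  and S: "S \<in> op_closure A" and T: "T \<in> op_closure A"
  shows "op_add S T \<in> op_closure A"
proof (rule closI)
  have Sb: "S \<in> bops" and Tb: "T \<in> bops" using S T clos_bops by auto
  show "op_add S T \<in> bops" using Sb Tb by simp
  fix e :: real assume e: "e > 0"
  obtain R1 where R1: "R1 \<in> A" "opnorm (op_diff S R1) < e/2" using closD[OF S, of "e/2"] e by auto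
  obtain R2 where R2: "R2 \<in> A" "opnorm (op_diff T R2) < e/2" using closD[OF T, of "e/2"] e by auto
  have "op_diff (op_add S T) (op_add R1 R2) = op_add (op_diff S R1) (op_diff T R2)"
    by (simp add: op_diff_def op_add_def fun_eq_iff)
  moreover have "R1 \<in> bops" "R2 \<in> bops" using R1 R2 A by blast+
  ultimately have "opnorm (op_diff (op_add S T) (op_add R1 R2)) \<le> opnorm (op_diff S R1) + opnorm (op_diff T R2)"
    using opnorm_add[of "op_diff S R1" "op_diff T R2"] Sb Tb by simp
  thus "\<exists>R\<in>A. opnorm (op_diff (op_add S T) R) < e" using R1 R2 cl by (intro bexI[of _ "op_add R1 R2"]) auto
qed

lemma clos_scale: assumes A: "A \<subseteq> bops" and cl: "\<And>T. T \<in> A \<Longrightarrow> op_scale c T \<in> A"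
  and T: "T \<in> op_closure A"
  shows "op_scale c T \<in> op_closure A"
proof (rule closI)
  have Tb: "T \<in> bops" using T clos_bops by auto
  show "op_scale c T \<in> bops" using Tb by simp
  fix e :: real assume e: "e > 0"
  have cp: "cmod c + 1 > 0" by (smt (verit) norm_ge_zero)
  have e': "e / (cmod c + 1) > 0" using e cp by (rule divide_pos_pos)
  obtain R where R: "R \<in> A" "opnorm (op_diff T R) < e / (cmod c + 1)" using closD[OF T e'] by auto
  have "op_diff (op_scale c T) (op_scale c R) = op_scale c (op_diff T R)"
    by (simp add: op_diff_def op_scale_def fun_eq_iff algebra_simps)
  hence "opnorm (op_diff (op_scale c T) (op_scale c R)) \<le> cmod c * opnorm (op_diff T R)"
    using opnorm_scale[of "op_diff T R" c] Tb R A by auto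
  also have "\<dots> \<le> (cmod c + 1) * opnorm (op_diff T R)"
    using opnorm_nonneg[of "op_diff T R"] Tb R A by (intro mult_right_mono) auto
  also have "\<dots> < (cmod c + 1) * (e / (cmod c + 1))"
    using R(2) cp by (intro mult_strict_left_mono) auto
  also have "\<dots> = e" using cp by simp
  finally show "\<exists>R\<in>A. opnorm (op_diff (op_scale c T) R) < e" using R cl by (intro bexI[of _ "op_scale c R"]) auto
qed

lemma clos_adj: assumes A: "A \<subseteq> bops" and cl: "\<And>T. T \<in> A \<Longrightarrow> adj T \<in> A"
  and T: "T \<in> op_closure A"
  shows "adj T \<in> op_closure A"
proof (rule closI)
  have Tb: "T \<in> bops" using T clos_bops by auto
  show "adj T \<in> bops" using Tb by simp
  fix e :: real assume e: "e > 0"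
  obtain R where R: "R \<in> A" "opnorm (op_diff T R) < e" using closD[OF T e] by auto
  have Rb: "R \<in> bops" using R A by auto
  have "opnorm (op_diff (adj T) (adj R)) = opnorm (adj (op_diff T R))" by (simp add: adj_diff[OF Tb Rb])
  also have "\<dots> \<le> opnorm (op_diff T R)" by (rule adj_opnorm) (simp add: Tb Rb)
  finally show "\<exists>R\<in>A. opnorm (op_diff (adj T) R) < e" using R cl by (intro bexI[of _ "adj R"]) auto
qed

lemma comp_diff_left: fixes R :: "'i op" assumes R: "R \<in> bops" and S: "S \<in> bops" and T: "T \<in> bops"
  shows "op_comp R (op_diff S T) = op_diff (op_comp R S) (op_comp R T)"
  unfolding op_diff_alt comp_add_left[OF R S op_scale_bops[OF T]] comp_scale_left[OF R T] ..

lemma clos_comp: assumes A: "A \<subseteq> bops" and cl: "\<And>S T. S \<in> A \<Longrightarrow> T \<in> A \<Longrightarrow> op_comp S T \<in> A"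
  and S: "S \<in> op_closure A" and T: "T \<in> op_closure A"
  shows "op_comp S T \<in> op_closure A"
proof (rule closI)
  have Sb: "S \<in> bops" and Tb: "T \<in> bops" using S T clos_bops by auto
  show "op_comp S T \<in> bops" using Sb Tb by simp
  fix e :: real assume e: "e > 0"
  define M where "M = opnorm S + opnorm T + 1"
  have M: "M > 0" "M \<ge> 1" using opnorm_nonneg[OF Sb] opnorm_nonneg[OF Tb] by (auto simp: M_def)
  define d where "d = min 1 (e / (M + 1))"
  have d: "d > 0" "d \<le> 1" "d \<le> e / (M + 1)" using e M by (auto simp: d_def)
  obtain R1 where R1: "R1 \<in> A" "opnorm (op_diff S R1) < d" using closD[OF S d(1)] by auto
  obtain R2 where R2: "R2 \<in> A" "opnorm (op_diff T R2) < d" using closD[OF T d(1)] by auto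
  have R1b: "R1 \<in> bops" and R2b: "R2 \<in> bops" using R1 R2 A by auto
  have eq: "op_diff (op_comp S T) (op_comp R1 R2) = op_add (op_comp S (op_diff T R2)) (op_comp (op_diff S R1) R2)"
    unfolding comp_diff_left[OF Sb Tb R2b] by (simp add: op_diff_def op_add_def op_comp_def fun_eq_iff)
  have nR2: "opnorm R2 \<le> opnorm T + d"
  proof -
    have "R2 = op_diff T (op_diff T R2)" by (simp add: op_diff_def fun_eq_iff)
    hence "opnorm R2 \<le> opnorm T + opnorm (op_diff T R2)"
      using opnorm_diff_tri[of T "op_diff T R2"] Tb R2b by simp
    thus ?thesis using R2 by simp
  qed
  have "opnorm (op_diff (op_comp S T) (op_comp R1 R2)) \<le> opnorm (op_comp S (op_diff T R2)) + opnorm (op_comp (op_diff S R1) R2)"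
    unfolding eq by (rule opnorm_add) (simp_all add: Sb Tb R1b R2b)
  also have "\<dots> \<le> opnorm S * opnorm (op_diff T R2) + opnorm (op_diff S R1) * opnorm R2"
    by (intro add_mono opnorm_comp) (simp_all add: Sb Tb R1b R2b)
  also have "\<dots> \<le> opnorm S * d + d * (opnorm T + d)"
    using R1 R2 nR2 opnorm_nonneg[OF Sb] opnorm_nonneg[of "op_diff S R1"] opnorm_nonneg[OF R2b] Sb R1b
      opnorm_nonneg[of "op_diff T R2"] Tb R2b
    by (intro add_mono mult_mono) auto
  also have "\<dots> \<le> d * M" using d opnorm_nonneg[OF Sb] opnorm_nonneg[OF Tb]
    by (simp add: M_def algebra_simps mult_left_le_one_le)
  also have "\<dots> < e"
  proof -
    have "d * M \<le> e / (M + 1) * M" using d M by (intro mult_right_mono) auto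
    also have "\<dots> < e" using e M by (simp add: field_simps)
    finally show ?thesis .
  qed
  finally show "\<exists>R\<in>A. opnorm (op_diff (op_comp S T) R) < e"
    using R1 R2 cl by (intro bexI[of _ "op_comp R1 R2"]) auto
qed

lemma clos_map: fixes \<Phi> :: "'i op \<Rightarrow> 'j op"
  assumes A: "A \<subseteq> bops" and B: "B \<subseteq> bops"
  and pb: "\<And>T. T \<in> bops \<Longrightarrow> \<Phi> T \<in> bops"
  and pd: "\<And>S T. S \<in> bops \<Longrightarrow> T \<in> bops \<Longrightarrow> \<Phi> (op_diff S T) = op_diff (\<Phi> S) (\<Phi> T)"
  and pn: "\<And>T. T \<in> bops \<Longrightarrow> opnorm (\<Phi> T) \<le> opnorm T"
  and img: "\<And>T. T \<in> A \<Longrightarrow> \<Phi> T \<in> B"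
  and T: "T \<in> op_closure A"
  shows "\<Phi> T \<in> op_closure B"
proof (rule closI)
  have Tb: "T \<in> bops" using T clos_bops by auto
  show "\<Phi> T \<in> bops" by (rule pb[OF Tb])
  fix e :: real assume e: "e > 0"
  obtain R where R: "R \<in> A" "opnorm (op_diff T R) < e" using closD[OF T e] by auto
  have Rb: "R \<in> bops" using R A by auto
  have "opnorm (op_diff (\<Phi> T) (\<Phi> R)) = opnorm (\<Phi> (op_diff T R))" by (simp add: pd[OF Tb Rb])
  also have "\<dots> \<le> opnorm (op_diff T R)" by (rule pn) (simp add: Tb Rb)
  finally show "\<exists>R\<in>B. opnorm (op_diff (\<Phi> T) R) < e" using R img by (intro bexI[of _ "\<Phi> R"]) auto
qed

lemma star_alg_bops: assumes G: "G \<subseteq> bops" shows "star_alg G \<subseteq> bops"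
proof
  fix T assume "T \<in> star_alg G"
  thus "T \<in> bops" by (induction rule: star_alg.induct) (use G in auto)
qed

lemma star_alg_mono: assumes "G \<subseteq> H" shows "star_alg G \<subseteq> star_alg H"
proof
  fix T assume "T \<in> star_alg G"
  thus "T \<in> star_alg H" by (induction rule: star_alg.induct) (use assms in \<open>auto intro: star_alg.intros\<close>)
qed

lemma star_alg_sub: assumes "G \<subseteq> star_alg H" shows "star_alg G \<subseteq> star_alg H"
proof
  fix T assume "T \<in> star_alg G"
  thus "T \<in> star_alg H" by (induction rule: star_alg.induct) (use assms in \<open>auto intro: star_alg.intros\<close>)
qed

section \<open>Algebraic tensor product\<close>

definition talg :: "'i op set \<Rightarrow> 'j op set \<Rightarrow> ('i \<times> 'j) op set" where
  "talg A B = {op_sumk (\<lambda>k. op_tensor (f k) (g k)) n | f g n. (\<forall>k<n. f k \<in> A) \<and> (\<forall>k<n. g k \<in> B)}"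

lemma min_tensor_talg: "min_tensor A B = op_closure (talg A B)"
  by (simp add: min_tensor_def talg_def)

lemma op_sumk_cong: "(\<And>k. k < n \<Longrightarrow> h k = h' k) \<Longrightarrow> op_sumk h n = op_sumk h' n"
  by (induction n) auto

lemma talg_zero: "zero_op \<in> talg A B"
  unfolding talg_def by (rule CollectI, rule exI[of _ "\<lambda>_. undefined"], rule exI[of _ "\<lambda>_. undefined"], rule exI[of _ 0]) simp

lemma talg_snoc: assumes X: "X \<in> talg A B" and f0: "f0 \<in> A" and g0: "g0 \<in> B"
  shows "op_add X (op_tensor f0 g0) \<in> talg A B"
proof -
  obtain f g n where X: "X = op_sumk (\<lambda>k. op_tensor (f k) (g k)) n" and fg: "\<forall>k<n. f k \<in> A" "\<forall>k<n. g k \<in> B"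
    using X unfolding talg_def by blast
  define f' where "f' = f(n := f0)"
  define g' where "g' = g(n := g0)"
  have "op_sumk (\<lambda>k. op_tensor (f' k) (g' k)) n = X"
    unfolding X by (rule op_sumk_cong) (simp add: f'_def g'_def)
  hence "op_add X (op_tensor f0 g0) = op_sumk (\<lambda>k. op_tensor (f' k) (g' k)) (Suc n)"
    by (simp add: f'_def g'_def)
  moreover have "\<forall>k<Suc n. f' k \<in> A" "\<forall>k<Suc n. g' k \<in> B"
    using fg f0 g0 by (auto simp: f'_def g'_def less_Suc_eq)
  ultimately show ?thesis unfolding talg_def by blast
qed

lemma talg_tensor: "f0 \<in> A \<Longrightarrow> g0 \<in> B \<Longrightarrow> op_tensor f0 g0 \<in> talg A B"
  using talg_snoc[OF talg_zero] by (simp add: op_add_zero_left)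

lemma talg_induct[consumes 1, case_names zero snoc]:
  assumes X: "X \<in> talg A B"
  and z: "P zero_op"
  and s: "\<And>Y f0 g0. Y \<in> talg A B \<Longrightarrow> P Y \<Longrightarrow> f0 \<in> A \<Longrightarrow> g0 \<in> B \<Longrightarrow> P (op_add Y (op_tensor f0 g0))"
  shows "P X"
proof -
  obtain f g n where X: "X = op_sumk (\<lambda>k. op_tensor (f k) (g k)) n" and fg: "\<forall>k<n. f k \<in> A" "\<forall>k<n. g k \<in> B"
    using X unfolding talg_def by blast
  have "op_sumk (\<lambda>k. op_tensor (f k) (g k)) m \<in> talg A B \<and> P (op_sumk (\<lambda>k. op_tensor (f k) (g k)) m)" if "m \<le> n" for m
    using that
  proof (induction m)
    case 0 thus ?case using z talg_zero by simp
  next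
    case (Suc m)
    hence IH: "op_sumk (\<lambda>k. op_tensor (f k) (g k)) m \<in> talg A B" "P (op_sumk (\<lambda>k. op_tensor (f k) (g k)) m)" by auto
    have fm: "f m \<in> A" "g m \<in> B" using fg Suc by auto
    show ?case using talg_snoc[OF IH(1) fm] s[OF IH fm] by simp
  qed
  thus ?thesis using X by simp
qed

lemma talg_bops: assumes A: "A \<subseteq> bops" and B: "B \<subseteq> bops" shows "talg A B \<subseteq> bops"
proof
  fix X assume "X \<in> talg A B"
  thus "X \<in> bops"
  proof (induction rule: talg_induct)
    case (snoc Y f0 g0)
    have "f0 \<in> bops" "g0 \<in> bops" using snoc A B by blast+
    thus ?case using snoc by simp
  qed simp
qed

lemma talg_add: assumes X: "X \<in> talg A B" and Y: "Y \<in> talg A B" shows "op_add X Y \<in> talg A B"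
  using Y
proof (induction rule: talg_induct)
  case zero thus ?case using X by (simp add: op_add_zero_right)
next
  case (snoc Y f0 g0)
  have "op_add X (op_add Y (op_tensor f0 g0)) = op_add (op_add X Y) (op_tensor f0 g0)" by (simp add: op_add_assoc)
  thus ?case using talg_snoc[OF snoc(4,2,3)] by simp
qed

lemma talg_scale: assumes A: "A \<subseteq> bops" and B: "B \<subseteq> bops" and cl: "\<And>T. T \<in> A \<Longrightarrow> op_scale c T \<in> A"
  and X: "X \<in> talg A B" shows "op_scale c X \<in> talg A B"
  using X
proof (induction rule: talg_induct)
  case zero
  have "op_scale c zero_op = (zero_op :: ('a \<times> 'b) op)" by (simp add: op_scale_def zero_op_def fun_eq_iff)
  thus ?case using talg_zero by simp
next
  case (snoc Y f0 g0)
  have "op_scale c (op_add Y (op_tensor f0 g0)) = op_add (op_scale c Y) (op_scale c (op_tensor f0 g0))"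
    by (simp add: op_scale_def op_add_def fun_eq_iff algebra_simps)
  also have "op_scale c (op_tensor f0 g0) = op_tensor (op_scale c f0) g0"
    using snoc A B by (simp add: tensor_scale_left subsetD)
  finally show ?case using talg_snoc[OF snoc(4) cl[OF snoc(2)] snoc(3)] by simp
qed

lemma talg_adj: assumes A: "A \<subseteq> bops" and B: "B \<subseteq> bops"
  and clA: "\<And>T. T \<in> A \<Longrightarrow> adj T \<in> A" and clB: "\<And>T. T \<in> B \<Longrightarrow> adj T \<in> B"
  and X: "X \<in> talg A B" shows "adj X \<in> talg A B"
  using X
proof (induction rule: talg_induct)
  case zero
  have "adj (zero_op :: ('a \<times> 'b) op) = zero_op" by (rule adj_unique) (simp_all add: zero_op_def)
  thus ?case using talg_zero by simp
next
  case (snoc Y f0 g0)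
  have Yb: "Y \<in> bops" using talg_bops[OF A B] snoc by auto
  have fb: "f0 \<in> bops" "g0 \<in> bops" using snoc A B by auto
  have "adj (op_add Y (op_tensor f0 g0)) = op_add (adj Y) (op_tensor (adj f0) (adj g0))"
    using Yb fb by (simp add: adj_add tensor_adj)
  thus ?case using talg_snoc[OF snoc(4) clA[OF snoc(2)] clB[OF snoc(3)]] by simp
qed

lemma talg_comp: assumes A: "A \<subseteq> bops" and B: "B \<subseteq> bops"
  and clA: "\<And>S T. S \<in> A \<Longrightarrow> T \<in> A \<Longrightarrow> op_comp S T \<in> A" and clB: "\<And>S T. S \<in> B \<Longrightarrow> T \<in> B \<Longrightarrow> op_comp S T \<in> B"
  and X: "X \<in> talg A B" and Y: "Y \<in> talg A B" shows "op_comp X Y \<in> talg A B"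
proof -
  have one: "op_comp Z (op_tensor f0 g0) \<in> talg A B" if Z: "Z \<in> talg A B" and f0: "f0 \<in> A" and g0: "g0 \<in> B" for Z f0 g0
    using Z
  proof (induction rule: talg_induct)
    case zero
    have "op_comp zero_op (op_tensor f0 g0) = (zero_op :: ('a \<times> 'b) op)" by (simp add: op_comp_def zero_op_def fun_eq_iff)
    thus ?case using talg_zero by simp
  next
    case (snoc W f1 g1)
    have "op_comp (op_add W (op_tensor f1 g1)) (op_tensor f0 g0) = op_add (op_comp W (op_tensor f0 g0)) (op_comp (op_tensor f1 g1) (op_tensor f0 g0))"
      by (rule comp_add_right)
    also have "op_comp (op_tensor f1 g1) (op_tensor f0 g0) = op_tensor (op_comp f1 f0) (op_comp g1 g0)"
      by (rule tensor_comp) (use snoc f0 g0 A B in auto)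
    finally show ?case using talg_snoc[OF snoc(4) clA[OF snoc(2) f0] clB[OF snoc(3) g0]] by simp
  qed
  show ?thesis using Y
  proof (induction rule: talg_induct)
    case zero
    have Xb: "X \<in> bops" using talg_bops[OF A B] X by auto
    have "op_comp X zero_op = zero_op" using bops_zero[OF Xb] by (simp add: op_comp_def zero_op_def fun_eq_iff)
    thus ?case using talg_zero by simp
  next
    case (snoc W f0 g0)
    have Xb: "X \<in> bops" using talg_bops[OF A B] X by auto
    have Wb: "W \<in> bops" using talg_bops[OF A B] snoc by auto
    have "f0 \<in> bops" "g0 \<in> bops" using snoc A B by blast+
    hence tb: "op_tensor f0 g0 \<in> bops" by simp
    have "op_comp X (op_add W (op_tensor f0 g0)) = op_add (op_comp X W) (op_comp X (op_tensor f0 g0))"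
      by (rule comp_add_left[OF Xb Wb tb])
    thus ?case using talg_add[OF snoc(4) one[OF X snoc(2,3)]] by simp
  qed
qed


lemma mono_cong: assumes X: "mono_op X c \<sigma>" and cc: "\<And>i. c i = c' i" and ss: "\<And>i. c i \<noteq> 0 \<Longrightarrow> \<sigma> i = \<sigma>' i"
  shows "mono_op X c' \<sigma>'"
  unfolding mono_op_def
proof (intro conjI allI)
  show "X \<in> bops" using X by (simp add: mono_op_def)
  fix i show "X (bv i) = (\<lambda>j. if j = \<sigma>' i then c' i else 0)"
    using mono_bv[OF X, of i] cc[of i] ss[of i] by (cases "c i = 0") auto
qed

lemma qpow_norm: "cmod q = 1 \<Longrightarrow> cmod (q powi k) = 1"
  by (simp add: norm_power_int)

lemma qnz: "cmod q = 1 \<Longrightarrow> q \<noteq> 0" by auto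

definition sa :: "idx \<Rightarrow> idx" where
  "sa = (\<lambda>(k, m, n). if k = Kc then (if n \<ge> 0 then (Kc, m, n + 1) else (Kc, m + 1, n + 1)) else (k, m, n))"
definition sa' :: "idx \<Rightarrow> idx" where
  "sa' = (\<lambda>(k, m, n). if k = Kc then (if n \<ge> 1 then (Kc, m, n - 1) else (Kc, m - 1, n - 1)) else (k, m, n))"
definition sd :: "idx \<Rightarrow> idx" where
  "sd = (\<lambda>(k, m, n). if k = Kc then (if n > 0 then (Kc, m + 1, n - 1) else (Kc, m, n - 1)) else (k, m, n))"
definition sd' :: "idx \<Rightarrow> idx" where
  "sd' = (\<lambda>(k, m, n). if k = Kc then (if n \<ge> 0 then (Kc, m - 1, n + 1) else (Kc, m, n + 1)) else (k, m, n))"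
definition sb :: "idx \<Rightarrow> idx" where
  "sb = (\<lambda>(k, m, n). if k = Kq then (if n > 0 then (Kq, m + 1, n - 1) else (Kq, m, n - 1)) else (k, m, n))"
definition sb' :: "idx \<Rightarrow> idx" where
  "sb' = (\<lambda>(k, m, n). if k = Kq then (if n \<ge> 0 then (Kq, m - 1, n + 1) else (Kq, m, n + 1)) else (k, m, n))"
definition sc :: "idx \<Rightarrow> idx" where
  "sc = (\<lambda>(k, m, n). if k = Kq then (if n \<ge> 0 then (Kq, m, n + 1) else (Kq, m + 1, n + 1)) else (k, m, n))"
definition sc' :: "idx \<Rightarrow> idx" where
  "sc' = (\<lambda>(k, m, n). if k = Kq then (if n \<ge> 1 then (Kq, m, n - 1) else (Kq, m - 1, n - 1)) else (k, m, n))"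

definition wa :: "idx \<Rightarrow> complex" where "wa = (\<lambda>(k, m, n). if k = Kc then 1 else 0)"
definition wb :: "complex \<Rightarrow> idx \<Rightarrow> complex" where
  "wb q = (\<lambda>(k, m, n). if k = Kq then (if n > 0 then - (q powi (2 * n - 1)) else q powi (2 * m)) else 0)"
definition wc :: "complex \<Rightarrow> idx \<Rightarrow> complex" where
  "wc q = (\<lambda>(k, m, n). if k = Kq then (if n \<ge> 0 then 1 else - (q powi (- 2 * m - 1))) else 0)"

lemma pi_a_eq: "pi_a q = basis_op wa sa" by (simp add: pi_a_def wa_def sa_def)
lemma pi_b_eq: "pi_b q = basis_op (wb q) sb" by (simp add: pi_b_def wb_def sb_def)
lemma pi_c_eq: "pi_c q = basis_op (wc q) sc" by (simp add: pi_c_def wc_def sc_def)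
lemma pi_d_eq: "pi_d q = basis_op wa sd" by (simp add: pi_d_def wa_def sd_def)

lemma sa_inv: "sa' (sa i) = i" "sa (sa' i) = i" by (cases i; auto simp: sa_def sa'_def)+
lemma sb_inv: "sb' (sb i) = i" "sb (sb' i) = i" by (cases i; auto simp: sb_def sb'_def)+
lemma sc_inv: "sc' (sc i) = i" "sc (sc' i) = i" by (cases i; auto simp: sc_def sc'_def)+
lemma sd_inv: "sd' (sd i) = i" "sd (sd' i) = i" by (cases i; auto simp: sd_def sd'_def)+

lemma wa_bound: "cmod (wa i) \<le> 1" by (cases i) (simp add: wa_def)
lemma wb_bound: "cmod q = 1 \<Longrightarrow> cmod (wb q i) \<le> 1" by (cases i) (simp add: wb_def norm_power_int)
lemma wc_bound: "cmod q = 1 \<Longrightarrow> cmod (wc q i) \<le> 1" by (cases i) (simp add: wc_def norm_power_int)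

lemma mono_a: "mono_op (pi_a q) wa sa"
  unfolding pi_a_eq by (rule mono_basis_op(1)[OF sa_inv wa_bound])
lemma mono_d: "mono_op (pi_d q) wa sd"
  unfolding pi_d_eq by (rule mono_basis_op(1)[OF sd_inv wa_bound])
lemma mono_b: "cmod q = 1 \<Longrightarrow> mono_op (pi_b q) (wb q) sb"
  unfolding pi_b_eq by (rule mono_basis_op(1)[OF sb_inv wb_bound])
lemma mono_c: "cmod q = 1 \<Longrightarrow> mono_op (pi_c q) (wc q) sc"
  unfolding pi_c_eq by (rule mono_basis_op(1)[OF sc_inv wc_bound])


definition F :: "complex \<Rightarrow> int \<Rightarrow> int \<Rightarrow> complex" where "F q j k = (-1) powi j * q powi k"

lemma F_mult: "q \<noteq> 0 \<Longrightarrow> F q a b * F q c d = F q (a + c) (b + d)"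
  by (simp add: F_def power_int_add)

lemma F_neg: "- F q a b = F q (a + 1) b"
  by (simp add: F_def power_int_add)

lemma cnj_unit: assumes "cmod q = 1" shows "cnj q = inverse q"
proof -
  have "q * cnj q = 1" using complex_norm_square[of q] assms by simp
  thus ?thesis by (metis inverse_unique)
qed

lemma F_cnj: "cmod q = 1 \<Longrightarrow> cnj (F q a b) = F q a (- b)"
  by (simp add: F_def cnj_unit power_int_minus power_int_inverse)

lemma qpow_F: "q powi k = F q 0 k" by (simp add: F_def)
lemma inv_F: "q \<noteq> 0 \<Longrightarrow> inverse q = F q 0 (-1)" by (simp add: F_def power_int_minus)

lemma m1pow_even: "even j \<Longrightarrow> (-1::complex) powi j = 1"
proof -
  assume "even j" then obtain t where "j = 2 * t" by blast
  thus ?thesis by (simp add: power_int_mult)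
qed

lemma F_eq: assumes "q \<noteq> 0" "even (a - c)" "b = d" shows "F q a b = F q c d"
proof -
  have "a = (a - c) + c" by simp
  hence "(-1::complex) powi a = (-1) powi (a - c) * (-1) powi c" by (metis power_int_add neg_one_neq_zero)
  thus ?thesis using assms m1pow_even[OF assms(2)] by (simp add: F_def)
qed

lemma F_one: "q \<noteq> 0 \<Longrightarrow> even a \<Longrightarrow> b = 0 \<Longrightarrow> F q a b = 1"
  by (simp add: F_def m1pow_even)

lemma F_00[simp]: "F q 0 0 = 1" by (simp add: F_def)
lemma F_10[simp]: "F q 1 0 = -1" by (simp add: F_def)

lemma F_add_zero: assumes "q \<noteq> 0" "odd (a - c)" "b = d" shows "F q a b + F q c d = 0"
proof -
  have "F q a b = F q (c + 1) d" using assms by (intro F_eq) (auto simp: algebra_simps)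
  thus ?thesis by (simp flip: F_neg)
qed

lemma kind_neq[simp]: "(k \<noteq> Kc) = (k = Kq)" "(k \<noteq> Kq) = (k = Kc)" by (cases k; simp)+

lemma F_nz: "q \<noteq> 0 \<Longrightarrow> F q a b \<noteq> 0" by (simp add: F_def)

section \<open>Coordinates and gauge\<close>

definition rc :: "idx \<Rightarrow> idx" where "rc = (\<lambda>(k, m, n). (k, m + max n 0, m - min n 0))"
definition ic :: "idx \<Rightarrow> idx" where "ic = (\<lambda>(k, x, y). (k, min x y, x - y))"

lemma rc_ic: "rc (ic p) = p" "ic (rc i) = i"
  by (cases p, auto simp: rc_def ic_def min_def max_def) (cases i, auto simp: rc_def ic_def min_def max_def)

definition th :: "complex \<Rightarrow> idx \<Rightarrow> complex" where
  "th q = (\<lambda>(k, m, n). if k = Kq then F q m (- (m * m)) else 1)"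

lemma th_norm: "cmod q = 1 \<Longrightarrow> cmod (th q i) = 1"
  by (cases i) (simp add: th_def F_def norm_mult norm_power_int)

lemma th_unit: "cmod q = 1 \<Longrightarrow> th q i * cnj (th q i) = 1"
  using complex_norm_square[of "th q i"] th_norm[of q i] by simp

lemma th_unit': "cmod q = 1 \<Longrightarrow> cnj (th q i) * th q i = 1"
  using th_unit[of q i] by (simp add: mult.commute)

definition Vop :: "complex \<Rightarrow> idx op" where "Vop q = basis_op (\<lambda>i. cnj (th q i)) rc"

lemma mono_V: "cmod q = 1 \<Longrightarrow> mono_op (Vop q) (\<lambda>i. cnj (th q i)) rc"
  unfolding Vop_def by (rule mono_basis_op(1)[where s'=ic and B=1]) (simp_all add: rc_ic th_norm)

lemma V_norm: "cmod q = 1 \<Longrightarrow> opnorm (Vop q) \<le> 1"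
  unfolding Vop_def by (rule mono_basis_op(2)[where s'=ic and B=1]) (simp_all add: rc_ic th_norm)

lemma mono_Vadj: "cmod q = 1 \<Longrightarrow> mono_op (adj (Vop q)) (\<lambda>p. th q (ic p)) ic"
  using mono_adj[OF mono_V, of q ic] by (simp add: rc_ic)

lemma V_bops[simp]: "cmod q = 1 \<Longrightarrow> Vop q \<in> bops" using mono_bops[OF mono_V] .

lemma V_unit1: assumes q: "cmod q = 1" shows "op_comp (Vop q) (adj (Vop q)) = idop"
  by (rule mono_eq[OF mono_comp[OF mono_V[OF q] mono_Vadj[OF q]] mono_idop]) (simp_all add: th_unit[OF q] rc_ic)

lemma V_unit2: assumes q: "cmod q = 1" shows "op_comp (adj (Vop q)) (Vop q) = idop"
  by (rule mono_eq[OF mono_comp[OF mono_Vadj[OF q] mono_V[OF q]] mono_idop]) (simp_all add: th_unit'[OF q] rc_ic)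

lemmas Fsimps = F_mult F_neg F_cnj qpow_F

lemma gauge_a: assumes q: "cmod q = 1"
  shows "mono_op (op_comp (Vop q) (op_comp (pi_a q) (adj (Vop q))))
           (\<lambda>(k, x, y). if k = Kc then 1 else 0) (\<lambda>(k, x, y). (k, x + 1, y))"
  apply (rule mono_cong[OF mono_comp[OF mono_V[OF q] mono_comp[OF mono_a mono_Vadj[OF q]]]])
  subgoal for p by (cases p) (auto simp: th_def wa_def ic_def sa_def)
  subgoal for p by (cases p) (auto simp: th_def wa_def ic_def sa_def rc_def min_def max_def split: if_splits)
  done

lemma gauge_d: assumes q: "cmod q = 1"
  shows "mono_op (op_comp (Vop q) (op_comp (pi_d q) (adj (Vop q))))
           (\<lambda>(k, x, y). if k = Kc then 1 else 0) (\<lambda>(k, x, y). (k, x, y + 1))"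
  apply (rule mono_cong[OF mono_comp[OF mono_V[OF q] mono_comp[OF mono_d mono_Vadj[OF q]]]])
  subgoal for p by (cases p) (auto simp: th_def wa_def ic_def sd_def)
  subgoal for p by (cases p) (auto simp: th_def wa_def ic_def sd_def rc_def min_def max_def split: if_splits)
  done


lemma gauge_b: assumes q: "cmod q = 1"
  shows "mono_op (op_comp (Vop q) (op_comp (pi_b q) (adj (Vop q))))
           (\<lambda>(k, x, y). if k = Kq then q powi (2 * x) else 0) (\<lambda>(k, x, y). (k, x, y + 1))"
  apply (rule mono_cong[OF mono_comp[OF mono_V[OF q] mono_comp[OF mono_b[OF q] mono_Vadj[OF q]]]])
  subgoal for p using qnz[OF q] by (cases p) (auto simp: th_def wb_def ic_def sb_def min_def Fsimps F_cnj[OF q] algebra_simps intro!: F_eq)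
  subgoal for p by (cases p) (auto simp: th_def wb_def ic_def sb_def rc_def min_def max_def split: if_splits)
  done


lemma gauge_c: assumes q: "cmod q = 1"
  shows "mono_op (op_comp (Vop q) (op_comp (pi_c q) (adj (Vop q))))
           (\<lambda>(k, x, y). if k = Kq then 1 else 0) (\<lambda>(k, x, y). (k, x + 1, y))"
  apply (rule mono_cong[OF mono_comp[OF mono_V[OF q] mono_comp[OF mono_c[OF q] mono_Vadj[OF q]]]])
  subgoal for p using qnz[OF q] by (cases p) (auto simp: th_def wc_def ic_def sc_def min_def Fsimps F_cnj[OF q] algebra_simps intro!: F_eq F_one F_add_zero)
  subgoal for p by (cases p) (auto simp: th_def wc_def ic_def sc_def rc_def min_def max_def split: if_splits)
  done

definition cD :: "complex \<Rightarrow> idx \<Rightarrow> complex" where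
  "cD q = (\<lambda>(k, m, n). if k = Kc then 1 else (if n \<ge> 0 then q powi (2 * n) else 1))"
definition sD :: "idx \<Rightarrow> idx" where "sD = (\<lambda>(k, m, n). (k, m + 1, n))"

lemma mono_D: assumes q: "cmod q = 1" shows "mono_op (pi_D q) (cD q) sD"
proof -
  have e: "pi_D q = op_add (op_comp (pi_a q) (pi_d q)) (op_scale (- inverse q) (op_comp (pi_b q) (pi_c q)))"
    by (simp add: pi_D_def op_diff_def op_add_def op_scale_def fun_eq_iff)
  have m: "mono_op (pi_D q) (\<lambda>i. wa i * wa (sd i) + (- inverse q) * (wc q i * wb q (sc i)))
     (\<lambda>i. if wa i * wa (sd i) \<noteq> 0 then sa (sd i) else sb (sc i))"
    unfolding e
    by (rule mono_add[OF mono_comp[OF mono_a mono_d] mono_scale[OF mono_comp[OF mono_b[OF q] mono_c[OF q]]]])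
      (auto simp: wa_def wc_def split: prod.splits)
  show ?thesis
    apply (rule mono_cong[OF m])
    subgoal for i using qnz[OF q] by (cases i) (auto simp: cD_def wa_def wb_def wc_def sc_def sd_def inv_F Fsimps algebra_simps intro!: F_eq F_one F_add_zero)
    subgoal for i by (cases i) (auto simp: cD_def sD_def wa_def wb_def wc_def sa_def sb_def sc_def sd_def split: if_splits)
    done
qed

lemma gauge_D: assumes q: "cmod q = 1"
  shows "mono_op (op_comp (Vop q) (op_comp (pi_D q) (adj (Vop q))))
           (\<lambda>(k, x, y). if k = Kc then 1 else - (q powi (2 * x + 1))) (\<lambda>(k, x, y). (k, x + 1, y + 1))"
  apply (rule mono_cong[OF mono_comp[OF mono_V[OF q] mono_comp[OF mono_D[OF q] mono_Vadj[OF q]]]])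
  subgoal for p using qnz[OF q] by (cases p) (auto simp: th_def cD_def ic_def sD_def min_def Fsimps F_cnj[OF q] algebra_simps intro!: F_eq F_one F_add_zero)
  subgoal for p by (cases p) (auto simp: th_def cD_def ic_def sD_def rc_def min_def max_def split: if_splits)
  done


definition unit_op :: "'i op \<Rightarrow> bool" where
  "unit_op U \<longleftrightarrow> U \<in> bops \<and> op_comp U (adj U) = idop \<and> op_comp (adj U) U = idop \<and> opnorm U \<le> 1"

definition Ad :: "'i op \<Rightarrow> 'i op \<Rightarrow> 'i op" where "Ad U T = op_comp U (op_comp T (adj U))"

lemma unitD: assumes "unit_op U"
  shows "U \<in> bops" "op_comp U (adj U) = idop" "op_comp (adj U) U = idop" "opnorm U \<le> 1" "adj U \<in> bops" "opnorm (adj U) \<le> 1"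
  using assms adj_opnorm[of U] by (auto simp: unit_op_def)

lemma unit_adj: assumes U: "unit_op U" shows "unit_op (adj U)"
  using unitD[OF U] adj_adj[OF unitD(1)[OF U]] by (simp add: unit_op_def)

lemma unit_comp: assumes U: "unit_op U" and V: "unit_op V" shows "unit_op (op_comp U V)"
proof -
  note u = unitD[OF U] and v = unitD[OF V]
  have a: "adj (op_comp U V) = op_comp (adj V) (adj U)" by (rule adj_comp[OF u(1) v(1)])
  have "op_comp (op_comp U V) (op_comp (adj V) (adj U)) = op_comp U (op_comp (op_comp V (adj V)) (adj U))"
    by (simp add: comp_assoc)
  also have "\<dots> = idop" using u v by (simp add: comp_idop_left)
  finally have 1: "op_comp (op_comp U V) (adj (op_comp U V)) = idop" unfolding a .
  have "op_comp (op_comp (adj V) (adj U)) (op_comp U V) = op_comp (adj V) (op_comp (op_comp (adj U) U) V)"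
    by (simp add: comp_assoc)
  also have "\<dots> = idop" using u v by (simp add: comp_idop_left)
  finally have 2: "op_comp (adj (op_comp U V)) (op_comp U V) = idop" unfolding a .
  have "opnorm (op_comp U V) \<le> opnorm U * opnorm V" by (rule opnorm_comp[OF u(1) v(1)])
  also have "\<dots> \<le> 1 * 1" using u v opnorm_nonneg[OF u(1)] opnorm_nonneg[OF v(1)] by (intro mult_mono) auto
  finally show ?thesis using 1 2 u v by (simp add: unit_op_def)
qed

lemma unit_tensor: fixes U :: "'i op" and V :: "'j op"
  assumes U: "unit_op U" and V: "unit_op V" shows "unit_op (op_tensor U V)"
proof -
  note u = unitD[OF U] and v = unitD[OF V]
  have a: "adj (op_tensor U V) = op_tensor (adj U) (adj V)" by (rule tensor_adj[OF u(1) v(1)])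
  have 1: "op_comp (op_tensor U V) (adj (op_tensor U V)) = idop"
    unfolding a tensor_comp[OF u(1) u(5) v(1) v(5)] u(2) v(2) tensor_idop ..
  have 2: "op_comp (adj (op_tensor U V)) (op_tensor U V) = idop"
    unfolding a tensor_comp[OF u(5) u(1) v(5) v(1)] u(3) v(3) tensor_idop ..
  have "opnorm (op_tensor U V) \<le> opnorm U * opnorm V" by (rule opnorm_tensor[OF u(1) v(1)])
  also have "\<dots> \<le> 1 * 1" using u v opnorm_nonneg[OF u(1)] opnorm_nonneg[OF v(1)] by (intro mult_mono) auto
  finally show ?thesis using 1 2 u v by (simp add: unit_op_def)
qed

lemma Ad_bops: "unit_op U \<Longrightarrow> T \<in> bops \<Longrightarrow> Ad U T \<in> bops"
  by (simp add: Ad_def unitD)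

lemma Ad_add: assumes U: "unit_op U" and S: "S \<in> bops" and T: "T \<in> bops"
  shows "Ad U (op_add S T) = op_add (Ad U S) (Ad U T)"
  unfolding Ad_def comp_add_right by (rule comp_add_left) (use U S T in \<open>simp_all add: unitD\<close>)

lemma Ad_scale: assumes U: "unit_op U" and T: "T \<in> bops"
  shows "Ad U (op_scale c T) = op_scale c (Ad U T)"
  unfolding Ad_def comp_scale_right by (rule comp_scale_left) (use U T in \<open>simp_all add: unitD\<close>)

lemma Ad_diff: assumes U: "unit_op U" and S: "S \<in> bops" and T: "T \<in> bops"
  shows "Ad U (op_diff S T) = op_diff (Ad U S) (Ad U T)"
  unfolding op_diff_alt using Ad_add[OF U S op_scale_bops[OF T]] Ad_scale[OF U T] by simp

lemma Ad_comp: assumes U: "unit_op U" and S: "S \<in> bops" and T: "T \<in> bops"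
  shows "Ad U (op_comp S T) = op_comp (Ad U S) (Ad U T)"
proof -
  have "op_comp (Ad U S) (Ad U T) = op_comp U (op_comp S (op_comp (op_comp (adj U) U) (op_comp T (adj U))))"
    by (simp add: Ad_def comp_assoc)
  also have "\<dots> = Ad U (op_comp S T)"
    by (simp add: unitD[OF U] comp_idop_left[OF op_comp_bops[OF T unitD(5)[OF U]]] Ad_def comp_assoc)
  finally show ?thesis ..
qed

lemma Ad_adj: assumes U: "unit_op U" and T: "T \<in> bops"
  shows "Ad U (adj T) = adj (Ad U T)"
proof -
  note u = unitD[OF U]
  have "adj (Ad U T) = op_comp (adj (op_comp T (adj U))) (adj U)" unfolding Ad_def by (rule adj_comp) (use u T in simp_all)
  also have "\<dots> = op_comp (op_comp (adj (adj U)) (adj T)) (adj U)" by (subst adj_comp) (use u T in simp_all)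
  also have "\<dots> = Ad U (adj T)" by (simp add: adj_adj[OF u(1)] Ad_def comp_assoc)
  finally show ?thesis ..
qed

lemma Ad_idop: "unit_op U \<Longrightarrow> Ad U idop = idop"
  by (simp add: Ad_def unitD comp_idop_left)

lemma Ad_norm: assumes U: "unit_op U" and T: "T \<in> bops" shows "opnorm (Ad U T) \<le> opnorm T"
proof -
  note u = unitD[OF U]
  have "opnorm (Ad U T) \<le> opnorm U * opnorm (op_comp T (adj U))" unfolding Ad_def by (rule opnorm_comp) (use u T in simp_all)
  also have "\<dots> \<le> 1 * (opnorm T * 1)"
  proof (rule mult_mono)
    show "opnorm (op_comp T (adj U)) \<le> opnorm T * 1"
      using opnorm_comp[OF T u(5)] u(6) opnorm_nonneg[OF T] mult_left_mono[OF u(6) opnorm_nonneg[OF T]] by linarith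
  qed (use u T opnorm_nonneg[OF op_comp_bops[OF T u(5)]] in auto)
  finally show ?thesis by simp
qed

lemma Ad_Ad: assumes U: "unit_op U" and V: "unit_op V" and T: "T \<in> bops"
  shows "Ad U (Ad V T) = Ad (op_comp U V) T"
  by (simp add: Ad_def adj_comp unitD[OF U] unitD[OF V] comp_assoc)

lemma Ad_inv: assumes U: "unit_op U" and T: "T \<in> bops" shows "Ad (adj U) (Ad U T) = T"
proof -
  note u = unitD[OF U]
  have "Ad (adj U) (Ad U T) = op_comp (op_comp (adj U) U) (op_comp T (op_comp (adj U) U))"
    by (simp add: Ad_def adj_adj[OF u(1)] comp_assoc)
  thus ?thesis by (simp add: u comp_idop_left[OF T] comp_idop_right[OF T])
qed

lemma Ad_tensor: fixes U :: "'i op" and V :: "'j op"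
  assumes U: "unit_op U" and V: "unit_op V" and S: "S \<in> bops" and T: "T \<in> bops"
  shows "Ad (op_tensor U V) (op_tensor S T) = op_tensor (Ad U S) (Ad V T)"
proof -
  note u = unitD[OF U] and v = unitD[OF V]
  have "Ad (op_tensor U V) (op_tensor S T) = op_comp (op_tensor U V) (op_comp (op_tensor S T) (op_tensor (adj U) (adj V)))"
    by (simp add: Ad_def tensor_adj u v)
  also have "\<dots> = op_tensor (Ad U S) (Ad V T)"
    unfolding tensor_comp[OF S u(5) T v(5)] by (subst tensor_comp) (use u v S T in \<open>simp_all add: Ad_def\<close>)
  finally show ?thesis .
qed

lemma amp_add: "S \<in> bops \<Longrightarrow> T \<in> bops \<Longrightarrow> op_tensor (idop :: 'i op) (op_add S T) = op_add (op_tensor idop S) (op_tensor idop T)"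
  by (rule tensor_add_right) simp_all

lemma amp_scale: "T \<in> bops \<Longrightarrow> op_tensor (idop :: 'i op) (op_scale c T) = op_scale c (op_tensor idop T)"
  by (rule tensor_scale_right) simp_all

lemma amp_diff: "S \<in> bops \<Longrightarrow> T \<in> bops \<Longrightarrow> op_tensor (idop :: 'i op) (op_diff S T) = op_diff (op_tensor idop S) (op_tensor idop T)"
  unfolding op_diff_alt by (simp add: amp_add amp_scale)

lemma amp_comp: "S \<in> bops \<Longrightarrow> T \<in> bops \<Longrightarrow> op_tensor (idop :: 'i op) (op_comp S T) = op_comp (op_tensor idop S) (op_tensor idop T)"
  using tensor_comp[of "idop :: 'i op" idop S T] by (simp add: comp_idop_left)

lemma amp_adj: "T \<in> bops \<Longrightarrow> op_tensor (idop :: 'i op) (adj T) = adj (op_tensor idop T)"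
  by (simp add: tensor_adj adj_idop)

lemma opnorm_idop: "opnorm (idop :: 'i op) \<le> 1"
  by (rule opnorm_le) simp_all

lemma amp_norm: assumes T: "T \<in> bops" shows "opnorm (op_tensor (idop :: 'i op) T) \<le> opnorm T"
proof -
  have "opnorm (op_tensor (idop :: 'i op) T) \<le> opnorm (idop :: 'i op) * opnorm T" by (rule opnorm_tensor) (simp_all add: T)
  also have "\<dots> \<le> 1 * opnorm T" by (rule mult_right_mono[OF opnorm_idop opnorm_nonneg[OF T]])
  finally show ?thesis by simp
qed


section \<open>The multiplicative unitary in nice coordinates\<close>

lemma pair6_cases: obtains k u v k2 x y where "P = ((k, u, v), (k2, x, y))"
  by (metis prod_cases3 surj_pair)

definition tauinv :: "idx \<times> idx \<Rightarrow> idx \<times> idx" where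
  "tauinv = (\<lambda>((k, u, v), (k2, x, y)).
     if k = Kc then (if k2 = Kc then ((Kc, u + x, v + y), (Kc, x, y)) else ((Kc, u + y, v + x), (Kq, x, y)))
     else (if k2 = Kc then ((Kq, u + y, v + x), (Kq, x, y)) else ((Kq, u + x, v + y), (Kc, x, y))))"

definition tau :: "idx \<times> idx \<Rightarrow> idx \<times> idx" where
  "tau = (\<lambda>((k, u, v), (k2, x, y)).
     if k = Kc then (if k2 = Kc then ((Kc, u - x, v - y), (Kc, x, y)) else ((Kc, u - y, v - x), (Kq, x, y)))
     else (if k2 = Kq then ((Kq, u - y, v - x), (Kc, x, y)) else ((Kq, u - x, v - y), (Kq, x, y))))"

lemma tau_tauinv: "tau (tauinv Q) = Q"
proof -
  obtain k u v k2 x y where Q: "Q = ((k, u, v), (k2, x, y))" by (rule pair6_cases)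
  show ?thesis unfolding Q by (cases k; cases k2) (simp_all add: tau_def tauinv_def)
qed

lemma tauinv_tau: "tauinv (tau P) = P"
proof -
  obtain k u v k2 x y where P: "P = ((k, u, v), (k2, x, y))" by (rule pair6_cases)
  show ?thesis unfolding P by (cases k; cases k2) (simp_all add: tau_def tauinv_def)
qed

definition lamW :: "complex \<Rightarrow> idx \<times> idx \<Rightarrow> complex" where
  "lamW q = (\<lambda>((k, u, v), (k2, x, y)).
     if k = Kq then (if k2 = Kc then q powi (2 * u * x + 2 * x * y) else q powi (2 * u * y)) else 1)"

lemma lamW_norm: "cmod q = 1 \<Longrightarrow> cmod (lamW q P) = 1"
proof -
  assume q: "cmod q = 1"
  obtain k u v k2 x y where P: "P = ((k, u, v), (k2, x, y))" by (rule pair6_cases)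
  show ?thesis unfolding P by (simp add: lamW_def norm_power_int q)
qed

lemma unit_cnj: "cmod z = 1 \<Longrightarrow> cnj z * z = 1"
  using complex_norm_square[of z] by (simp add: mult.commute)

lemma unit_cnj': "cmod z = 1 \<Longrightarrow> z * cnj z = 1"
  using complex_norm_square[of z] by simp

definition Wst :: "complex \<Rightarrow> (idx \<times> idx) op" where "Wst q = gbop (lamW q) tauinv"

lemma mono_Wst: "cmod q = 1 \<Longrightarrow> mono_op (Wst q) (lamW q) tauinv"
  unfolding Wst_def by (rule mono_gbop(1)[where s'=tau and B=1]) (simp_all add: tau_tauinv tauinv_tau lamW_norm)

lemma Wst_norm: "cmod q = 1 \<Longrightarrow> opnorm (Wst q) \<le> 1"
  unfolding Wst_def by (rule mono_gbop(2)[where s'=tau and B=1]) (simp_all add: tau_tauinv tauinv_tau lamW_norm)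

lemma mono_W: "cmod q = 1 \<Longrightarrow> mono_op (adj (Wst q)) (\<lambda>P. cnj (lamW q (tau P))) tau"
  by (rule mono_adj[OF mono_Wst]) (simp_all add: tau_tauinv tauinv_tau)

lemma unit_Wst: assumes q: "cmod q = 1" shows "unit_op (Wst q)"
proof -
  have 1: "op_comp (Wst q) (adj (Wst q)) = idop"
    by (rule mono_eq[OF mono_comp[OF mono_Wst[OF q] mono_W[OF q]] mono_idop])
      (simp_all add: unit_cnj[OF lamW_norm[OF q]] tauinv_tau)
  have 2: "op_comp (adj (Wst q)) (Wst q) = idop"
    by (rule mono_eq[OF mono_comp[OF mono_W[OF q] mono_Wst[OF q]] mono_idop])
      (simp_all add: unit_cnj'[OF lamW_norm[OF q]] tau_tauinv)
  show ?thesis using 1 2 Wst_norm[OF q] mono_bops[OF mono_Wst[OF q]] by (simp add: unit_op_def)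
qed

lemma unit_V: assumes q: "cmod q = 1" shows "unit_op (Vop q)"
  using V_unit1[OF q] V_unit2[OF q] V_norm[OF q] by (simp add: unit_op_def q)

definition Dl :: "complex \<Rightarrow> idx op \<Rightarrow> (idx \<times> idx) op" where
  "Dl q X = Ad (Wst q) (op_tensor idop X)"

lemma mono_Dl: assumes q: "cmod q = 1" and X: "mono_op X c \<sigma>"
  shows "mono_op (Dl q X) (\<lambda>P. cnj (lamW q (tau P)) * c (snd (tau P)) * lamW q (fst (tau P), \<sigma> (snd (tau P))))
                             (\<lambda>P. tauinv (fst (tau P), \<sigma> (snd (tau P))))"
  unfolding Dl_def Ad_def
  by (rule mono_cong[OF mono_comp[OF mono_Wst[OF q] mono_comp[OF mono_tensor[OF mono_idop X] mono_W[OF q]]]])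
     (simp_all add: split_beta)

definition cA :: "idx \<Rightarrow> complex" where "cA = (\<lambda>(k, x, y). if k = Kc then 1 else 0)"
definition cC :: "idx \<Rightarrow> complex" where "cC = (\<lambda>(k, x, y). if k = Kq then 1 else 0)"
definition cB :: "complex \<Rightarrow> idx \<Rightarrow> complex" where "cB q = (\<lambda>(k, x, y). if k = Kq then q powi (2 * x) else 0)"
definition cDD :: "complex \<Rightarrow> idx \<Rightarrow> complex" where "cDD q = (\<lambda>(k, x, y). if k = Kc then 1 else - (q powi (2 * x + 1)))"
definition sX :: "idx \<Rightarrow> idx" where "sX = (\<lambda>(k, x, y). (k, x + 1, y))"
definition sY :: "idx \<Rightarrow> idx" where "sY = (\<lambda>(k, x, y). (k, x, y + 1))"
definition sXY :: "idx \<Rightarrow> idx" where "sXY = (\<lambda>(k, x, y). (k, x + 1, y + 1))"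

lemmas cdefs = cA_def cB_def cC_def cDD_def sX_def sY_def sXY_def tau_def tauinv_def lamW_def

lemma Dl_a: assumes q: "cmod q = 1" and A: "mono_op A cA sX" and B: "mono_op B (cB q) sY" and C: "mono_op C cC sX"
  shows "Dl q A = op_add (op_tensor A A) (op_tensor B C)"
  apply (rule mono_eq[OF mono_Dl[OF q A] mono_add[OF mono_tensor[OF A A] mono_tensor[OF B C]]])
  subgoal for P by (rule pair6_cases[of P]) (auto simp: cdefs)
  subgoal for P by (rule pair6_cases[of P]) (use qnz[OF q] in \<open>auto simp: cdefs Fsimps F_cnj[OF q] algebra_simps qnz[OF q] intro!: F_eq F_one F_add_zero\<close>)
  subgoal for P by (rule pair6_cases[of P]) (auto simp: cdefs qnz[OF q] split: if_splits)
  done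


lemma Dl_b: assumes q: "cmod q = 1" and A: "mono_op A cA sX" and B: "mono_op B (cB q) sY" and Dd: "mono_op Dd cA sY"
  shows "Dl q B = op_add (op_tensor A B) (op_tensor B Dd)"
  apply (rule mono_eq[OF mono_Dl[OF q B] mono_add[OF mono_tensor[OF A B] mono_tensor[OF B Dd]]])
  subgoal for P by (rule pair6_cases[of P]) (auto simp: cdefs)
  subgoal for P by (rule pair6_cases[of P]) (use qnz[OF q] in \<open>auto simp: cdefs Fsimps F_cnj[OF q] algebra_simps qnz[OF q] intro!: F_eq F_one F_add_zero\<close>)
  subgoal for P by (rule pair6_cases[of P]) (auto simp: cdefs qnz[OF q] split: if_splits)
  done

lemma Dl_c: assumes q: "cmod q = 1" and A: "mono_op A cA sX" and C: "mono_op C cC sX" and Dd: "mono_op Dd cA sY"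
  shows "Dl q C = op_add (op_tensor C A) (op_tensor Dd C)"
  apply (rule mono_eq[OF mono_Dl[OF q C] mono_add[OF mono_tensor[OF C A] mono_tensor[OF Dd C]]])
  subgoal for P by (rule pair6_cases[of P]) (auto simp: cdefs)
  subgoal for P by (rule pair6_cases[of P]) (use qnz[OF q] in \<open>auto simp: cdefs Fsimps F_cnj[OF q] algebra_simps qnz[OF q] intro!: F_eq F_one F_add_zero\<close>)
  subgoal for P by (rule pair6_cases[of P]) (auto simp: cdefs qnz[OF q] split: if_splits)
  done

lemma Dl_d: assumes q: "cmod q = 1" and B: "mono_op B (cB q) sY" and C: "mono_op C cC sX" and Dd: "mono_op Dd cA sY"
  shows "Dl q Dd = op_add (op_tensor C B) (op_tensor Dd Dd)"
  apply (rule mono_eq[OF mono_Dl[OF q Dd] mono_add[OF mono_tensor[OF C B] mono_tensor[OF Dd Dd]]])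
  subgoal for P by (rule pair6_cases[of P]) (auto simp: cdefs)
  subgoal for P by (rule pair6_cases[of P]) (use qnz[OF q] in \<open>auto simp: cdefs Fsimps F_cnj[OF q] algebra_simps qnz[OF q] intro!: F_eq F_one F_add_zero\<close>)
  subgoal for P by (rule pair6_cases[of P]) (auto simp: cdefs qnz[OF q] split: if_splits)
  done

lemma Dl_D: assumes q: "cmod q = 1" and DD: "mono_op DD (cDD q) sXY"
  shows "Dl q DD = op_tensor DD DD"
  apply (rule mono_eq[OF mono_Dl[OF q DD] mono_tensor[OF DD DD]])
  
  subgoal for P by (rule pair6_cases[of P]) (use qnz[OF q] in \<open>auto simp: cdefs Fsimps F_cnj[OF q] algebra_simps qnz[OF q] intro!: F_eq F_one F_add_zero\<close>)
  subgoal for P by (rule pair6_cases[of P]) (auto simp: cdefs qnz[OF q] split: if_splits)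
  done


lemma mono_aa: "mono_op (adj (pi_a q)) (\<lambda>p. cnj (wa (sa' p))) sa'"
  by (rule mono_adj[OF mono_a]) (simp_all add: sa_inv)
lemma mono_da: "mono_op (adj (pi_d q)) (\<lambda>p. cnj (wa (sd' p))) sd'"
  by (rule mono_adj[OF mono_d]) (simp_all add: sd_inv)
lemma mono_ba: "cmod q = 1 \<Longrightarrow> mono_op (adj (pi_b q)) (\<lambda>p. cnj (wb q (sb' p))) sb'"
  by (rule mono_adj[OF mono_b]) (simp_all add: sb_inv)
lemma mono_ca: "cmod q = 1 \<Longrightarrow> mono_op (adj (pi_c q)) (\<lambda>p. cnj (wc q (sc' p))) sc'"
  by (rule mono_adj[OF mono_c]) (simp_all add: sc_inv)

lemmas gdefs = wa_def wb_def wc_def sa_def sb_def sc_def sd_def sa'_def sb'_def sc'_def sd'_def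

lemma I1: assumes q: "cmod q = 1"
  shows "op_add (op_comp (pi_a q) (adj (pi_a q))) (op_comp (pi_b q) (adj (pi_b q))) = idop"
  apply (rule mono_eq[OF mono_add[OF mono_comp[OF mono_a mono_aa] mono_comp[OF mono_b[OF q] mono_ba[OF q]]] mono_idop])
  subgoal for p by (cases p) (auto simp: gdefs)
  subgoal for p by (cases p) (use qnz[OF q] in \<open>auto simp: gdefs Fsimps F_cnj[OF q] algebra_simps qnz[OF q] intro!: F_eq F_one F_add_zero\<close>)
  subgoal for p by (cases p) (auto simp: gdefs qnz[OF q] split: if_splits)
  done

lemma I2: assumes q: "cmod q = 1"
  shows "op_add (op_comp (pi_a q) (adj (pi_c q))) (op_comp (pi_b q) (adj (pi_d q))) = zero_op"
  apply (rule mono_eq[OF mono_add[OF mono_comp[OF mono_a mono_ca[OF q]] mono_comp[OF mono_b[OF q] mono_da]] mono_zero])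
  subgoal for p by (cases p) (auto simp: gdefs)
  subgoal for p by (cases p) (use qnz[OF q] in \<open>auto simp: gdefs Fsimps F_cnj[OF q] algebra_simps qnz[OF q] intro!: F_eq F_one F_add_zero\<close>)
  subgoal for p by (cases p) (auto simp: gdefs qnz[OF q] split: if_splits)
  done

lemma I3: assumes q: "cmod q = 1"
  shows "op_add (op_comp (pi_c q) (adj (pi_a q))) (op_comp (pi_d q) (adj (pi_b q))) = zero_op"
  apply (rule mono_eq[OF mono_add[OF mono_comp[OF mono_c[OF q] mono_aa] mono_comp[OF mono_d mono_ba[OF q]]] mono_zero])
  subgoal for p by (cases p) (auto simp: gdefs)
  subgoal for p by (cases p) (use qnz[OF q] in \<open>auto simp: gdefs Fsimps F_cnj[OF q] algebra_simps qnz[OF q] intro!: F_eq F_one F_add_zero\<close>)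
  subgoal for p by (cases p) (auto simp: gdefs qnz[OF q] split: if_splits)
  done

lemma I4: assumes q: "cmod q = 1"
  shows "op_add (op_comp (pi_c q) (adj (pi_c q))) (op_comp (pi_d q) (adj (pi_d q))) = idop"
  apply (rule mono_eq[OF mono_add[OF mono_comp[OF mono_c[OF q] mono_ca[OF q]] mono_comp[OF mono_d mono_da]] mono_idop])
  subgoal for p by (cases p) (auto simp: gdefs)
  subgoal for p by (cases p) (use qnz[OF q] in \<open>auto simp: gdefs Fsimps F_cnj[OF q] algebra_simps qnz[OF q] intro!: F_eq F_one F_add_zero\<close>)
  subgoal for p by (cases p) (auto simp: gdefs qnz[OF q] split: if_splits)
  done

lemma I5: assumes q: "cmod q = 1"
  shows "op_add (op_comp (adj (pi_a q)) (pi_a q)) (op_comp (adj (pi_c q)) (pi_c q)) = idop"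
  apply (rule mono_eq[OF mono_add[OF mono_comp[OF mono_aa mono_a] mono_comp[OF mono_ca[OF q] mono_c[OF q]]] mono_idop])
  subgoal for p by (cases p) (auto simp: gdefs)
  subgoal for p by (cases p) (use qnz[OF q] in \<open>auto simp: gdefs Fsimps F_cnj[OF q] algebra_simps qnz[OF q] intro!: F_eq F_one F_add_zero\<close>)
  subgoal for p by (cases p) (auto simp: gdefs qnz[OF q] split: if_splits)
  done

lemma I6: assumes q: "cmod q = 1"
  shows "op_add (op_comp (adj (pi_a q)) (pi_b q)) (op_comp (adj (pi_c q)) (pi_d q)) = zero_op"
  apply (rule mono_eq[OF mono_add[OF mono_comp[OF mono_aa mono_b[OF q]] mono_comp[OF mono_ca[OF q] mono_d]] mono_zero])
  subgoal for p by (cases p) (auto simp: gdefs)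
  subgoal for p by (cases p) (use qnz[OF q] in \<open>auto simp: gdefs Fsimps F_cnj[OF q] algebra_simps qnz[OF q] intro!: F_eq F_one F_add_zero\<close>)
  subgoal for p by (cases p) (auto simp: gdefs qnz[OF q] split: if_splits)
  done

lemma I7: assumes q: "cmod q = 1"
  shows "op_add (op_comp (adj (pi_b q)) (pi_a q)) (op_comp (adj (pi_d q)) (pi_c q)) = zero_op"
  apply (rule mono_eq[OF mono_add[OF mono_comp[OF mono_ba[OF q] mono_a] mono_comp[OF mono_da mono_c[OF q]]] mono_zero])
  subgoal for p by (cases p) (auto simp: gdefs)
  subgoal for p by (cases p) (use qnz[OF q] in \<open>auto simp: gdefs Fsimps F_cnj[OF q] algebra_simps qnz[OF q] intro!: F_eq F_one F_add_zero\<close>)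
  subgoal for p by (cases p) (auto simp: gdefs qnz[OF q] split: if_splits)
  done

lemma I8: assumes q: "cmod q = 1"
  shows "op_add (op_comp (adj (pi_b q)) (pi_b q)) (op_comp (adj (pi_d q)) (pi_d q)) = idop"
  apply (rule mono_eq[OF mono_add[OF mono_comp[OF mono_ba[OF q] mono_b[OF q]] mono_comp[OF mono_da mono_d]] mono_idop])
  subgoal for p by (cases p) (auto simp: gdefs)
  subgoal for p by (cases p) (use qnz[OF q] in \<open>auto simp: gdefs Fsimps F_cnj[OF q] algebra_simps qnz[OF q] intro!: F_eq F_one F_add_zero\<close>)
  subgoal for p by (cases p) (auto simp: gdefs qnz[OF q] split: if_splits)
  done

lemma I9: assumes q: "cmod q = 1"
  shows "op_add (op_comp (pi_a q) (adj (pi_a q))) (op_comp (pi_c q) (adj (pi_c q))) = idop"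
  apply (rule mono_eq[OF mono_add[OF mono_comp[OF mono_a mono_aa] mono_comp[OF mono_c[OF q] mono_ca[OF q]]] mono_idop])
  subgoal for p by (cases p) (auto simp: gdefs)
  subgoal for p by (cases p) (use qnz[OF q] in \<open>auto simp: gdefs Fsimps F_cnj[OF q] algebra_simps qnz[OF q] intro!: F_eq F_one F_add_zero\<close>)
  subgoal for p by (cases p) (auto simp: gdefs qnz[OF q] split: if_splits)
  done

lemma I10: assumes q: "cmod q = 1"
  shows "op_add (op_comp (pi_a q) (adj (pi_b q))) (op_comp (pi_c q) (adj (pi_d q))) = zero_op"
  apply (rule mono_eq[OF mono_add[OF mono_comp[OF mono_a mono_ba[OF q]] mono_comp[OF mono_c[OF q] mono_da]] mono_zero])
  subgoal for p by (cases p) (auto simp: gdefs)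
  subgoal for p by (cases p) (use qnz[OF q] in \<open>auto simp: gdefs Fsimps F_cnj[OF q] algebra_simps qnz[OF q] intro!: F_eq F_one F_add_zero\<close>)
  subgoal for p by (cases p) (auto simp: gdefs qnz[OF q] split: if_splits)
  done

lemma I11: assumes q: "cmod q = 1"
  shows "op_add (op_comp (pi_b q) (adj (pi_a q))) (op_comp (pi_d q) (adj (pi_c q))) = zero_op"
  apply (rule mono_eq[OF mono_add[OF mono_comp[OF mono_b[OF q] mono_aa] mono_comp[OF mono_d mono_ca[OF q]]] mono_zero])
  subgoal for p by (cases p) (auto simp: gdefs)
  subgoal for p by (cases p) (use qnz[OF q] in \<open>auto simp: gdefs Fsimps F_cnj[OF q] algebra_simps qnz[OF q] intro!: F_eq F_one F_add_zero\<close>)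
  subgoal for p by (cases p) (auto simp: gdefs qnz[OF q] split: if_splits)
  done

lemma I12: assumes q: "cmod q = 1"
  shows "op_add (op_comp (pi_b q) (adj (pi_b q))) (op_comp (pi_d q) (adj (pi_d q))) = idop"
  apply (rule mono_eq[OF mono_add[OF mono_comp[OF mono_b[OF q] mono_ba[OF q]] mono_comp[OF mono_d mono_da]] mono_idop])
  subgoal for p by (cases p) (auto simp: gdefs)
  subgoal for p by (cases p) (use qnz[OF q] in \<open>auto simp: gdefs Fsimps F_cnj[OF q] algebra_simps qnz[OF q] intro!: F_eq F_one F_add_zero\<close>)
  subgoal for p by (cases p) (auto simp: gdefs qnz[OF q] split: if_splits)
  done

lemma I13: assumes q: "cmod q = 1"
  shows "op_add (op_comp (adj (pi_a q)) (pi_a q)) (op_comp (adj (pi_b q)) (pi_b q)) = idop"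
  apply (rule mono_eq[OF mono_add[OF mono_comp[OF mono_aa mono_a] mono_comp[OF mono_ba[OF q] mono_b[OF q]]] mono_idop])
  subgoal for p by (cases p) (auto simp: gdefs)
  subgoal for p by (cases p) (use qnz[OF q] in \<open>auto simp: gdefs Fsimps F_cnj[OF q] algebra_simps qnz[OF q] intro!: F_eq F_one F_add_zero\<close>)
  subgoal for p by (cases p) (auto simp: gdefs qnz[OF q] split: if_splits)
  done

lemma I14: assumes q: "cmod q = 1"
  shows "op_add (op_comp (adj (pi_a q)) (pi_c q)) (op_comp (adj (pi_b q)) (pi_d q)) = zero_op"
  apply (rule mono_eq[OF mono_add[OF mono_comp[OF mono_aa mono_c[OF q]] mono_comp[OF mono_ba[OF q] mono_d]] mono_zero])
  subgoal for p by (cases p) (auto simp: gdefs)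
  subgoal for p by (cases p) (use qnz[OF q] in \<open>auto simp: gdefs Fsimps F_cnj[OF q] algebra_simps qnz[OF q] intro!: F_eq F_one F_add_zero\<close>)
  subgoal for p by (cases p) (auto simp: gdefs qnz[OF q] split: if_splits)
  done

lemma I15: assumes q: "cmod q = 1"
  shows "op_add (op_comp (adj (pi_c q)) (pi_a q)) (op_comp (adj (pi_d q)) (pi_b q)) = zero_op"
  apply (rule mono_eq[OF mono_add[OF mono_comp[OF mono_ca[OF q] mono_a] mono_comp[OF mono_da mono_b[OF q]]] mono_zero])
  subgoal for p by (cases p) (auto simp: gdefs)
  subgoal for p by (cases p) (use qnz[OF q] in \<open>auto simp: gdefs Fsimps F_cnj[OF q] algebra_simps qnz[OF q] intro!: F_eq F_one F_add_zero\<close>)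
  subgoal for p by (cases p) (auto simp: gdefs qnz[OF q] split: if_splits)
  done

lemma I16: assumes q: "cmod q = 1"
  shows "op_add (op_comp (adj (pi_c q)) (pi_c q)) (op_comp (adj (pi_d q)) (pi_d q)) = idop"
  apply (rule mono_eq[OF mono_add[OF mono_comp[OF mono_ca[OF q] mono_c[OF q]] mono_comp[OF mono_da mono_d]] mono_idop])
  subgoal for p by (cases p) (auto simp: gdefs)
  subgoal for p by (cases p) (use qnz[OF q] in \<open>auto simp: gdefs Fsimps F_cnj[OF q] algebra_simps qnz[OF q] intro!: F_eq F_one F_add_zero\<close>)
  subgoal for p by (cases p) (auto simp: gdefs qnz[OF q] split: if_splits)
  done


definition sD' :: "idx \<Rightarrow> idx" where "sD' = (\<lambda>(k, m, n). (k, m - 1, n))"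

lemma sD_inv: "sD' (sD i) = i" "sD (sD' i) = i" by (cases i; simp add: sD_def sD'_def)+

lemma mono_Da: "cmod q = 1 \<Longrightarrow> mono_op (adj (pi_D q)) (\<lambda>p. cnj (cD q (sD' p))) sD'"
  by (rule mono_adj[OF mono_D]) (simp_all add: sD_inv)

lemma D_unit1: assumes q: "cmod q = 1" shows "op_comp (pi_D q) (adj (pi_D q)) = idop"
  apply (rule mono_eq[OF mono_comp[OF mono_D[OF q] mono_Da[OF q]] mono_idop])
  subgoal for p by (cases p) (use qnz[OF q] in \<open>auto simp: cD_def sD'_def Fsimps F_cnj[OF q] algebra_simps qnz[OF q] intro!: F_eq F_one F_add_zero\<close>)
  subgoal for p by (simp add: sD_inv)
  done

lemma D_unit2: assumes q: "cmod q = 1" shows "op_comp (adj (pi_D q)) (pi_D q) = idop"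
  apply (rule mono_eq[OF mono_comp[OF mono_Da[OF q] mono_D[OF q]] mono_idop])
  subgoal for p by (cases p) (use qnz[OF q] in \<open>auto simp: cD_def sD_def sD'_def Fsimps F_cnj[OF q] algebra_simps qnz[OF q] intro!: F_eq F_one F_add_zero\<close>)
  subgoal for p by (simp add: sD_inv)
  done

lemma D_bops: "cmod q = 1 \<Longrightarrow> pi_D q \<in> bops" using mono_bops[OF mono_D] .

lemma Dinv_eq: assumes q: "cmod q = 1" shows "pi_Dinv q = adj (pi_D q)"
  unfolding pi_Dinv_def
proof (rule the_equality)
  show "adj (pi_D q) \<in> bops \<and> op_comp (adj (pi_D q)) (pi_D q) = idop \<and> op_comp (pi_D q) (adj (pi_D q)) = idop"
    using D_bops[OF q] D_unit1[OF q] D_unit2[OF q] by simp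
next
  fix S assume S: "S \<in> bops \<and> op_comp S (pi_D q) = idop \<and> op_comp (pi_D q) S = idop"
  have "S = op_comp S (op_comp (pi_D q) (adj (pi_D q)))" using S D_unit1[OF q] by (simp add: comp_idop_right)
  also have "\<dots> = op_comp (op_comp S (pi_D q)) (adj (pi_D q))" by (simp add: comp_assoc)
  also have "\<dots> = adj (pi_D q)" using S D_bops[OF q] by (simp add: comp_idop_left)
  finally show "S = adj (pi_D q)" .
qed

section \<open>The comultiplication\<close>

definition Zop :: "complex \<Rightarrow> (idx \<times> idx) op" where
  "Zop q = op_comp (op_tensor (adj (Vop q)) (adj (Vop q))) (Wst q)"

definition Delta :: "complex \<Rightarrow> idx op \<Rightarrow> (idx \<times> idx) op" where
  "Delta q T = Ad (Zop q) (op_tensor idop (Ad (Vop q) T))"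

lemma unit_tV: "cmod q = 1 \<Longrightarrow> unit_op (op_tensor (adj (Vop q)) (adj (Vop q)))"
  by (intro unit_tensor unit_adj unit_V)

lemma unit_Z: "cmod q = 1 \<Longrightarrow> unit_op (Zop q)"
  unfolding Zop_def by (intro unit_comp unit_tV unit_Wst)

lemma Delta_alt: assumes q: "cmod q = 1" and T: "T \<in> bops"
  shows "Delta q T = Ad (op_tensor (adj (Vop q)) (adj (Vop q))) (Dl q (Ad (Vop q) T))"
  unfolding Delta_def Dl_def Zop_def
  by (rule Ad_Ad[symmetric, OF unit_tV[OF q] unit_Wst[OF q]]) (simp add: Ad_bops unit_V[OF q] T)

context fixes q :: complex assumes q: "cmod q = 1"
begin

lemma Delta_bops: "T \<in> bops \<Longrightarrow> Delta q T \<in> bops"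
  by (simp add: Delta_def Ad_bops unit_Z[OF q] unit_V[OF q])

lemma AdV_bops: "T \<in> bops \<Longrightarrow> Ad (Vop q) T \<in> bops" by (simp add: Ad_bops unit_V[OF q])

lemma Delta_add: "S \<in> bops \<Longrightarrow> T \<in> bops \<Longrightarrow> Delta q (op_add S T) = op_add (Delta q S) (Delta q T)"
  unfolding Delta_def by (simp add: Ad_add unit_V[OF q] unit_Z[OF q] AdV_bops amp_add)

lemma Delta_scale: "T \<in> bops \<Longrightarrow> Delta q (op_scale c T) = op_scale c (Delta q T)"
  unfolding Delta_def by (simp add: Ad_scale unit_V[OF q] unit_Z[OF q] AdV_bops amp_scale)

lemma Delta_diff: "S \<in> bops \<Longrightarrow> T \<in> bops \<Longrightarrow> Delta q (op_diff S T) = op_diff (Delta q S) (Delta q T)"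
  unfolding Delta_def by (simp add: Ad_diff unit_V[OF q] unit_Z[OF q] AdV_bops amp_diff)

lemma Delta_comp: "S \<in> bops \<Longrightarrow> T \<in> bops \<Longrightarrow> Delta q (op_comp S T) = op_comp (Delta q S) (Delta q T)"
  unfolding Delta_def by (simp add: Ad_comp unit_V[OF q] unit_Z[OF q] AdV_bops amp_comp)

lemma Delta_adj: "T \<in> bops \<Longrightarrow> Delta q (adj T) = adj (Delta q T)"
  unfolding Delta_def by (simp add: Ad_adj unit_V[OF q] unit_Z[OF q] AdV_bops amp_adj)

lemma Delta_idop: "Delta q idop = idop"
  unfolding Delta_def by (simp add: Ad_idop unit_V[OF q] unit_Z[OF q] tensor_idop)

lemma Delta_norm: assumes T: "T \<in> bops" shows "opnorm (Delta q T) \<le> opnorm T"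
proof -
  have "opnorm (Delta q T) \<le> opnorm (op_tensor (idop :: idx op) (Ad (Vop q) T))"
    unfolding Delta_def by (rule Ad_norm[OF unit_Z[OF q]]) (simp add: AdV_bops T)
  also have "\<dots> \<le> opnorm (Ad (Vop q) T)" by (rule amp_norm[OF AdV_bops[OF T]])
  also have "\<dots> \<le> opnorm T" by (rule Ad_norm[OF unit_V[OF q] T])
  finally show ?thesis .
qed

lemmas gA = gauge_a[OF q, folded Ad_def cA_def sX_def]
lemmas gB = gauge_b[OF q, folded Ad_def cB_def sY_def]
lemmas gC = gauge_c[OF q, folded Ad_def cC_def sX_def]
lemmas gDd = gauge_d[OF q, folded Ad_def cA_def sY_def]
lemmas gDD = gauge_D[OF q, folded Ad_def cDD_def sXY_def]

lemma gen_bops: "pi_a q \<in> bops" "pi_b q \<in> bops" "pi_c q \<in> bops" "pi_d q \<in> bops" "pi_D q \<in> bops"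
  using mono_bops[OF mono_a] mono_bops[OF mono_b[OF q]] mono_bops[OF mono_c[OF q]] mono_bops[OF mono_d] D_bops[OF q]
  by auto

lemma tback1: assumes X: "X \<in> bops" and Y: "Y \<in> bops"
  shows "Ad (op_tensor (adj (Vop q)) (adj (Vop q))) (op_tensor (Ad (Vop q) X) (Ad (Vop q) Y)) = op_tensor X Y"
  using Ad_tensor[OF unit_adj[OF unit_V[OF q]] unit_adj[OF unit_V[OF q]] AdV_bops[OF X] AdV_bops[OF Y]]
  by (simp add: Ad_inv[OF unit_V[OF q] X] Ad_inv[OF unit_V[OF q] Y])

lemma tback2: assumes "X1 \<in> bops" "Y1 \<in> bops" "X2 \<in> bops" "Y2 \<in> bops"
  shows "Ad (op_tensor (adj (Vop q)) (adj (Vop q)))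
           (op_add (op_tensor (Ad (Vop q) X1) (Ad (Vop q) Y1)) (op_tensor (Ad (Vop q) X2) (Ad (Vop q) Y2)))
         = op_add (op_tensor X1 Y1) (op_tensor X2 Y2)"
  by (subst Ad_add[OF unit_tV[OF q]]) (simp_all add: AdV_bops assms tback1)

lemma Delta_a: "Delta q (pi_a q) = op_add (op_tensor (pi_a q) (pi_a q)) (op_tensor (pi_b q) (pi_c q))"
  unfolding Delta_alt[OF q gen_bops(1)] Dl_a[OF q gA gB gC] by (rule tback2) (simp_all add: gen_bops)

lemma Delta_b: "Delta q (pi_b q) = op_add (op_tensor (pi_a q) (pi_b q)) (op_tensor (pi_b q) (pi_d q))"
  unfolding Delta_alt[OF q gen_bops(2)] Dl_b[OF q gA gB gDd] by (rule tback2) (simp_all add: gen_bops)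

lemma Delta_c: "Delta q (pi_c q) = op_add (op_tensor (pi_c q) (pi_a q)) (op_tensor (pi_d q) (pi_c q))"
  unfolding Delta_alt[OF q gen_bops(3)] Dl_c[OF q gA gC gDd] by (rule tback2) (simp_all add: gen_bops)

lemma Delta_d: "Delta q (pi_d q) = op_add (op_tensor (pi_c q) (pi_b q)) (op_tensor (pi_d q) (pi_d q))"
  unfolding Delta_alt[OF q gen_bops(4)] Dl_d[OF q gB gC gDd] by (rule tback2) (simp_all add: gen_bops)

lemma Delta_D: "Delta q (pi_D q) = op_tensor (pi_D q) (pi_D q)"
  unfolding Delta_alt[OF q gen_bops(5)] Dl_D[OF q gDD] by (rule tback1) (simp_all add: gen_bops)

lemma Delta_Dinv: "Delta q (pi_Dinv q) = op_tensor (pi_Dinv q) (pi_Dinv q)"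
  unfolding Dinv_eq[OF q] Delta_adj[OF gen_bops(5)] Delta_D by (rule tensor_adj) (simp_all add: gen_bops)

end


lemma sum2: "op_sumk f 2 = op_add (f 0) (f 1)"
  by (simp add: numeral_2_eq_2 op_add_zero_left)

lemma less2: "(i::nat) < 2 \<longleftrightarrow> i = 0 \<or> i = 1" by auto

lemma pi_D_alt: "pi_D q = op_add (op_comp (pi_a q) (pi_d q)) (op_scale (- inverse q) (op_comp (pi_b q) (pi_c q)))"
  by (simp add: pi_D_def op_diff_def op_add_def op_scale_def fun_eq_iff)

theorem proposition3p1:
  fixes q :: complex
  assumes "cmod q = 1"
  shows "(\<exists>\<Delta>. unital_star_hom (C_DT q) (min_tensor (C_DT q) (C_DT q)) \<Delta>
            \<and> \<Delta> (pi_a q) = op_add (op_tensor (pi_a q) (pi_a q)) (op_tensor (pi_b q) (pi_c q))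
            \<and> \<Delta> (pi_b q) = op_add (op_tensor (pi_a q) (pi_b q)) (op_tensor (pi_b q) (pi_d q))
            \<and> \<Delta> (pi_c q) = op_add (op_tensor (pi_c q) (pi_a q)) (op_tensor (pi_d q) (pi_c q))
            \<and> \<Delta> (pi_d q) = op_add (op_tensor (pi_c q) (pi_b q)) (op_tensor (pi_d q) (pi_d q))
            \<and> \<Delta> (pi_Dinv q) = op_tensor (pi_Dinv q) (pi_Dinv q))
         \<and> compact_matrix_qg (C_DT q) 2 (u_DT q)"
proof -
  note q = assms
  define G where "G = {idop, pi_a q, pi_b q, pi_c q, pi_d q, pi_Dinv q}"
  define C where "C = C_DT q"
  have CD: "C = op_closure (star_alg G)" by (simp add: C_def C_DT_def G_def)
  have Dinvb: "pi_Dinv q \<in> bops" using Dinv_eq[OF q] gen_bops[OF q] by simp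
  have Gb: "G \<subseteq> bops" using gen_bops[OF q] Dinvb by (auto simp: G_def)
  have Sb: "star_alg G \<subseteq> bops" by (rule star_alg_bops[OF Gb])
  have Cb: "C \<subseteq> bops" unfolding CD by (rule clos_bops)
  have SC: "star_alg G \<subseteq> C" unfolding CD by (rule clos_sub[OF Sb])
  have Cadd: "op_add S T \<in> C" if "S \<in> C" "T \<in> C" for S T
    using that unfolding CD by (intro clos_add[OF Sb]) (auto intro: star_alg.add)
  have Ccomp: "op_comp S T \<in> C" if "S \<in> C" "T \<in> C" for S T
    using that unfolding CD by (intro clos_comp[OF Sb]) (auto intro: star_alg.comp)
  have Cscale: "op_scale c T \<in> C" if "T \<in> C" for T c
    using that unfolding CD by (intro clos_scale[OF Sb]) (auto intro: star_alg.scale)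
  have Cadj: "adj T \<in> C" if "T \<in> C" for T
    using that unfolding CD by (intro clos_adj[OF Sb]) (auto intro: star_alg.star)
  have genS: "idop \<in> star_alg G" "pi_a q \<in> star_alg G" "pi_b q \<in> star_alg G" "pi_c q \<in> star_alg G"
     "pi_d q \<in> star_alg G" "pi_Dinv q \<in> star_alg G"
    by (auto simp: G_def intro: star_alg.gen)
  have genC: "idop \<in> C" "pi_a q \<in> C" "pi_b q \<in> C" "pi_c q \<in> C" "pi_d q \<in> C" "pi_Dinv q \<in> C"
    using genS SC by auto
  have cstar: "unital_cstar C"
    unfolding unital_cstar_def using Cb genC Cadd Ccomp Cscale Cadj clos_idem[OF Sb] CD by auto
  have Tb: "talg C C \<subseteq> bops" by (rule talg_bops[OF Cb Cb])
  have DT: "Delta q T \<in> talg C C" if "T \<in> star_alg G" for T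
    using that
  proof (induction rule: star_alg.induct)
    case (gen T)
    hence "T = idop \<or> T = pi_a q \<or> T = pi_b q \<or> T = pi_c q \<or> T = pi_d q \<or> T = pi_Dinv q" by (simp add: G_def)
    moreover have "Delta q idop \<in> talg C C"
      using talg_tensor[OF genC(1) genC(1)] by (simp add: Delta_idop[OF q] tensor_idop)
    moreover have "Delta q (pi_a q) \<in> talg C C"
      unfolding Delta_a[OF q] by (intro talg_add talg_tensor genC)
    moreover have "Delta q (pi_b q) \<in> talg C C"
      unfolding Delta_b[OF q] by (intro talg_add talg_tensor genC)
    moreover have "Delta q (pi_c q) \<in> talg C C"
      unfolding Delta_c[OF q] by (intro talg_add talg_tensor genC)
    moreover have "Delta q (pi_d q) \<in> talg C C"
      unfolding Delta_d[OF q] by (intro talg_add talg_tensor genC)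
    moreover have "Delta q (pi_Dinv q) \<in> talg C C"
      unfolding Delta_Dinv[OF q] by (intro talg_tensor genC)
    ultimately show ?case by blast
  next
    case (add S T)
    have "S \<in> bops" "T \<in> bops" using add.hyps Sb by auto
    thus ?case using talg_add[OF add.IH] Delta_add[OF q] by simp
  next
    case (scale T c)
    have "T \<in> bops" using scale.hyps Sb by auto
    thus ?case using talg_scale[OF Cb Cb Cscale scale.IH] Delta_scale[OF q] by simp
  next
    case (comp S T)
    have "S \<in> bops" "T \<in> bops" using comp.hyps Sb by auto
    thus ?case using talg_comp[OF Cb Cb Ccomp Ccomp comp.IH] Delta_comp[OF q] by simp
  next
    case (star T)
    have "T \<in> bops" using star.hyps Sb by auto
    thus ?case using talg_adj[OF Cb Cb Cadj Cadj star.IH] Delta_adj[OF q] by simp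
  qed
  have into: "Delta q T \<in> min_tensor C C" if "T \<in> C" for T
    unfolding min_tensor_talg
    by (rule clos_map[OF Sb Tb Delta_bops[OF q] Delta_diff[OF q] Delta_norm[OF q] DT]) (use that CD in simp_all)
  have hom: "unital_star_hom C (min_tensor C C) (Delta q)"
    unfolding unital_star_hom_def
    using into Delta_idop[OF q] Delta_add[OF q] Delta_comp[OF q] Delta_scale[OF q] Delta_adj[OF q] Cb
    by (auto simp: subset_iff)
  define U4 where "U4 = {u_DT q i j |i j. i < 2 \<and> j < 2}"
  have U4: "pi_a q \<in> U4" "pi_b q \<in> U4" "pi_c q \<in> U4" "pi_d q \<in> U4"
    unfolding U4_def
    by (rule CollectI, rule exI[of _ 0], rule exI[of _ 0], simp add: u_DT_def)
       (rule CollectI, rule exI[of _ 0], rule exI[of _ 1], simp add: u_DT_def,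
        rule CollectI, rule exI[of _ 1], rule exI[of _ 0], simp add: u_DT_def,
        rule CollectI, rule exI[of _ 1], rule exI[of _ 1], simp add: u_DT_def)
  have U4S: "pi_a q \<in> star_alg U4" "pi_b q \<in> star_alg U4" "pi_c q \<in> star_alg U4" "pi_d q \<in> star_alg U4"
    using U4 by (auto intro: star_alg.gen)
  have idS: "idop \<in> star_alg U4"
    unfolding I1[OF q, symmetric] using U4S by (intro star_alg.add star_alg.comp star_alg.star)
  have DS: "pi_D q \<in> star_alg U4"
    unfolding pi_D_alt using U4S by (intro star_alg.add star_alg.comp star_alg.scale)
  have DinvS: "pi_Dinv q \<in> star_alg U4"
    unfolding Dinv_eq[OF q] using DS by (rule star_alg.star)
  have GU: "G \<subseteq> star_alg U4" using U4S idS DinvS by (auto simp: G_def)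
  have span: "C \<subseteq> op_closure (star_alg U4)"
    unfolding CD by (rule clos_mono[OF star_alg_sub[OF GU]])
  have uC: "u_DT q i j \<in> C" for i j by (simp add: u_DT_def genC)
  have inv1: "mat_invertible 2 C (u_DT q)"
    unfolding mat_invertible_def
    apply (rule exI[of _ "\<lambda>i j. adj (u_DT q j i)"])
    apply (intro conjI allI impI)
    subgoal for i j by (rule Cadj[OF uC])
    subgoal for i j by (auto simp: less2 sum2 u_DT_def I1[OF q] I2[OF q] I3[OF q] I4[OF q])
    subgoal for i j by (auto simp: less2 sum2 u_DT_def I5[OF q] I6[OF q] I7[OF q] I8[OF q])
    done
  have inv2: "mat_invertible 2 C (\<lambda>i j. u_DT q j i)"
    unfolding mat_invertible_def
    apply (rule exI[of _ "\<lambda>i j. adj (u_DT q i j)"])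
    apply (intro conjI allI impI)
    subgoal for i j by (rule Cadj[OF uC])
    subgoal for i j by (auto simp: less2 sum2 u_DT_def I9[OF q] I10[OF q] I11[OF q] I12[OF q])
    subgoal for i j by (auto simp: less2 sum2 u_DT_def I13[OF q] I14[OF q] I15[OF q] I16[OF q])
    done
  have comul: "\<forall>i<2. \<forall>j<2. Delta q (u_DT q i j) = op_sumk (\<lambda>k. op_tensor (u_DT q i k) (u_DT q k j)) 2"
    by (auto simp: less2 sum2 u_DT_def Delta_a[OF q] Delta_b[OF q] Delta_c[OF q] Delta_d[OF q])
  have cmqg: "compact_matrix_qg C 2 (u_DT q)"
    unfolding compact_matrix_qg_def U4_def[symmetric]
    using cstar uC span hom comul inv1 inv2 by blast
  show ?thesis
    using hom Delta_a[OF q] Delta_b[OF q] Delta_c[OF q] Delta_d[OF q] Delta_Dinv[OF q] cmqg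
    unfolding C_def by blast
qed


end
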